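(* Let $V$ be a Banach $\mathbb O$-bimodule, $J\in\mathbb S$, and let $T=T_0+J\odot T_1$ and $S=S_0+J\odot S_1$ with $T_0,T_1,S_0,S_1\in\mathscr B_{\mathbb O}(V)$. Then $T\circ S=T\circledcirc S$. Consequently every such $T$ is power-associative, with $T^n=T^{\circledcirc n}$ for all $n$.
   Context: $\mathbb O$ is the real octonion algebra with basis $e_0=1,\dots,e_7$; $\mathbb S=\{J:J^2=-1\}$. An $\mathbb O$-bimodule is a real vector space $M$ with real-bilinear left and right multiplications by $\mathbb O$ (with $1x=x1=x$) whose associators $[p,q,x]=(pq)x-p(qx)$, $[p,x,q]=(px)q-p(xq)$, $[x,p,q]=(xp)q-x(pq)$ satisfy $[p,q,x]=[q,x,p]=[x,p,q]=-[q,p,x]$. $\operatorname{Re}M=\{m: pm=mp,\ [p,q,m]=0\ \forall p,q\}$; every $x=\sum_ix_ie_i$ uniquely with $x_i\in\operatorname{Re}M$, $\operatorname{Re}x:=x_0$. A Banach $\mathbb O$-bimodule has a complete norm with $\|px\|=\|xp\|=|p|\|x\|$. $B_p(f,x)=f(x)p-f(xp)$; $\mathscr B_{\mathcal{RO}}(V)$: bounded real-linear $f$ with $\operatorname{Re}B_p(f,x)=0$ for all $p,x$; $\mathscr B_{\mathbb O}(V)$: bounded octonionic linear operators ($f(xp)=f(x)p$). $(p\odot f)(x)=pf(x)+B_p(f,x)$. For $f,g\in\mathscr B_{\mathcal{RO}}(V)$, $f\circledcirc g=\operatorname{ext}((f\circ g)|_{\operatorname{Re}V})$ where $(\operatorname{ext}h)(\sum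 x_ie_i)=\sum h(x_i)e_i$ ($x_i\in\operatorname{Re}V$). $T^{\circledcirc n}=\operatorname{ext}(T^n|_{\operatorname{Re}V})$, $T^n$ the ordinary power. $T$ is power-associative if $T^n\in\mathscr B_{\mathcal{RO}}(V)$ for all $n$. *)

theory Defs
  imports "HOL-Analysis.Analysis"
begin

text \<open>Octonions are elements of real^8; coordinate k (0 \<le> k \<le> 7) is the
coefficient of e_k.  The norm is the Euclidean norm |p|.\<close>

type_synonym octo = "real ^ 8"

definition oe :: "nat \<Rightarrow> octo" where
  "oe n = axis (of_nat n :: 8) 1"

text \<open>Fano-plane multiplication table: e_i e_(i+1) = e_(i+3) (indices mod 7 in 1..7),
i.e. the quaternionic triples below, closed under cyclic permutation.\<close>

definition oct_triples :: "(nat \<times> nat \<times> nat) list" where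
  "oct_triples = concat (map (\<lambda>(a,b,c). [(a,b,c),(b,c,a),(c,a,b)])
     [(1,2,4),(2,3,5),(3,4,6),(4,5,7),(5,6,1),(6,7,2),(7,1,3)])"

definition obasis_mult :: "nat \<Rightarrow> nat \<Rightarrow> real \<times> nat" where
  "obasis_mult i j =
    (if i = 0 then (1, j) else if j = 0 then (1, i) else if i = j then (-1, 0)
     else (case find (\<lambda>(a,b,c). a = i \<and> b = j) oct_triples of
             Some (_,_,c) \<Rightarrow> (1, c)
           | None \<Rightarrow> (case find (\<lambda>(a,b,c). a = j \<and> b = i) oct_triples of
                        Some (_,_,c) \<Rightarrow> (-1, c)
                      | None \<Rightarrow> (0, 0))))"

definition omult :: "octo \<Rightarrow> octo \<Rightarrow> octo" (infixl "\<cdot>\<^sub>O" 70) where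
  "p \<cdot>\<^sub>O q = (\<Sum>i<8. \<Sum>j<8. (p $ of_nat i * q $ of_nat j * fst (obasis_mult i j))
                                   *\<^sub>R oe (snd (obasis_mult i j)))"

definition oct_sphere :: "octo set" where
  "oct_sphere = {J. J \<cdot>\<^sub>O J = - oe 0}"

text \<open>lm is the left multiplication p x, rm the right multiplication x p.\<close>

definition assocL :: "(octo \<Rightarrow> 'v::real_vector \<Rightarrow> 'v) \<Rightarrow> octo \<Rightarrow> octo \<Rightarrow> 'v \<Rightarrow> 'v" where
  "assocL lm p q x = lm (p \<cdot>\<^sub>O q) x - lm p (lm q x)"

definition assocM :: "(octo \<Rightarrow> 'v::real_vector \<Rightarrow> 'v) \<Rightarrow> ('v \<Rightarrow> octo \<Rightarrow> 'v) \<Rightarrow> octo \<Rightarrow> 'v \<Rightarrow> octo \<Rightarrow> 'v" where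
  "assocM lm rm p x q = rm (lm p x) q - lm p (rm x q)"

definition assocR :: "('v::real_vector \<Rightarrow> octo \<Rightarrow> 'v) \<Rightarrow> 'v \<Rightarrow> octo \<Rightarrow> octo \<Rightarrow> 'v" where
  "assocR rm x p q = rm (rm x p) q - rm x (p \<cdot>\<^sub>O q)"

definition O_bimodule :: "(octo \<Rightarrow> 'v::real_vector \<Rightarrow> 'v) \<Rightarrow> ('v \<Rightarrow> octo \<Rightarrow> 'v) \<Rightarrow> bool" where
  "O_bimodule lm rm \<longleftrightarrow>
     (\<forall>x. linear (\<lambda>p. lm p x)) \<and> (\<forall>p. linear (lm p)) \<and>
     (\<forall>x. linear (rm x)) \<and> (\<forall>p. linear (\<lambda>x. rm x p)) \<and>
     (\<forall>x. lm (oe 0) x = x \<and> rm x (oe 0) = x) \<and>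
     (\<forall>p q x. assocL lm p q x = assocM lm rm q x p \<and>
              assocM lm rm q x p = assocR rm x p q \<and>
              assocR rm x p q = - assocL lm q p x)"

definition Banach_O_bimodule :: "(octo \<Rightarrow> 'v::banach \<Rightarrow> 'v) \<Rightarrow> ('v \<Rightarrow> octo \<Rightarrow> 'v) \<Rightarrow> bool" where
  "Banach_O_bimodule lm rm \<longleftrightarrow> O_bimodule lm rm \<and>
     (\<forall>p x. norm (lm p x) = norm p * norm x \<and> norm (rm x p) = norm p * norm x)"

definition ReM :: "(octo \<Rightarrow> 'v::real_vector \<Rightarrow> 'v) \<Rightarrow> ('v \<Rightarrow> octo \<Rightarrow> 'v) \<Rightarrow> 'v set" where
  "ReM lm rm = {m. (\<forall>p. lm p m = rm m p) \<and> (\<forall>p q. assocL lm p q m = 0)}"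

definition rcomp :: "(octo \<Rightarrow> 'v::real_vector \<Rightarrow> 'v) \<Rightarrow> ('v \<Rightarrow> octo \<Rightarrow> 'v) \<Rightarrow> 'v \<Rightarrow> nat \<Rightarrow> 'v" where
  "rcomp lm rm x = (THE c. (\<forall>i<8. c i \<in> ReM lm rm) \<and> (\<forall>i\<ge>8. c i = 0) \<and>
                           x = (\<Sum>i<8. rm (c i) (oe i)))"

definition RePart :: "(octo \<Rightarrow> 'v::real_vector \<Rightarrow> 'v) \<Rightarrow> ('v \<Rightarrow> octo \<Rightarrow> 'v) \<Rightarrow> 'v \<Rightarrow> 'v" where
  "RePart lm rm x = rcomp lm rm x 0"

definition oext :: "(octo \<Rightarrow> 'v::real_vector \<Rightarrow> 'v) \<Rightarrow> ('v \<Rightarrow> octo \<Rightarrow> 'v) \<Rightarrow> ('v \<Rightarrow> 'v) \<Rightarrow> 'v \<Rightarrow> 'v" where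
  "oext lm rm h x = (\<Sum>i<8. rm (h (rcomp lm rm x i)) (oe i))"

definition Bp :: "('v::real_vector \<Rightarrow> octo \<Rightarrow> 'v) \<Rightarrow> octo \<Rightarrow> ('v \<Rightarrow> 'v) \<Rightarrow> 'v \<Rightarrow> 'v" where
  "Bp rm p f x = rm (f x) p - f (rm x p)"

definition B_RO :: "(octo \<Rightarrow> 'v::real_normed_vector \<Rightarrow> 'v) \<Rightarrow> ('v \<Rightarrow> octo \<Rightarrow> 'v) \<Rightarrow> ('v \<Rightarrow> 'v) set" where
  "B_RO lm rm = {f. bounded_linear f \<and> (\<forall>p x. RePart lm rm (Bp rm p f x) = 0)}"

definition B_O :: "('v::real_normed_vector \<Rightarrow> octo \<Rightarrow> 'v) \<Rightarrow> ('v \<Rightarrow> 'v) set" where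
  "B_O rm = {f. bounded_linear f \<and> (\<forall>x p. f (rm x p) = rm (f x) p)}"

definition odot :: "(octo \<Rightarrow> 'v::real_vector \<Rightarrow> 'v) \<Rightarrow> ('v \<Rightarrow> octo \<Rightarrow> 'v) \<Rightarrow> octo \<Rightarrow> ('v \<Rightarrow> 'v) \<Rightarrow> 'v \<Rightarrow> 'v" where
  "odot lm rm p f x = lm p (f x) + Bp rm p f x"

text \<open>f \<circledcirc> g = ext((f \<circ> g) restricted to Re V); ext only evaluates its argument on Re V.\<close>

definition ocirc :: "(octo \<Rightarrow> 'v::real_vector \<Rightarrow> 'v) \<Rightarrow> ('v \<Rightarrow> octo \<Rightarrow> 'v) \<Rightarrow> ('v \<Rightarrow> 'v) \<Rightarrow> ('v \<Rightarrow> 'v) \<Rightarrow> 'v \<Rightarrow> 'v" where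
  "ocirc lm rm f g = oext lm rm (f \<circ> g)"

definition opow :: "(octo \<Rightarrow> 'v::real_vector \<Rightarrow> 'v) \<Rightarrow> ('v \<Rightarrow> octo \<Rightarrow> 'v) \<Rightarrow> ('v \<Rightarrow> 'v) \<Rightarrow> nat \<Rightarrow> 'v \<Rightarrow> 'v" where
  "opow lm rm T n = oext lm rm (T ^^ n)"

definition power_associative :: "(octo \<Rightarrow> 'v::real_normed_vector \<Rightarrow> 'v) \<Rightarrow> ('v \<Rightarrow> octo \<Rightarrow> 'v) \<Rightarrow> ('v \<Rightarrow> 'v) \<Rightarrow> bool" where
  "power_associative lm rm T \<longleftrightarrow> (\<forall>n. T ^^ n \<in> B_RO lm rm)"

end

theory Submission
  imports Defs
begin


lemma k8: "(k::8) = 0 \<or> k = 1 \<or> k = 2 \<or> k = 3 \<or> k = 4 \<or> k = 5 \<or> k = 6 \<or> k = 7"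
proof (induct k rule: bit0_induct)
  case (of_int z)
  then have "z = 0 \<or> z = 1 \<or> z = 2 \<or> z = 3 \<or> z = 4 \<or> z = 5 \<or> z = 6 \<or> z = 7" using of_int by simp presburger
  then show ?case by auto
qed

lemma UNIV8: "(UNIV::8 set) = {0,1,2,3,4,5,6,7}"
  using k8 by auto


lemma lt8: "i < (8::nat) \<Longrightarrow> i = 0 \<or> i = 1 \<or> i = 2 \<or> i = 3 \<or> i = 4 \<or> i = 5 \<or> i = 6 \<or> i = 7"
  by presburger

lemma of_nat8_inj: "i < 8 \<Longrightarrow> j < 8 \<Longrightarrow> ((of_nat i :: 8) = of_nat j) = (i = j)"
  apply (drule lt8, drule lt8) by (elim disjE; simp)

lemma oe_nth: "i < 8 \<Longrightarrow> j < 8 \<Longrightarrow> oe i $ (of_nat j) = (if i = j then 1 else 0)"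
  unfolding oe_def axis_def by (simp add: of_nat8_inj)

lemma UNIV8': "(UNIV::8 set) = of_nat ` {..<8}"
proof -
  have "{..<8::nat} = {0,1,2,3,4,5,6,7}" by auto
  then show ?thesis unfolding UNIV8 by simp
qed

lemma sum8: "(\<Sum>k\<in>(UNIV::8 set). f k) = (\<Sum>i<8. f (of_nat i))"
  unfolding UNIV8' by (subst sum.reindex) (auto simp: inj_on_def of_nat8_inj)



lemma omult_oe: assumes "a < 8" "b < 8"
  shows "oe a \<cdot>\<^sub>O oe b = fst (obasis_mult a b) *\<^sub>R oe (snd (obasis_mult a b))"
proof -
  have "oe a \<cdot>\<^sub>O oe b = (\<Sum>i<8. \<Sum>j<8. (if j = b then (if i = a then fst (obasis_mult i j) *\<^sub>R oe (snd (obasis_mult i j)) else 0) else 0))"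
    unfolding omult_def
    by (intro sum.cong refl) (auto simp: oe_nth assms)
  also have "\<dots> = fst (obasis_mult a b) *\<^sub>R oe (snd (obasis_mult a b))"
    using assms by simp
  finally show ?thesis .
qed


lemma sum8e: "(\<Sum>i<(8::nat). f i) = f 0 + f 1 + f 2 + f 3 + f 4 + f 5 + f 6 + f 7"
proof -
  have "{..<8::nat} = {0,1,2,3,4,5,6,7}" by auto
  then show ?thesis by (simp add: add.assoc)
qed

lemma omult_expand: "p \<cdot>\<^sub>O q = (\<Sum>i<8. \<Sum>j<8. (p $ of_nat i * q $ of_nat j) *\<^sub>R (oe i \<cdot>\<^sub>O oe j))"
proof -
  have "p \<cdot>\<^sub>O q = (\<Sum>i<8. \<Sum>j<8. (p $ of_nat i * q $ of_nat j) *\<^sub>R (fst (obasis_mult i j) *\<^sub>R oe (snd (obasis_mult i j))))"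
    unfolding omult_def by simp
  also have "\<dots> = (\<Sum>i<8. \<Sum>j<8. (p $ of_nat i * q $ of_nat j) *\<^sub>R (oe i \<cdot>\<^sub>O oe j))"
    by (intro sum.cong refl) (simp add: omult_oe)
  finally show ?thesis .
qed

lemma oe_nth': "oe i $ j = (if j = (of_nat i :: 8) then 1 else 0)"
  unfolding oe_def axis_def by simp

lemma ot_0_0: "oe 0 \<cdot>\<^sub>O oe 0 = oe 0"
  by (simp add: omult_oe obasis_mult_def oct_triples_def)

lemma ot_0_1: "oe 0 \<cdot>\<^sub>O oe 1 = oe 1"
  by (simp add: omult_oe obasis_mult_def oct_triples_def)

lemma ot_0_2: "oe 0 \<cdot>\<^sub>O oe 2 = oe 2"
  by (simp add: omult_oe obasis_mult_def oct_triples_def)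

lemma ot_0_3: "oe 0 \<cdot>\<^sub>O oe 3 = oe 3"
  by (simp add: omult_oe obasis_mult_def oct_triples_def)

lemma ot_0_4: "oe 0 \<cdot>\<^sub>O oe 4 = oe 4"
  by (simp add: omult_oe obasis_mult_def oct_triples_def)

lemma ot_0_5: "oe 0 \<cdot>\<^sub>O oe 5 = oe 5"
  by (simp add: omult_oe obasis_mult_def oct_triples_def)

lemma ot_0_6: "oe 0 \<cdot>\<^sub>O oe 6 = oe 6"
  by (simp add: omult_oe obasis_mult_def oct_triples_def)

lemma ot_0_7: "oe 0 \<cdot>\<^sub>O oe 7 = oe 7"
  by (simp add: omult_oe obasis_mult_def oct_triples_def)

lemma ot_1_0: "oe 1 \<cdot>\<^sub>O oe 0 = oe 1"
  by (simp add: omult_oe obasis_mult_def oct_triples_def)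

lemma ot_1_1: "oe 1 \<cdot>\<^sub>O oe 1 = - oe 0"
  by (simp add: omult_oe obasis_mult_def oct_triples_def)

lemma ot_1_2: "oe 1 \<cdot>\<^sub>O oe 2 = oe 4"
  by (simp add: omult_oe obasis_mult_def oct_triples_def)

lemma ot_1_3: "oe 1 \<cdot>\<^sub>O oe 3 = oe 7"
  by (simp add: omult_oe obasis_mult_def oct_triples_def)

lemma ot_1_4: "oe 1 \<cdot>\<^sub>O oe 4 = - oe 2"
  by (simp add: omult_oe obasis_mult_def oct_triples_def)

lemma ot_1_5: "oe 1 \<cdot>\<^sub>O oe 5 = oe 6"
  by (simp add: omult_oe obasis_mult_def oct_triples_def)

lemma ot_1_6: "oe 1 \<cdot>\<^sub>O oe 6 = - oe 5"
  by (simp add: omult_oe obasis_mult_def oct_triples_def)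

lemma ot_1_7: "oe 1 \<cdot>\<^sub>O oe 7 = - oe 3"
  by (simp add: omult_oe obasis_mult_def oct_triples_def)

lemma ot_2_0: "oe 2 \<cdot>\<^sub>O oe 0 = oe 2"
  by (simp add: omult_oe obasis_mult_def oct_triples_def)

lemma ot_2_1: "oe 2 \<cdot>\<^sub>O oe 1 = - oe 4"
  by (simp add: omult_oe obasis_mult_def oct_triples_def)

lemma ot_2_2: "oe 2 \<cdot>\<^sub>O oe 2 = - oe 0"
  by (simp add: omult_oe obasis_mult_def oct_triples_def)

lemma ot_2_3: "oe 2 \<cdot>\<^sub>O oe 3 = oe 5"
  by (simp add: omult_oe obasis_mult_def oct_triples_def)

lemma ot_2_4: "oe 2 \<cdot>\<^sub>O oe 4 = oe 1"
  by (simp add: omult_oe obasis_mult_def oct_triples_def)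

lemma ot_2_5: "oe 2 \<cdot>\<^sub>O oe 5 = - oe 3"
  by (simp add: omult_oe obasis_mult_def oct_triples_def)

lemma ot_2_6: "oe 2 \<cdot>\<^sub>O oe 6 = oe 7"
  by (simp add: omult_oe obasis_mult_def oct_triples_def)

lemma ot_2_7: "oe 2 \<cdot>\<^sub>O oe 7 = - oe 6"
  by (simp add: omult_oe obasis_mult_def oct_triples_def)

lemma ot_3_0: "oe 3 \<cdot>\<^sub>O oe 0 = oe 3"
  by (simp add: omult_oe obasis_mult_def oct_triples_def)

lemma ot_3_1: "oe 3 \<cdot>\<^sub>O oe 1 = - oe 7"
  by (simp add: omult_oe obasis_mult_def oct_triples_def)

lemma ot_3_2: "oe 3 \<cdot>\<^sub>O oe 2 = - oe 5"
  by (simp add: omult_oe obasis_mult_def oct_triples_def)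

lemma ot_3_3: "oe 3 \<cdot>\<^sub>O oe 3 = - oe 0"
  by (simp add: omult_oe obasis_mult_def oct_triples_def)

lemma ot_3_4: "oe 3 \<cdot>\<^sub>O oe 4 = oe 6"
  by (simp add: omult_oe obasis_mult_def oct_triples_def)

lemma ot_3_5: "oe 3 \<cdot>\<^sub>O oe 5 = oe 2"
  by (simp add: omult_oe obasis_mult_def oct_triples_def)

lemma ot_3_6: "oe 3 \<cdot>\<^sub>O oe 6 = - oe 4"
  by (simp add: omult_oe obasis_mult_def oct_triples_def)

lemma ot_3_7: "oe 3 \<cdot>\<^sub>O oe 7 = oe 1"
  by (simp add: omult_oe obasis_mult_def oct_triples_def)

lemma ot_4_0: "oe 4 \<cdot>\<^sub>O oe 0 = oe 4"
  by (simp add: omult_oe obasis_mult_def oct_triples_def)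

lemma ot_4_1: "oe 4 \<cdot>\<^sub>O oe 1 = oe 2"
  by (simp add: omult_oe obasis_mult_def oct_triples_def)

lemma ot_4_2: "oe 4 \<cdot>\<^sub>O oe 2 = - oe 1"
  by (simp add: omult_oe obasis_mult_def oct_triples_def)

lemma ot_4_3: "oe 4 \<cdot>\<^sub>O oe 3 = - oe 6"
  by (simp add: omult_oe obasis_mult_def oct_triples_def)

lemma ot_4_4: "oe 4 \<cdot>\<^sub>O oe 4 = - oe 0"
  by (simp add: omult_oe obasis_mult_def oct_triples_def)

lemma ot_4_5: "oe 4 \<cdot>\<^sub>O oe 5 = oe 7"
  by (simp add: omult_oe obasis_mult_def oct_triples_def)

lemma ot_4_6: "oe 4 \<cdot>\<^sub>O oe 6 = oe 3"
  by (simp add: omult_oe obasis_mult_def oct_triples_def)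

lemma ot_4_7: "oe 4 \<cdot>\<^sub>O oe 7 = - oe 5"
  by (simp add: omult_oe obasis_mult_def oct_triples_def)

lemma ot_5_0: "oe 5 \<cdot>\<^sub>O oe 0 = oe 5"
  by (simp add: omult_oe obasis_mult_def oct_triples_def)

lemma ot_5_1: "oe 5 \<cdot>\<^sub>O oe 1 = - oe 6"
  by (simp add: omult_oe obasis_mult_def oct_triples_def)

lemma ot_5_2: "oe 5 \<cdot>\<^sub>O oe 2 = oe 3"
  by (simp add: omult_oe obasis_mult_def oct_triples_def)

lemma ot_5_3: "oe 5 \<cdot>\<^sub>O oe 3 = - oe 2"
  by (simp add: omult_oe obasis_mult_def oct_triples_def)

lemma ot_5_4: "oe 5 \<cdot>\<^sub>O oe 4 = - oe 7"
  by (simp add: omult_oe obasis_mult_def oct_triples_def)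

lemma ot_5_5: "oe 5 \<cdot>\<^sub>O oe 5 = - oe 0"
  by (simp add: omult_oe obasis_mult_def oct_triples_def)

lemma ot_5_6: "oe 5 \<cdot>\<^sub>O oe 6 = oe 1"
  by (simp add: omult_oe obasis_mult_def oct_triples_def)

lemma ot_5_7: "oe 5 \<cdot>\<^sub>O oe 7 = oe 4"
  by (simp add: omult_oe obasis_mult_def oct_triples_def)

lemma ot_6_0: "oe 6 \<cdot>\<^sub>O oe 0 = oe 6"
  by (simp add: omult_oe obasis_mult_def oct_triples_def)

lemma ot_6_1: "oe 6 \<cdot>\<^sub>O oe 1 = oe 5"
  by (simp add: omult_oe obasis_mult_def oct_triples_def)

lemma ot_6_2: "oe 6 \<cdot>\<^sub>O oe 2 = - oe 7"
  by (simp add: omult_oe obasis_mult_def oct_triples_def)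

lemma ot_6_3: "oe 6 \<cdot>\<^sub>O oe 3 = oe 4"
  by (simp add: omult_oe obasis_mult_def oct_triples_def)

lemma ot_6_4: "oe 6 \<cdot>\<^sub>O oe 4 = - oe 3"
  by (simp add: omult_oe obasis_mult_def oct_triples_def)

lemma ot_6_5: "oe 6 \<cdot>\<^sub>O oe 5 = - oe 1"
  by (simp add: omult_oe obasis_mult_def oct_triples_def)

lemma ot_6_6: "oe 6 \<cdot>\<^sub>O oe 6 = - oe 0"
  by (simp add: omult_oe obasis_mult_def oct_triples_def)

lemma ot_6_7: "oe 6 \<cdot>\<^sub>O oe 7 = oe 2"
  by (simp add: omult_oe obasis_mult_def oct_triples_def)

lemma ot_7_0: "oe 7 \<cdot>\<^sub>O oe 0 = oe 7"
  by (simp add: omult_oe obasis_mult_def oct_triples_def)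

lemma ot_7_1: "oe 7 \<cdot>\<^sub>O oe 1 = oe 3"
  by (simp add: omult_oe obasis_mult_def oct_triples_def)

lemma ot_7_2: "oe 7 \<cdot>\<^sub>O oe 2 = oe 6"
  by (simp add: omult_oe obasis_mult_def oct_triples_def)

lemma ot_7_3: "oe 7 \<cdot>\<^sub>O oe 3 = - oe 1"
  by (simp add: omult_oe obasis_mult_def oct_triples_def)

lemma ot_7_4: "oe 7 \<cdot>\<^sub>O oe 4 = oe 5"
  by (simp add: omult_oe obasis_mult_def oct_triples_def)

lemma ot_7_5: "oe 7 \<cdot>\<^sub>O oe 5 = - oe 4"
  by (simp add: omult_oe obasis_mult_def oct_triples_def)

lemma ot_7_6: "oe 7 \<cdot>\<^sub>O oe 6 = - oe 2"
  by (simp add: omult_oe obasis_mult_def oct_triples_def)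

lemma ot_7_7: "oe 7 \<cdot>\<^sub>O oe 7 = - oe 0"
  by (simp add: omult_oe obasis_mult_def oct_triples_def)

lemma ots_0_1: "oe 0 \<cdot>\<^sub>O oe (Suc 0) = oe 1"
  using ot_0_1 by simp

lemma ots_1_0: "oe (Suc 0) \<cdot>\<^sub>O oe 0 = oe 1"
  using ot_1_0 by simp

lemma ots_1_1: "oe (Suc 0) \<cdot>\<^sub>O oe (Suc 0) = - oe 0"
  using ot_1_1 by simp

lemma ots_1_2: "oe (Suc 0) \<cdot>\<^sub>O oe 2 = oe 4"
  using ot_1_2 by simp

lemma ots_1_3: "oe (Suc 0) \<cdot>\<^sub>O oe 3 = oe 7"
  using ot_1_3 by simp

lemma ots_1_4: "oe (Suc 0) \<cdot>\<^sub>O oe 4 = - oe 2"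
  using ot_1_4 by simp

lemma ots_1_5: "oe (Suc 0) \<cdot>\<^sub>O oe 5 = oe 6"
  using ot_1_5 by simp

lemma ots_1_6: "oe (Suc 0) \<cdot>\<^sub>O oe 6 = - oe 5"
  using ot_1_6 by simp

lemma ots_1_7: "oe (Suc 0) \<cdot>\<^sub>O oe 7 = - oe 3"
  using ot_1_7 by simp

lemma ots_2_1: "oe 2 \<cdot>\<^sub>O oe (Suc 0) = - oe 4"
  using ot_2_1 by simp

lemma ots_3_1: "oe 3 \<cdot>\<^sub>O oe (Suc 0) = - oe 7"
  using ot_3_1 by simp

lemma ots_4_1: "oe 4 \<cdot>\<^sub>O oe (Suc 0) = oe 2"
  using ot_4_1 by simp

lemma ots_5_1: "oe 5 \<cdot>\<^sub>O oe (Suc 0) = - oe 6"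
  using ot_5_1 by simp

lemma ots_6_1: "oe 6 \<cdot>\<^sub>O oe (Suc 0) = oe 5"
  using ot_6_1 by simp

lemma ots_7_1: "oe 7 \<cdot>\<^sub>O oe (Suc 0) = oe 3"
  using ot_7_1 by simp

lemmas otab = ot_0_0 ot_0_1 ot_0_2 ot_0_3 ot_0_4 ot_0_5 ot_0_6 ot_0_7 ot_1_0 ot_1_1 ot_1_2 ot_1_3 ot_1_4 ot_1_5 ot_1_6 ot_1_7 ot_2_0 ot_2_1 ot_2_2 ot_2_3 ot_2_4 ot_2_5 ot_2_6 ot_2_7 ot_3_0 ot_3_1 ot_3_2 ot_3_3 ot_3_4 ot_3_5 ot_3_6 ot_3_7 ot_4_0 ot_4_1 ot_4_2 ot_4_3 ot_4_4 ot_4_5 ot_4_6 ot_4_7 ot_5_0 ot_5_1 ot_5_2 ot_5_3 ot_5_4 ot_5_5 ot_5_6 ot_5_7 ot_6_0 ot_6_1 ot_6_2 ot_6_3 ot_6_4 ot_6_5 ot_6_6 ot_6_7 ot_7_0 ot_7_1 ot_7_2 ot_7_3 ot_7_4 ot_7_5 ot_7_6 ot_7_7 ots_0_1 ots_1_0 ots_1_1 ots_1_2 ots_1_3 ots_1_4 ots_1_5 ots_1_6 ots_1_7 ots_2_1 ots_3_1 ots_4_1 ots_5_1 ots_6_1 ots_7_1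

lemma omult_c0: "(p \<cdot>\<^sub>O q) $ 0 = p$0 * q$0 - p$1 * q$1 - p$2 * q$2 - p$3 * q$3 - p$4 * q$4 - p$5 * q$5 - p$6 * q$6 - p$7 * q$7"
  by (simp add: omult_expand[of p q] sum8e otab oe_nth')

lemma omult_c1: "(p \<cdot>\<^sub>O q) $ 1 = p$0 * q$1 + p$1 * q$0 + p$2 * q$4 + p$3 * q$7 - p$4 * q$2 + p$5 * q$6 - p$6 * q$5 - p$7 * q$3"
  by (simp add: omult_expand[of p q] sum8e otab oe_nth')

lemma omult_c2: "(p \<cdot>\<^sub>O q) $ 2 = p$0 * q$2 - p$1 * q$4 + p$2 * q$0 + p$3 * q$5 + p$4 * q$1 - p$5 * q$3 + p$6 * q$7 - p$7 * q$6"
  by (simp add: omult_expand[of p q] sum8e otab oe_nth')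

lemma omult_c3: "(p \<cdot>\<^sub>O q) $ 3 = p$0 * q$3 - p$1 * q$7 - p$2 * q$5 + p$3 * q$0 + p$4 * q$6 + p$5 * q$2 - p$6 * q$4 + p$7 * q$1"
  by (simp add: omult_expand[of p q] sum8e otab oe_nth')

lemma omult_c4: "(p \<cdot>\<^sub>O q) $ 4 = p$0 * q$4 + p$1 * q$2 - p$2 * q$1 - p$3 * q$6 + p$4 * q$0 + p$5 * q$7 + p$6 * q$3 - p$7 * q$5"
  by (simp add: omult_expand[of p q] sum8e otab oe_nth')

lemma omult_c5: "(p \<cdot>\<^sub>O q) $ 5 = p$0 * q$5 - p$1 * q$6 + p$2 * q$3 - p$3 * q$2 - p$4 * q$7 + p$5 * q$0 + p$6 * q$1 + p$7 * q$4"
  by (simp add: omult_expand[of p q] sum8e otab oe_nth')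

lemma omult_c6: "(p \<cdot>\<^sub>O q) $ 6 = p$0 * q$6 + p$1 * q$5 - p$2 * q$7 + p$3 * q$4 - p$4 * q$3 - p$5 * q$1 + p$6 * q$0 + p$7 * q$2"
  by (simp add: omult_expand[of p q] sum8e otab oe_nth')

lemma omult_c7: "(p \<cdot>\<^sub>O q) $ 7 = p$0 * q$7 + p$1 * q$3 + p$2 * q$6 - p$3 * q$1 + p$4 * q$5 - p$5 * q$4 - p$6 * q$2 + p$7 * q$0"
  by (simp add: omult_expand[of p q] sum8e otab oe_nth')


lemmas omult_c = omult_c0 omult_c1 omult_c2 omult_c3 omult_c4 omult_c5 omult_c6 omult_c7

lemma vec8_eqI: "(\<And>k::8. k \<in> {0,1,2,3,4,5,6,7} \<Longrightarrow> (x::octo) $ k = y $ k) \<Longrightarrow> x = y"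
  using k8 by (auto simp: vec_eq_iff)

lemma omult_add_left: "(p + q) \<cdot>\<^sub>O r = p \<cdot>\<^sub>O r + q \<cdot>\<^sub>O r"
  by (rule vec8_eqI) (auto simp: omult_c algebra_simps)
lemma omult_add_right: "r \<cdot>\<^sub>O (p + q) = r \<cdot>\<^sub>O p + r \<cdot>\<^sub>O q"
  by (rule vec8_eqI) (auto simp: omult_c algebra_simps)
lemma omult_scaleR_left: "(c *\<^sub>R p) \<cdot>\<^sub>O r = c *\<^sub>R (p \<cdot>\<^sub>O r)"
  by (rule vec8_eqI) (auto simp: omult_c algebra_simps)
lemma omult_scaleR_right: "r \<cdot>\<^sub>O (c *\<^sub>R p) = c *\<^sub>R (r \<cdot>\<^sub>O p)"
  by (rule vec8_eqI) (auto simp: omult_c algebra_simps)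
lemma omult_one_left: "oe 0 \<cdot>\<^sub>O r = r"
  by (rule vec8_eqI) (auto simp: omult_c oe_nth')
lemma omult_one_right: "r \<cdot>\<^sub>O oe 0 = r"
  by (rule vec8_eqI) (auto simp: omult_c oe_nth')

lemma oct_expand: "p = (\<Sum>i<8. p $ of_nat i *\<^sub>R oe i)"
  by (rule vec8_eqI) (auto simp: sum8e oe_nth')

lemma re_assoc: "((p \<cdot>\<^sub>O q) \<cdot>\<^sub>O r) $ 0 = (p \<cdot>\<^sub>O (q \<cdot>\<^sub>O r)) $ 0"
  by (simp add: omult_c algebra_simps)


lemma sep_eq:
  fixes u v :: "'a::real_vector"
  assumes h: "\<And>f::'a \<Rightarrow> real. linear f \<Longrightarrow> f u = f v"
  shows "u = v"
proof (rule ccontr)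
  assume "u \<noteq> v"
  then have nz: "u - v \<noteq> 0" by simp
  have sp: "u - v \<notin> span {}" using nz by simp
  have ind: "independent {u - v}"
    by (rule independent_insertI[OF sp independent_empty])
  obtain g :: "'a \<Rightarrow> real" where g: "linear g" "g (u - v) = 1"
    using linear_independent_extend[OF ind, of "\<lambda>_. 1::real"] by auto
  have "g u = g v" using h[OF g(1)] .
  then have "g (u - v) = 0" using linear_diff[OF g(1)] by simp
  with g(2) show False by simp
qed

lemma sep_eq2:
  fixes u v :: "'a::real_vector"
  assumes h: "\<And>f::'a \<Rightarrow> real. (\<And>x y. f (x + y) = f x + f y) \<Longrightarrow> (\<And>x y. f (x - y) = f x - f y)
     \<Longrightarrow> (\<And>x. f (- x) = - f x) \<Longrightarrow> (\<And>c x. f (c *\<^sub>R x) = c * f x) \<Longrightarrow> f 0 = 0 \<Longrightarrow> f u = f v"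
  shows "u = v"
proof (rule sep_eq)
  fix f :: "'a \<Rightarrow> real" assume lf: "linear f"
  show "f u = f v"
    by (rule h) (simp_all add: linear_add[OF lf] linear_diff[OF lf] linear_neg[OF lf] linear_scale[OF lf] linear_0[OF lf])
qed


definition E0 :: octo where "E0 = oe 0"

definition E1 :: octo where "E1 = oe 1"

definition E2 :: octo where "E2 = oe 2"

definition E3 :: octo where "E3 = oe 3"

definition E4 :: octo where "E4 = oe 4"

definition E5 :: octo where "E5 = oe 5"

definition E6 :: octo where "E6 = oe 6"

definition E7 :: octo where "E7 = oe 7"

lemmas Edefs = E0_def E1_def E2_def E3_def E4_def E5_def E6_def E7_def

lemma oeE: "oe 0 = E0" "oe (Suc 0) = E1" "oe 1 = E1" "oe 2 = E2" "oe 3 = E3" "oe 4 = E4" "oe 5 = E5" "oe 6 = E6" "oe 7 = E7"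
  by (simp_all add: Edefs)

lemma Et_0_0: "E0 \<cdot>\<^sub>O E0 = E0"
  unfolding Edefs by (rule ot_0_0)

lemma Et_0_1: "E0 \<cdot>\<^sub>O E1 = E1"
  unfolding Edefs by (rule ot_0_1)

lemma Et_0_2: "E0 \<cdot>\<^sub>O E2 = E2"
  unfolding Edefs by (rule ot_0_2)

lemma Et_0_3: "E0 \<cdot>\<^sub>O E3 = E3"
  unfolding Edefs by (rule ot_0_3)

lemma Et_0_4: "E0 \<cdot>\<^sub>O E4 = E4"
  unfolding Edefs by (rule ot_0_4)

lemma Et_0_5: "E0 \<cdot>\<^sub>O E5 = E5"
  unfolding Edefs by (rule ot_0_5)

lemma Et_0_6: "E0 \<cdot>\<^sub>O E6 = E6"
  unfolding Edefs by (rule ot_0_6)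

lemma Et_0_7: "E0 \<cdot>\<^sub>O E7 = E7"
  unfolding Edefs by (rule ot_0_7)

lemma Et_1_0: "E1 \<cdot>\<^sub>O E0 = E1"
  unfolding Edefs by (rule ot_1_0)

lemma Et_1_1: "E1 \<cdot>\<^sub>O E1 = - E0"
  unfolding Edefs by (rule ot_1_1)

lemma Et_1_2: "E1 \<cdot>\<^sub>O E2 = E4"
  unfolding Edefs by (rule ot_1_2)

lemma Et_1_3: "E1 \<cdot>\<^sub>O E3 = E7"
  unfolding Edefs by (rule ot_1_3)

lemma Et_1_4: "E1 \<cdot>\<^sub>O E4 = - E2"
  unfolding Edefs by (rule ot_1_4)

lemma Et_1_5: "E1 \<cdot>\<^sub>O E5 = E6"
  unfolding Edefs by (rule ot_1_5)

lemma Et_1_6: "E1 \<cdot>\<^sub>O E6 = - E5"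
  unfolding Edefs by (rule ot_1_6)

lemma Et_1_7: "E1 \<cdot>\<^sub>O E7 = - E3"
  unfolding Edefs by (rule ot_1_7)

lemma Et_2_0: "E2 \<cdot>\<^sub>O E0 = E2"
  unfolding Edefs by (rule ot_2_0)

lemma Et_2_1: "E2 \<cdot>\<^sub>O E1 = - E4"
  unfolding Edefs by (rule ot_2_1)

lemma Et_2_2: "E2 \<cdot>\<^sub>O E2 = - E0"
  unfolding Edefs by (rule ot_2_2)

lemma Et_2_3: "E2 \<cdot>\<^sub>O E3 = E5"
  unfolding Edefs by (rule ot_2_3)

lemma Et_2_4: "E2 \<cdot>\<^sub>O E4 = E1"
  unfolding Edefs by (rule ot_2_4)

lemma Et_2_5: "E2 \<cdot>\<^sub>O E5 = - E3"
  unfolding Edefs by (rule ot_2_5)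

lemma Et_2_6: "E2 \<cdot>\<^sub>O E6 = E7"
  unfolding Edefs by (rule ot_2_6)

lemma Et_2_7: "E2 \<cdot>\<^sub>O E7 = - E6"
  unfolding Edefs by (rule ot_2_7)

lemma Et_3_0: "E3 \<cdot>\<^sub>O E0 = E3"
  unfolding Edefs by (rule ot_3_0)

lemma Et_3_1: "E3 \<cdot>\<^sub>O E1 = - E7"
  unfolding Edefs by (rule ot_3_1)

lemma Et_3_2: "E3 \<cdot>\<^sub>O E2 = - E5"
  unfolding Edefs by (rule ot_3_2)

lemma Et_3_3: "E3 \<cdot>\<^sub>O E3 = - E0"
  unfolding Edefs by (rule ot_3_3)

lemma Et_3_4: "E3 \<cdot>\<^sub>O E4 = E6"
  unfolding Edefs by (rule ot_3_4)

lemma Et_3_5: "E3 \<cdot>\<^sub>O E5 = E2"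
  unfolding Edefs by (rule ot_3_5)

lemma Et_3_6: "E3 \<cdot>\<^sub>O E6 = - E4"
  unfolding Edefs by (rule ot_3_6)

lemma Et_3_7: "E3 \<cdot>\<^sub>O E7 = E1"
  unfolding Edefs by (rule ot_3_7)

lemma Et_4_0: "E4 \<cdot>\<^sub>O E0 = E4"
  unfolding Edefs by (rule ot_4_0)

lemma Et_4_1: "E4 \<cdot>\<^sub>O E1 = E2"
  unfolding Edefs by (rule ot_4_1)

lemma Et_4_2: "E4 \<cdot>\<^sub>O E2 = - E1"
  unfolding Edefs by (rule ot_4_2)

lemma Et_4_3: "E4 \<cdot>\<^sub>O E3 = - E6"
  unfolding Edefs by (rule ot_4_3)

lemma Et_4_4: "E4 \<cdot>\<^sub>O E4 = - E0"
  unfolding Edefs by (rule ot_4_4)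

lemma Et_4_5: "E4 \<cdot>\<^sub>O E5 = E7"
  unfolding Edefs by (rule ot_4_5)

lemma Et_4_6: "E4 \<cdot>\<^sub>O E6 = E3"
  unfolding Edefs by (rule ot_4_6)

lemma Et_4_7: "E4 \<cdot>\<^sub>O E7 = - E5"
  unfolding Edefs by (rule ot_4_7)

lemma Et_5_0: "E5 \<cdot>\<^sub>O E0 = E5"
  unfolding Edefs by (rule ot_5_0)

lemma Et_5_1: "E5 \<cdot>\<^sub>O E1 = - E6"
  unfolding Edefs by (rule ot_5_1)

lemma Et_5_2: "E5 \<cdot>\<^sub>O E2 = E3"
  unfolding Edefs by (rule ot_5_2)

lemma Et_5_3: "E5 \<cdot>\<^sub>O E3 = - E2"
  unfolding Edefs by (rule ot_5_3)

lemma Et_5_4: "E5 \<cdot>\<^sub>O E4 = - E7"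
  unfolding Edefs by (rule ot_5_4)

lemma Et_5_5: "E5 \<cdot>\<^sub>O E5 = - E0"
  unfolding Edefs by (rule ot_5_5)

lemma Et_5_6: "E5 \<cdot>\<^sub>O E6 = E1"
  unfolding Edefs by (rule ot_5_6)

lemma Et_5_7: "E5 \<cdot>\<^sub>O E7 = E4"
  unfolding Edefs by (rule ot_5_7)

lemma Et_6_0: "E6 \<cdot>\<^sub>O E0 = E6"
  unfolding Edefs by (rule ot_6_0)

lemma Et_6_1: "E6 \<cdot>\<^sub>O E1 = E5"
  unfolding Edefs by (rule ot_6_1)

lemma Et_6_2: "E6 \<cdot>\<^sub>O E2 = - E7"
  unfolding Edefs by (rule ot_6_2)

lemma Et_6_3: "E6 \<cdot>\<^sub>O E3 = E4"
  unfolding Edefs by (rule ot_6_3)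

lemma Et_6_4: "E6 \<cdot>\<^sub>O E4 = - E3"
  unfolding Edefs by (rule ot_6_4)

lemma Et_6_5: "E6 \<cdot>\<^sub>O E5 = - E1"
  unfolding Edefs by (rule ot_6_5)

lemma Et_6_6: "E6 \<cdot>\<^sub>O E6 = - E0"
  unfolding Edefs by (rule ot_6_6)

lemma Et_6_7: "E6 \<cdot>\<^sub>O E7 = E2"
  unfolding Edefs by (rule ot_6_7)

lemma Et_7_0: "E7 \<cdot>\<^sub>O E0 = E7"
  unfolding Edefs by (rule ot_7_0)

lemma Et_7_1: "E7 \<cdot>\<^sub>O E1 = E3"
  unfolding Edefs by (rule ot_7_1)

lemma Et_7_2: "E7 \<cdot>\<^sub>O E2 = E6"
  unfolding Edefs by (rule ot_7_2)

lemma Et_7_3: "E7 \<cdot>\<^sub>O E3 = - E1"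
  unfolding Edefs by (rule ot_7_3)

lemma Et_7_4: "E7 \<cdot>\<^sub>O E4 = E5"
  unfolding Edefs by (rule ot_7_4)

lemma Et_7_5: "E7 \<cdot>\<^sub>O E5 = - E4"
  unfolding Edefs by (rule ot_7_5)

lemma Et_7_6: "E7 \<cdot>\<^sub>O E6 = - E2"
  unfolding Edefs by (rule ot_7_6)

lemma Et_7_7: "E7 \<cdot>\<^sub>O E7 = - E0"
  unfolding Edefs by (rule ot_7_7)

lemmas Etab = Et_0_0 Et_0_1 Et_0_2 Et_0_3 Et_0_4 Et_0_5 Et_0_6 Et_0_7 Et_1_0 Et_1_1 Et_1_2 Et_1_3 Et_1_4 Et_1_5 Et_1_6 Et_1_7 Et_2_0 Et_2_1 Et_2_2 Et_2_3 Et_2_4 Et_2_5 Et_2_6 Et_2_7 Et_3_0 Et_3_1 Et_3_2 Et_3_3 Et_3_4 Et_3_5 Et_3_6 Et_3_7 Et_4_0 Et_4_1 Et_4_2 Et_4_3 Et_4_4 Et_4_5 Et_4_6 Et_4_7 Et_5_0 Et_5_1 Et_5_2 Et_5_3 Et_5_4 Et_5_5 Et_5_6 Et_5_7 Et_6_0 Et_6_1 Et_6_2 Et_6_3 Et_6_4 Et_6_5 Et_6_6 Et_6_7 Et_7_0 Et_7_1 Et_7_2 Et_7_3 Et_7_4 Et_7_5 Et_7_6 Et_7_7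


definition sc :: "'v::real_vector \<Rightarrow> real \<Rightarrow> 'v" where "sc x c = c *\<^sub>R x"

lemma neg_self_0: "(a::'a::real_vector) = - a \<Longrightarrow> a = 0"
proof -
  assume "a = - a"
  then have "2 *\<^sub>R a = 0" by (simp add: scaleR_2 eq_neg_iff_add_eq_0[symmetric])
  then show "a = 0" by simp
qed

lemma sc_add: "sc (x + y) c = sc x c + sc y c" by (simp add: sc_def scaleR_add_right)
lemma sc_diff: "sc (x - y) c = sc x c + sc y (- c)" by (simp add: sc_def scaleR_diff_right)
lemma sc_neg: "sc (- x) c = sc x (- c)" by (simp add: sc_def)
lemma sc_sc: "sc (sc x a) b = sc x (a * b)" by (simp add: sc_def mult.commute)
lemma sc_0: "sc x 0 = 0" by (simp add: sc_def)
lemma sc_zero: "sc 0 c = 0" by (simp add: sc_def)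
lemma scaleR_sc: "c *\<^sub>R sc x a = sc x (c * a)" by (simp add: sc_def)
lemma neg_sc: "- sc x a = sc x (- a)" by (simp add: sc_def)
lemma merge1: "sc x a + sc x b = sc x (a + b)" by (simp add: sc_def scaleR_add_left)
lemma merge2: "sc x a + (sc x b + r) = sc x (a + b) + r" by (simp add: sc_def scaleR_add_left)
lemmas scn0 = sc_add sc_diff sc_neg sc_sc sc_0 sc_zero scaleR_sc neg_sc merge1 merge2
  add.assoc add.commute add.left_commute diff_conv_add_uminus minus_add_distrib
  scaleR_add_right scaleR_minus_right scaleR_diff_right minus_minus add_0_left add_0_right

lemma sc_wrapI: "P (sc y 1) \<Longrightarrow> P y" by (simp add: sc_def)

locale obim =
  fixes lm :: "octo \<Rightarrow> 'v::real_vector \<Rightarrow> 'v" and rm :: "'v \<Rightarrow> octo \<Rightarrow> 'v"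
  assumes bim: "O_bimodule lm rm"
begin

lemma lin1: "linear (lm p)" using bim unfolding O_bimodule_def by blast
lemma lin2: "linear (\<lambda>p. lm p x)" using bim unfolding O_bimodule_def by blast
lemma lin3: "linear (rm x)" using bim unfolding O_bimodule_def by blast
lemma lin4: "linear (\<lambda>x. rm x p)" using bim unfolding O_bimodule_def by blast

lemma lm_add: "lm p (x + y) = lm p x + lm p y" using linear_add[OF lin1] .
lemma lm_diff: "lm p (x - y) = lm p x - lm p y" using linear_diff[OF lin1] .
lemma lm_minus: "lm p (- x) = - lm p x" using linear_neg[OF lin1] .
lemma lm_scale: "lm p (c *\<^sub>R x) = c *\<^sub>R lm p x" using linear_scale[OF lin1] .
lemma lm_0: "lm p 0 = 0" using linear_0[OF lin1] .
lemma lmp_add: "lm (p + q) x = lm p x + lm q x" using linear_add[OF lin2] .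
lemma lmp_diff: "lm (p - q) x = lm p x - lm q x" using linear_diff[OF lin2] .
lemma lmp_minus: "lm (- p) x = - lm p x" using linear_neg[OF lin2] .
lemma lmp_scale: "lm (c *\<^sub>R p) x = c *\<^sub>R lm p x" using linear_scale[OF lin2] .
lemma lmp_0: "lm 0 x = 0" using linear_0[OF lin2] .
lemma lmp_sum: "lm (sum f A) x = (\<Sum>i\<in>A. lm (f i) x)" using linear_sum[OF lin2] .
lemma lm_sum: "lm p (sum f A) = (\<Sum>i\<in>A. lm p (f i))" using linear_sum[OF lin1] .

lemma rm_add: "rm (x + y) p = rm x p + rm y p" using linear_add[OF lin4] .
lemma rm_diff: "rm (x - y) p = rm x p - rm y p" using linear_diff[OF lin4] .
lemma rm_minus: "rm (- x) p = - rm x p" using linear_neg[OF lin4] .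
lemma rm_scale: "rm (c *\<^sub>R x) p = c *\<^sub>R rm x p" using linear_scale[OF lin4] .
lemma rm_0: "rm 0 p = 0" using linear_0[OF lin4] .
lemma rmp_add: "rm x (p + q) = rm x p + rm x q" using linear_add[OF lin3] .
lemma rmp_diff: "rm x (p - q) = rm x p - rm x q" using linear_diff[OF lin3] .
lemma rmp_minus: "rm x (- p) = - rm x p" using linear_neg[OF lin3] .
lemma rmp_scale: "rm x (c *\<^sub>R p) = c *\<^sub>R rm x p" using linear_scale[OF lin3] .
lemma rmp_0: "rm x 0 = 0" using linear_0[OF lin3] .
lemma rmp_sum: "rm x (sum f A) = (\<Sum>i\<in>A. rm x (f i))" using linear_sum[OF lin3] .
lemma rm_sum: "rm (sum f A) p = (\<Sum>i\<in>A. rm (f i) p)" using linear_sum[OF lin4] .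

lemma lm_one: "lm E0 x = x" using bim unfolding O_bimodule_def E0_def by blast
lemma rm_one: "rm x E0 = x" using bim unfolding O_bimodule_def E0_def by blast

lemma ax: "assocL lm p q x = assocM lm rm q x p" "assocM lm rm q x p = assocR rm x p q"
   "assocR rm x p q = - assocL lm q p x"
  using bim unfolding O_bimodule_def by blast+

lemma sc_lm: "lm p (sc x c) = sc (lm p x) c" by (simp add: sc_def lm_scale)
lemma sc_rm: "rm (sc x c) p = sc (rm x p) c" by (simp add: sc_def rm_scale)
lemmas fl = linear_add linear_diff linear_neg linear_scale linear_0 real_scaleR_def
lemmas lmrm_lin = lm_add lm_minus lm_diff lm_0 rm_add rm_minus rm_diff rm_0 lm_scale rm_scale lm_one rm_one
lemmas scn = scn0 sc_lm sc_rm lm_add lm_minus lm_diff lm_0 rm_add rm_minus rm_diff rm_0 lm_scale rm_scale lm_one rm_one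

lemma LL_sq: "lm p (lm p x) = lm (p \<cdot>\<^sub>O p) x"
proof -
  have "assocL lm p p x = - assocL lm p p x" using ax[where p=p and q=p and x=x] by simp
  then have "assocL lm p p x = 0" by (rule neg_self_0)
  then show ?thesis unfolding assocL_def by simp
qed

lemma LL_anti: "lm p (lm q x) + lm q (lm p x) = lm (p \<cdot>\<^sub>O q) x + lm (q \<cdot>\<^sub>O p) x"
proof -
  have "assocL lm p q x = - assocL lm q p x" using ax[where p=p and q=q and x=x] by simp
  then show ?thesis unfolding assocL_def by (simp add: algebra_simps)
qed

lemma RR_gen: "rm (rm x p) q = lm (p \<cdot>\<^sub>O q) x - lm p (lm q x) + rm x (p \<cdot>\<^sub>O q)"
proof -
  have "assocR rm x p q = assocL lm p q x" using ax[where p=p and q=q and x=x] by simp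
  then show ?thesis unfolding assocL_def assocR_def by (simp add: algebra_simps)
qed

lemma MR_gen: "rm (lm q x) p = lm q (rm x p) + lm (p \<cdot>\<^sub>O q) x - lm p (lm q x)"
proof -
  have "assocM lm rm q x p = assocL lm p q x" using ax[where p=p and q=q and x=x] by simp
  then show ?thesis unfolding assocL_def assocM_def by (simp add: algebra_simps)
qed

lemma RR_sq: "rm (rm x p) p = rm x (p \<cdot>\<^sub>O p)"
  using RR_gen[of x p p] LL_sq[of p x] by simp

lemma RR_anti: "rm (rm x p) q + rm (rm x q) p = rm x (p \<cdot>\<^sub>O q) + rm x (q \<cdot>\<^sub>O p)"
proof -
  have "rm (rm x p) q + rm (rm x q) p = (lm (p \<cdot>\<^sub>O q) x + lm (q \<cdot>\<^sub>O p) x) - (lm p (lm q x) + lm q (lm p x)) + (rm x (p \<cdot>\<^sub>O q) + rm x (q \<cdot>\<^sub>O p))"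
    by (simp only: RR_gen) (simp add: algebra_simps)
  also have "\<dots> = rm x (p \<cdot>\<^sub>O q) + rm x (q \<cdot>\<^sub>O p)" using LL_anti[of p q x] by simp
  finally show ?thesis .
qed

lemma LR_comm: "rm (lm p x) p = lm p (rm x p)"
  using MR_gen[of p x p] LL_sq[of p x] by simp

lemma Lsq_1: "lm E1 (lm E1 z) = - z"
  using LL_sq[of E1 z] by (simp add: Etab lmp_minus lm_one)

lemma Rsq_1: "rm (rm z E1) E1 = - z"
  using RR_sq[of z E1] by (simp add: Etab rmp_minus rm_one)

lemma MRs_1: "rm (lm E1 z) E1 = lm E1 (rm z E1)"
  by (rule LR_comm)

lemma Lsq_2: "lm E2 (lm E2 z) = - z"
  using LL_sq[of E2 z] by (simp add: Etab lmp_minus lm_one)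

lemma Rsq_2: "rm (rm z E2) E2 = - z"
  using RR_sq[of z E2] by (simp add: Etab rmp_minus rm_one)

lemma MRs_2: "rm (lm E2 z) E2 = lm E2 (rm z E2)"
  by (rule LR_comm)

lemma Lsq_3: "lm E3 (lm E3 z) = - z"
  using LL_sq[of E3 z] by (simp add: Etab lmp_minus lm_one)

lemma Rsq_3: "rm (rm z E3) E3 = - z"
  using RR_sq[of z E3] by (simp add: Etab rmp_minus rm_one)

lemma MRs_3: "rm (lm E3 z) E3 = lm E3 (rm z E3)"
  by (rule LR_comm)

lemma Lsq_4: "lm E4 (lm E4 z) = - z"
  using LL_sq[of E4 z] by (simp add: Etab lmp_minus lm_one)

lemma Rsq_4: "rm (rm z E4) E4 = - z"
  using RR_sq[of z E4] by (simp add: Etab rmp_minus rm_one)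

lemma MRs_4: "rm (lm E4 z) E4 = lm E4 (rm z E4)"
  by (rule LR_comm)

lemma Lsq_5: "lm E5 (lm E5 z) = - z"
  using LL_sq[of E5 z] by (simp add: Etab lmp_minus lm_one)

lemma Rsq_5: "rm (rm z E5) E5 = - z"
  using RR_sq[of z E5] by (simp add: Etab rmp_minus rm_one)

lemma MRs_5: "rm (lm E5 z) E5 = lm E5 (rm z E5)"
  by (rule LR_comm)

lemma Lsq_6: "lm E6 (lm E6 z) = - z"
  using LL_sq[of E6 z] by (simp add: Etab lmp_minus lm_one)

lemma Rsq_6: "rm (rm z E6) E6 = - z"
  using RR_sq[of z E6] by (simp add: Etab rmp_minus rm_one)

lemma MRs_6: "rm (lm E6 z) E6 = lm E6 (rm z E6)"
  by (rule LR_comm)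

lemma Lsq_7: "lm E7 (lm E7 z) = - z"
  using LL_sq[of E7 z] by (simp add: Etab lmp_minus lm_one)

lemma Rsq_7: "rm (rm z E7) E7 = - z"
  using RR_sq[of z E7] by (simp add: Etab rmp_minus rm_one)

lemma MRs_7: "rm (lm E7 z) E7 = lm E7 (rm z E7)"
  by (rule LR_comm)

lemma MR_2_1: "rm (lm E1 z) E2 = lm E1 (rm z E2) - lm E4 z - lm E2 (lm E1 z)"
  using MR_gen[of E1 z E2] by (simp add: Etab lmp_minus)

lemma RR_1_2: "rm (rm z E2) E1 = - lm E4 z - lm E2 (lm E1 z) - rm z E4"
  using RR_gen[of z E2 E1] by (simp add: Etab lmp_minus rmp_minus)

lemma MR_3_1: "rm (lm E1 z) E3 = lm E1 (rm z E3) - lm E7 z - lm E3 (lm E1 z)"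
  using MR_gen[of E1 z E3] by (simp add: Etab lmp_minus)

lemma RR_1_3: "rm (rm z E3) E1 = - lm E7 z - lm E3 (lm E1 z) - rm z E7"
  using RR_gen[of z E3 E1] by (simp add: Etab lmp_minus rmp_minus)

lemma MR_4_1: "rm (lm E1 z) E4 = lm E1 (rm z E4) + lm E2 z - lm E4 (lm E1 z)"
  using MR_gen[of E1 z E4] by (simp add: Etab lmp_minus)

lemma RR_1_4: "rm (rm z E4) E1 = lm E2 z - lm E4 (lm E1 z) + rm z E2"
  using RR_gen[of z E4 E1] by (simp add: Etab lmp_minus rmp_minus)

lemma MR_5_1: "rm (lm E1 z) E5 = lm E1 (rm z E5) - lm E6 z - lm E5 (lm E1 z)"
  using MR_gen[of E1 z E5] by (simp add: Etab lmp_minus)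

lemma RR_1_5: "rm (rm z E5) E1 = - lm E6 z - lm E5 (lm E1 z) - rm z E6"
  using RR_gen[of z E5 E1] by (simp add: Etab lmp_minus rmp_minus)

lemma MR_6_1: "rm (lm E1 z) E6 = lm E1 (rm z E6) + lm E5 z - lm E6 (lm E1 z)"
  using MR_gen[of E1 z E6] by (simp add: Etab lmp_minus)

lemma RR_1_6: "rm (rm z E6) E1 = lm E5 z - lm E6 (lm E1 z) + rm z E5"
  using RR_gen[of z E6 E1] by (simp add: Etab lmp_minus rmp_minus)

lemma MR_7_1: "rm (lm E1 z) E7 = lm E1 (rm z E7) + lm E3 z - lm E7 (lm E1 z)"
  using MR_gen[of E1 z E7] by (simp add: Etab lmp_minus)

lemma RR_1_7: "rm (rm z E7) E1 = lm E3 z - lm E7 (lm E1 z) + rm z E3"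
  using RR_gen[of z E7 E1] by (simp add: Etab lmp_minus rmp_minus)

lemma Lan_2_1: "lm E2 (lm E1 z) = - lm E1 (lm E2 z)"
  using LL_anti[of E2 E1 z] by (simp add: Etab lmp_minus eq_neg_iff_add_eq_0)

lemma Ran_2_1: "rm (rm z E1) E2 = - rm (rm z E2) E1"
  using RR_anti[of z E1 E2] by (simp add: Etab rmp_minus eq_neg_iff_add_eq_0)

lemma MR_1_2: "rm (lm E2 z) E1 = lm E2 (rm z E1) + lm E4 z - lm E1 (lm E2 z)"
  using MR_gen[of E2 z E1] by (simp add: Etab lmp_minus)

lemma RR_2_1: "rm (rm z E1) E2 = lm E4 z - lm E1 (lm E2 z) + rm z E4"
  using RR_gen[of z E1 E2] by (simp add: Etab lmp_minus rmp_minus)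

lemma MR_3_2: "rm (lm E2 z) E3 = lm E2 (rm z E3) - lm E5 z - lm E3 (lm E2 z)"
  using MR_gen[of E2 z E3] by (simp add: Etab lmp_minus)

lemma RR_2_3: "rm (rm z E3) E2 = - lm E5 z - lm E3 (lm E2 z) - rm z E5"
  using RR_gen[of z E3 E2] by (simp add: Etab lmp_minus rmp_minus)

lemma MR_4_2: "rm (lm E2 z) E4 = lm E2 (rm z E4) - lm E1 z - lm E4 (lm E2 z)"
  using MR_gen[of E2 z E4] by (simp add: Etab lmp_minus)

lemma RR_2_4: "rm (rm z E4) E2 = - lm E1 z - lm E4 (lm E2 z) - rm z E1"
  using RR_gen[of z E4 E2] by (simp add: Etab lmp_minus rmp_minus)

lemma MR_5_2: "rm (lm E2 z) E5 = lm E2 (rm z E5) + lm E3 z - lm E5 (lm E2 z)"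
  using MR_gen[of E2 z E5] by (simp add: Etab lmp_minus)

lemma RR_2_5: "rm (rm z E5) E2 = lm E3 z - lm E5 (lm E2 z) + rm z E3"
  using RR_gen[of z E5 E2] by (simp add: Etab lmp_minus rmp_minus)

lemma MR_6_2: "rm (lm E2 z) E6 = lm E2 (rm z E6) - lm E7 z - lm E6 (lm E2 z)"
  using MR_gen[of E2 z E6] by (simp add: Etab lmp_minus)

lemma RR_2_6: "rm (rm z E6) E2 = - lm E7 z - lm E6 (lm E2 z) - rm z E7"
  using RR_gen[of z E6 E2] by (simp add: Etab lmp_minus rmp_minus)

lemma MR_7_2: "rm (lm E2 z) E7 = lm E2 (rm z E7) + lm E6 z - lm E7 (lm E2 z)"
  using MR_gen[of E2 z E7] by (simp add: Etab lmp_minus)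

lemma RR_2_7: "rm (rm z E7) E2 = lm E6 z - lm E7 (lm E2 z) + rm z E6"
  using RR_gen[of z E7 E2] by (simp add: Etab lmp_minus rmp_minus)

lemma Lan_3_1: "lm E3 (lm E1 z) = - lm E1 (lm E3 z)"
  using LL_anti[of E3 E1 z] by (simp add: Etab lmp_minus eq_neg_iff_add_eq_0)

lemma Ran_3_1: "rm (rm z E1) E3 = - rm (rm z E3) E1"
  using RR_anti[of z E1 E3] by (simp add: Etab rmp_minus eq_neg_iff_add_eq_0)

lemma MR_1_3: "rm (lm E3 z) E1 = lm E3 (rm z E1) + lm E7 z - lm E1 (lm E3 z)"
  using MR_gen[of E3 z E1] by (simp add: Etab lmp_minus)

lemma RR_3_1: "rm (rm z E1) E3 = lm E7 z - lm E1 (lm E3 z) + rm z E7"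
  using RR_gen[of z E1 E3] by (simp add: Etab lmp_minus rmp_minus)

lemma Lan_3_2: "lm E3 (lm E2 z) = - lm E2 (lm E3 z)"
  using LL_anti[of E3 E2 z] by (simp add: Etab lmp_minus eq_neg_iff_add_eq_0)

lemma Ran_3_2: "rm (rm z E2) E3 = - rm (rm z E3) E2"
  using RR_anti[of z E2 E3] by (simp add: Etab rmp_minus eq_neg_iff_add_eq_0)

lemma MR_2_3: "rm (lm E3 z) E2 = lm E3 (rm z E2) + lm E5 z - lm E2 (lm E3 z)"
  using MR_gen[of E3 z E2] by (simp add: Etab lmp_minus)

lemma RR_3_2: "rm (rm z E2) E3 = lm E5 z - lm E2 (lm E3 z) + rm z E5"
  using RR_gen[of z E2 E3] by (simp add: Etab lmp_minus rmp_minus)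

lemma MR_4_3: "rm (lm E3 z) E4 = lm E3 (rm z E4) - lm E6 z - lm E4 (lm E3 z)"
  using MR_gen[of E3 z E4] by (simp add: Etab lmp_minus)

lemma RR_3_4: "rm (rm z E4) E3 = - lm E6 z - lm E4 (lm E3 z) - rm z E6"
  using RR_gen[of z E4 E3] by (simp add: Etab lmp_minus rmp_minus)

lemma MR_5_3: "rm (lm E3 z) E5 = lm E3 (rm z E5) - lm E2 z - lm E5 (lm E3 z)"
  using MR_gen[of E3 z E5] by (simp add: Etab lmp_minus)

lemma RR_3_5: "rm (rm z E5) E3 = - lm E2 z - lm E5 (lm E3 z) - rm z E2"
  using RR_gen[of z E5 E3] by (simp add: Etab lmp_minus rmp_minus)

lemma MR_6_3: "rm (lm E3 z) E6 = lm E3 (rm z E6) + lm E4 z - lm E6 (lm E3 z)"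
  using MR_gen[of E3 z E6] by (simp add: Etab lmp_minus)

lemma RR_3_6: "rm (rm z E6) E3 = lm E4 z - lm E6 (lm E3 z) + rm z E4"
  using RR_gen[of z E6 E3] by (simp add: Etab lmp_minus rmp_minus)

lemma MR_7_3: "rm (lm E3 z) E7 = lm E3 (rm z E7) - lm E1 z - lm E7 (lm E3 z)"
  using MR_gen[of E3 z E7] by (simp add: Etab lmp_minus)

lemma RR_3_7: "rm (rm z E7) E3 = - lm E1 z - lm E7 (lm E3 z) - rm z E1"
  using RR_gen[of z E7 E3] by (simp add: Etab lmp_minus rmp_minus)

lemma Lan_4_1: "lm E4 (lm E1 z) = - lm E1 (lm E4 z)"
  using LL_anti[of E4 E1 z] by (simp add: Etab lmp_minus eq_neg_iff_add_eq_0)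

lemma Ran_4_1: "rm (rm z E1) E4 = - rm (rm z E4) E1"
  using RR_anti[of z E1 E4] by (simp add: Etab rmp_minus eq_neg_iff_add_eq_0)

lemma MR_1_4: "rm (lm E4 z) E1 = lm E4 (rm z E1) - lm E2 z - lm E1 (lm E4 z)"
  using MR_gen[of E4 z E1] by (simp add: Etab lmp_minus)

lemma RR_4_1: "rm (rm z E1) E4 = - lm E2 z - lm E1 (lm E4 z) - rm z E2"
  using RR_gen[of z E1 E4] by (simp add: Etab lmp_minus rmp_minus)

lemma Lan_4_2: "lm E4 (lm E2 z) = - lm E2 (lm E4 z)"
  using LL_anti[of E4 E2 z] by (simp add: Etab lmp_minus eq_neg_iff_add_eq_0)

lemma Ran_4_2: "rm (rm z E2) E4 = - rm (rm z E4) E2"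
  using RR_anti[of z E2 E4] by (simp add: Etab rmp_minus eq_neg_iff_add_eq_0)

lemma MR_2_4: "rm (lm E4 z) E2 = lm E4 (rm z E2) + lm E1 z - lm E2 (lm E4 z)"
  using MR_gen[of E4 z E2] by (simp add: Etab lmp_minus)

lemma RR_4_2: "rm (rm z E2) E4 = lm E1 z - lm E2 (lm E4 z) + rm z E1"
  using RR_gen[of z E2 E4] by (simp add: Etab lmp_minus rmp_minus)

lemma Lan_4_3: "lm E4 (lm E3 z) = - lm E3 (lm E4 z)"
  using LL_anti[of E4 E3 z] by (simp add: Etab lmp_minus eq_neg_iff_add_eq_0)

lemma Ran_4_3: "rm (rm z E3) E4 = - rm (rm z E4) E3"
  using RR_anti[of z E3 E4] by (simp add: Etab rmp_minus eq_neg_iff_add_eq_0)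

lemma MR_3_4: "rm (lm E4 z) E3 = lm E4 (rm z E3) + lm E6 z - lm E3 (lm E4 z)"
  using MR_gen[of E4 z E3] by (simp add: Etab lmp_minus)

lemma RR_4_3: "rm (rm z E3) E4 = lm E6 z - lm E3 (lm E4 z) + rm z E6"
  using RR_gen[of z E3 E4] by (simp add: Etab lmp_minus rmp_minus)

lemma MR_5_4: "rm (lm E4 z) E5 = lm E4 (rm z E5) - lm E7 z - lm E5 (lm E4 z)"
  using MR_gen[of E4 z E5] by (simp add: Etab lmp_minus)

lemma RR_4_5: "rm (rm z E5) E4 = - lm E7 z - lm E5 (lm E4 z) - rm z E7"
  using RR_gen[of z E5 E4] by (simp add: Etab lmp_minus rmp_minus)

lemma MR_6_4: "rm (lm E4 z) E6 = lm E4 (rm z E6) - lm E3 z - lm E6 (lm E4 z)"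
  using MR_gen[of E4 z E6] by (simp add: Etab lmp_minus)

lemma RR_4_6: "rm (rm z E6) E4 = - lm E3 z - lm E6 (lm E4 z) - rm z E3"
  using RR_gen[of z E6 E4] by (simp add: Etab lmp_minus rmp_minus)

lemma MR_7_4: "rm (lm E4 z) E7 = lm E4 (rm z E7) + lm E5 z - lm E7 (lm E4 z)"
  using MR_gen[of E4 z E7] by (simp add: Etab lmp_minus)

lemma RR_4_7: "rm (rm z E7) E4 = lm E5 z - lm E7 (lm E4 z) + rm z E5"
  using RR_gen[of z E7 E4] by (simp add: Etab lmp_minus rmp_minus)

lemma Lan_5_1: "lm E5 (lm E1 z) = - lm E1 (lm E5 z)"
  using LL_anti[of E5 E1 z] by (simp add: Etab lmp_minus eq_neg_iff_add_eq_0)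

lemma Ran_5_1: "rm (rm z E1) E5 = - rm (rm z E5) E1"
  using RR_anti[of z E1 E5] by (simp add: Etab rmp_minus eq_neg_iff_add_eq_0)

lemma MR_1_5: "rm (lm E5 z) E1 = lm E5 (rm z E1) + lm E6 z - lm E1 (lm E5 z)"
  using MR_gen[of E5 z E1] by (simp add: Etab lmp_minus)

lemma RR_5_1: "rm (rm z E1) E5 = lm E6 z - lm E1 (lm E5 z) + rm z E6"
  using RR_gen[of z E1 E5] by (simp add: Etab lmp_minus rmp_minus)

lemma Lan_5_2: "lm E5 (lm E2 z) = - lm E2 (lm E5 z)"
  using LL_anti[of E5 E2 z] by (simp add: Etab lmp_minus eq_neg_iff_add_eq_0)

lemma Ran_5_2: "rm (rm z E2) E5 = - rm (rm z E5) E2"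
  using RR_anti[of z E2 E5] by (simp add: Etab rmp_minus eq_neg_iff_add_eq_0)

lemma MR_2_5: "rm (lm E5 z) E2 = lm E5 (rm z E2) - lm E3 z - lm E2 (lm E5 z)"
  using MR_gen[of E5 z E2] by (simp add: Etab lmp_minus)

lemma RR_5_2: "rm (rm z E2) E5 = - lm E3 z - lm E2 (lm E5 z) - rm z E3"
  using RR_gen[of z E2 E5] by (simp add: Etab lmp_minus rmp_minus)

lemma Lan_5_3: "lm E5 (lm E3 z) = - lm E3 (lm E5 z)"
  using LL_anti[of E5 E3 z] by (simp add: Etab lmp_minus eq_neg_iff_add_eq_0)

lemma Ran_5_3: "rm (rm z E3) E5 = - rm (rm z E5) E3"
  using RR_anti[of z E3 E5] by (simp add: Etab rmp_minus eq_neg_iff_add_eq_0)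

lemma MR_3_5: "rm (lm E5 z) E3 = lm E5 (rm z E3) + lm E2 z - lm E3 (lm E5 z)"
  using MR_gen[of E5 z E3] by (simp add: Etab lmp_minus)

lemma RR_5_3: "rm (rm z E3) E5 = lm E2 z - lm E3 (lm E5 z) + rm z E2"
  using RR_gen[of z E3 E5] by (simp add: Etab lmp_minus rmp_minus)

lemma Lan_5_4: "lm E5 (lm E4 z) = - lm E4 (lm E5 z)"
  using LL_anti[of E5 E4 z] by (simp add: Etab lmp_minus eq_neg_iff_add_eq_0)

lemma Ran_5_4: "rm (rm z E4) E5 = - rm (rm z E5) E4"
  using RR_anti[of z E4 E5] by (simp add: Etab rmp_minus eq_neg_iff_add_eq_0)

lemma MR_4_5: "rm (lm E5 z) E4 = lm E5 (rm z E4) + lm E7 z - lm E4 (lm E5 z)"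
  using MR_gen[of E5 z E4] by (simp add: Etab lmp_minus)

lemma RR_5_4: "rm (rm z E4) E5 = lm E7 z - lm E4 (lm E5 z) + rm z E7"
  using RR_gen[of z E4 E5] by (simp add: Etab lmp_minus rmp_minus)

lemma MR_6_5: "rm (lm E5 z) E6 = lm E5 (rm z E6) - lm E1 z - lm E6 (lm E5 z)"
  using MR_gen[of E5 z E6] by (simp add: Etab lmp_minus)

lemma RR_5_6: "rm (rm z E6) E5 = - lm E1 z - lm E6 (lm E5 z) - rm z E1"
  using RR_gen[of z E6 E5] by (simp add: Etab lmp_minus rmp_minus)

lemma MR_7_5: "rm (lm E5 z) E7 = lm E5 (rm z E7) - lm E4 z - lm E7 (lm E5 z)"
  using MR_gen[of E5 z E7] by (simp add: Etab lmp_minus)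

lemma RR_5_7: "rm (rm z E7) E5 = - lm E4 z - lm E7 (lm E5 z) - rm z E4"
  using RR_gen[of z E7 E5] by (simp add: Etab lmp_minus rmp_minus)

lemma Lan_6_1: "lm E6 (lm E1 z) = - lm E1 (lm E6 z)"
  using LL_anti[of E6 E1 z] by (simp add: Etab lmp_minus eq_neg_iff_add_eq_0)

lemma Ran_6_1: "rm (rm z E1) E6 = - rm (rm z E6) E1"
  using RR_anti[of z E1 E6] by (simp add: Etab rmp_minus eq_neg_iff_add_eq_0)

lemma MR_1_6: "rm (lm E6 z) E1 = lm E6 (rm z E1) - lm E5 z - lm E1 (lm E6 z)"
  using MR_gen[of E6 z E1] by (simp add: Etab lmp_minus)

lemma RR_6_1: "rm (rm z E1) E6 = - lm E5 z - lm E1 (lm E6 z) - rm z E5"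
  using RR_gen[of z E1 E6] by (simp add: Etab lmp_minus rmp_minus)

lemma Lan_6_2: "lm E6 (lm E2 z) = - lm E2 (lm E6 z)"
  using LL_anti[of E6 E2 z] by (simp add: Etab lmp_minus eq_neg_iff_add_eq_0)

lemma Ran_6_2: "rm (rm z E2) E6 = - rm (rm z E6) E2"
  using RR_anti[of z E2 E6] by (simp add: Etab rmp_minus eq_neg_iff_add_eq_0)

lemma MR_2_6: "rm (lm E6 z) E2 = lm E6 (rm z E2) + lm E7 z - lm E2 (lm E6 z)"
  using MR_gen[of E6 z E2] by (simp add: Etab lmp_minus)

lemma RR_6_2: "rm (rm z E2) E6 = lm E7 z - lm E2 (lm E6 z) + rm z E7"
  using RR_gen[of z E2 E6] by (simp add: Etab lmp_minus rmp_minus)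

lemma Lan_6_3: "lm E6 (lm E3 z) = - lm E3 (lm E6 z)"
  using LL_anti[of E6 E3 z] by (simp add: Etab lmp_minus eq_neg_iff_add_eq_0)

lemma Ran_6_3: "rm (rm z E3) E6 = - rm (rm z E6) E3"
  using RR_anti[of z E3 E6] by (simp add: Etab rmp_minus eq_neg_iff_add_eq_0)

lemma MR_3_6: "rm (lm E6 z) E3 = lm E6 (rm z E3) - lm E4 z - lm E3 (lm E6 z)"
  using MR_gen[of E6 z E3] by (simp add: Etab lmp_minus)

lemma RR_6_3: "rm (rm z E3) E6 = - lm E4 z - lm E3 (lm E6 z) - rm z E4"
  using RR_gen[of z E3 E6] by (simp add: Etab lmp_minus rmp_minus)

lemma Lan_6_4: "lm E6 (lm E4 z) = - lm E4 (lm E6 z)"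
  using LL_anti[of E6 E4 z] by (simp add: Etab lmp_minus eq_neg_iff_add_eq_0)

lemma Ran_6_4: "rm (rm z E4) E6 = - rm (rm z E6) E4"
  using RR_anti[of z E4 E6] by (simp add: Etab rmp_minus eq_neg_iff_add_eq_0)

lemma MR_4_6: "rm (lm E6 z) E4 = lm E6 (rm z E4) + lm E3 z - lm E4 (lm E6 z)"
  using MR_gen[of E6 z E4] by (simp add: Etab lmp_minus)

lemma RR_6_4: "rm (rm z E4) E6 = lm E3 z - lm E4 (lm E6 z) + rm z E3"
  using RR_gen[of z E4 E6] by (simp add: Etab lmp_minus rmp_minus)

lemma Lan_6_5: "lm E6 (lm E5 z) = - lm E5 (lm E6 z)"
  using LL_anti[of E6 E5 z] by (simp add: Etab lmp_minus eq_neg_iff_add_eq_0)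

lemma Ran_6_5: "rm (rm z E5) E6 = - rm (rm z E6) E5"
  using RR_anti[of z E5 E6] by (simp add: Etab rmp_minus eq_neg_iff_add_eq_0)

lemma MR_5_6: "rm (lm E6 z) E5 = lm E6 (rm z E5) + lm E1 z - lm E5 (lm E6 z)"
  using MR_gen[of E6 z E5] by (simp add: Etab lmp_minus)

lemma RR_6_5: "rm (rm z E5) E6 = lm E1 z - lm E5 (lm E6 z) + rm z E1"
  using RR_gen[of z E5 E6] by (simp add: Etab lmp_minus rmp_minus)

lemma MR_7_6: "rm (lm E6 z) E7 = lm E6 (rm z E7) - lm E2 z - lm E7 (lm E6 z)"
  using MR_gen[of E6 z E7] by (simp add: Etab lmp_minus)

lemma RR_6_7: "rm (rm z E7) E6 = - lm E2 z - lm E7 (lm E6 z) - rm z E2"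
  using RR_gen[of z E7 E6] by (simp add: Etab lmp_minus rmp_minus)

lemma Lan_7_1: "lm E7 (lm E1 z) = - lm E1 (lm E7 z)"
  using LL_anti[of E7 E1 z] by (simp add: Etab lmp_minus eq_neg_iff_add_eq_0)

lemma Ran_7_1: "rm (rm z E1) E7 = - rm (rm z E7) E1"
  using RR_anti[of z E1 E7] by (simp add: Etab rmp_minus eq_neg_iff_add_eq_0)

lemma MR_1_7: "rm (lm E7 z) E1 = lm E7 (rm z E1) - lm E3 z - lm E1 (lm E7 z)"
  using MR_gen[of E7 z E1] by (simp add: Etab lmp_minus)

lemma RR_7_1: "rm (rm z E1) E7 = - lm E3 z - lm E1 (lm E7 z) - rm z E3"
  using RR_gen[of z E1 E7] by (simp add: Etab lmp_minus rmp_minus)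

lemma Lan_7_2: "lm E7 (lm E2 z) = - lm E2 (lm E7 z)"
  using LL_anti[of E7 E2 z] by (simp add: Etab lmp_minus eq_neg_iff_add_eq_0)

lemma Ran_7_2: "rm (rm z E2) E7 = - rm (rm z E7) E2"
  using RR_anti[of z E2 E7] by (simp add: Etab rmp_minus eq_neg_iff_add_eq_0)

lemma MR_2_7: "rm (lm E7 z) E2 = lm E7 (rm z E2) - lm E6 z - lm E2 (lm E7 z)"
  using MR_gen[of E7 z E2] by (simp add: Etab lmp_minus)

lemma RR_7_2: "rm (rm z E2) E7 = - lm E6 z - lm E2 (lm E7 z) - rm z E6"
  using RR_gen[of z E2 E7] by (simp add: Etab lmp_minus rmp_minus)

lemma Lan_7_3: "lm E7 (lm E3 z) = - lm E3 (lm E7 z)"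
  using LL_anti[of E7 E3 z] by (simp add: Etab lmp_minus eq_neg_iff_add_eq_0)

lemma Ran_7_3: "rm (rm z E3) E7 = - rm (rm z E7) E3"
  using RR_anti[of z E3 E7] by (simp add: Etab rmp_minus eq_neg_iff_add_eq_0)

lemma MR_3_7: "rm (lm E7 z) E3 = lm E7 (rm z E3) + lm E1 z - lm E3 (lm E7 z)"
  using MR_gen[of E7 z E3] by (simp add: Etab lmp_minus)

lemma RR_7_3: "rm (rm z E3) E7 = lm E1 z - lm E3 (lm E7 z) + rm z E1"
  using RR_gen[of z E3 E7] by (simp add: Etab lmp_minus rmp_minus)

lemma Lan_7_4: "lm E7 (lm E4 z) = - lm E4 (lm E7 z)"
  using LL_anti[of E7 E4 z] by (simp add: Etab lmp_minus eq_neg_iff_add_eq_0)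

lemma Ran_7_4: "rm (rm z E4) E7 = - rm (rm z E7) E4"
  using RR_anti[of z E4 E7] by (simp add: Etab rmp_minus eq_neg_iff_add_eq_0)

lemma MR_4_7: "rm (lm E7 z) E4 = lm E7 (rm z E4) - lm E5 z - lm E4 (lm E7 z)"
  using MR_gen[of E7 z E4] by (simp add: Etab lmp_minus)

lemma RR_7_4: "rm (rm z E4) E7 = - lm E5 z - lm E4 (lm E7 z) - rm z E5"
  using RR_gen[of z E4 E7] by (simp add: Etab lmp_minus rmp_minus)

lemma Lan_7_5: "lm E7 (lm E5 z) = - lm E5 (lm E7 z)"
  using LL_anti[of E7 E5 z] by (simp add: Etab lmp_minus eq_neg_iff_add_eq_0)

lemma Ran_7_5: "rm (rm z E5) E7 = - rm (rm z E7) E5"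
  using RR_anti[of z E5 E7] by (simp add: Etab rmp_minus eq_neg_iff_add_eq_0)

lemma MR_5_7: "rm (lm E7 z) E5 = lm E7 (rm z E5) + lm E4 z - lm E5 (lm E7 z)"
  using MR_gen[of E7 z E5] by (simp add: Etab lmp_minus)

lemma RR_7_5: "rm (rm z E5) E7 = lm E4 z - lm E5 (lm E7 z) + rm z E4"
  using RR_gen[of z E5 E7] by (simp add: Etab lmp_minus rmp_minus)

lemma Lan_7_6: "lm E7 (lm E6 z) = - lm E6 (lm E7 z)"
  using LL_anti[of E7 E6 z] by (simp add: Etab lmp_minus eq_neg_iff_add_eq_0)

lemma Ran_7_6: "rm (rm z E6) E7 = - rm (rm z E7) E6"
  using RR_anti[of z E6 E7] by (simp add: Etab rmp_minus eq_neg_iff_add_eq_0)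

lemma MR_6_7: "rm (lm E7 z) E6 = lm E7 (rm z E6) + lm E2 z - lm E6 (lm E7 z)"
  using MR_gen[of E7 z E6] by (simp add: Etab lmp_minus)

lemma RR_7_6: "rm (rm z E6) E7 = lm E2 z - lm E6 (lm E7 z) + rm z E2"
  using RR_gen[of z E6 E7] by (simp add: Etab lmp_minus rmp_minus)

lemmas cliffL = Lsq_1 Lsq_2 Lsq_3 Lsq_4 Lsq_5 Lsq_6 Lsq_7 Lan_2_1 Lan_3_1 Lan_3_2 Lan_4_1 Lan_4_2 Lan_4_3 Lan_5_1 Lan_5_2 Lan_5_3 Lan_5_4 Lan_6_1 Lan_6_2 Lan_6_3 Lan_6_4 Lan_6_5 Lan_7_1 Lan_7_2 Lan_7_3 Lan_7_4 Lan_7_5 Lan_7_6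

lemmas cliffR = Rsq_1 Rsq_2 Rsq_3 Rsq_4 Rsq_5 Rsq_6 Rsq_7 Ran_2_1 Ran_3_1 Ran_3_2 Ran_4_1 Ran_4_2 Ran_4_3 Ran_5_1 Ran_5_2 Ran_5_3 Ran_5_4 Ran_6_1 Ran_6_2 Ran_6_3 Ran_6_4 Ran_6_5 Ran_7_1 Ran_7_2 Ran_7_3 Ran_7_4 Ran_7_5 Ran_7_6


lemma Rf_1: "rm y E1 = (-1/2) *\<^sub>R lm E1 (y) + (1/2) *\<^sub>R lm E2 (lm E4 (y)) + (1/2) *\<^sub>R lm E3 (lm E7 (y)) + (1/2) *\<^sub>R lm E5 (lm E6 (y))"
proof -
  have g0: "rm (rm (lm E3 (y)) E6) E2 - rm ((lm E3 (rm (y) E6) + lm E4 (y) - lm E6 (lm E3 (y)))) E2 = 0" unfolding right_minus_eq by (rule arg_cong[where f="\<lambda>z. rm (z) E2"], rule MR_6_3)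
  have g1: "rm (lm E3 (rm (y) E6)) E2 - ((lm E3 (rm (rm (y) E6) E2) + lm E5 (rm (y) E6) - lm E2 (lm E3 (rm (y) E6)))) = 0" unfolding right_minus_eq by (rule MR_2_3)
  have g2: "lm E3 (rm (rm (y) E6) E2) - lm E3 ((- lm E7 (y) - lm E6 (lm E2 (y)) - rm (y) E7)) = 0" unfolding right_minus_eq by (rule arg_cong[where f="\<lambda>z. lm E3 (z)"], rule RR_2_6)
  have g3: "rm (rm (lm E3 (y)) E6) E2 - ((- lm E7 (lm E3 (y)) - lm E6 (lm E2 (lm E3 (y))) - rm (lm E3 (y)) E7)) = 0" unfolding right_minus_eq by (rule RR_2_6)
  have g4: "rm (lm E3 (y)) E7 - ((lm E3 (rm (y) E7) - lm E1 (y) - lm E7 (lm E3 (y)))) = 0" unfolding right_minus_eq by (rule MR_7_3)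
  have g5: "rm (rm (rm (y) E6) E3) E2 - rm ((lm E4 (y) - lm E6 (lm E3 (y)) + rm (y) E4)) E2 = 0" unfolding right_minus_eq by (rule arg_cong[where f="\<lambda>z. rm (z) E2"], rule RR_3_6)
  have g6: "rm (rm (y) E4) E2 - ((- lm E1 (y) - lm E4 (lm E2 (y)) - rm (y) E1)) = 0" unfolding right_minus_eq by (rule RR_2_4)
  have g7: "rm (rm (rm (y) E6) E3) E2 - ((- lm E5 (rm (y) E6) - lm E3 (lm E2 (rm (y) E6)) - rm (rm (y) E6) E5)) = 0" unfolding right_minus_eq by (rule RR_2_3)
  have g8: "rm (rm (y) E6) E5 - ((- lm E1 (y) - lm E6 (lm E5 (y)) - rm (y) E1)) = 0" unfolding right_minus_eq by (rule RR_5_6)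
  have "rm y E1 - ((-1/2) *\<^sub>R lm E1 (y) + (1/2) *\<^sub>R lm E2 (lm E4 (y)) + (1/2) *\<^sub>R lm E3 (lm E7 (y)) + (1/2) *\<^sub>R lm E5 (lm E6 (y))) = (-1/2) *\<^sub>R (rm (rm (lm E3 (y)) E6) E2 - (rm ((lm E3 (rm (y) E6) + lm E4 (y) - lm E6 (lm E3 (y)))) E2)) + (-1/2) *\<^sub>R (rm (lm E3 (rm (y) E6)) E2 - ((lm E3 (rm (rm (y) E6) E2) + lm E5 (rm (y) E6) - lm E2 (lm E3 (rm (y) E6))))) + (-1/2) *\<^sub>R (lm E3 (rm (rm (y) E6) E2) - (lm E3 ((- lm E7 (y) - lm E6 (lm E2 (y)) - rm (y) E7)))) + (1/2) *\<^sub>R (rm (rm (lm E3 (y)) E6) E2 - ((- lm E7 (lm E3 (y)) - lm E6 (lm E2 (lm E3 (y))) - rm (lm E3 (y)) E7))) + (-1/2) *\<^sub>R (rm (lm E3 (y)) E7 - ((lm E3 (rm (y) E7) - lm E1 (y) - lm E7 (lm E3 (y))))) + (1/2) *\<^sub>R (rm (rm (rm (y) E6) E3) E2 - (rm ((lm E4 (y) - lm E6 (lm E3 (y)) + rm (y) E4)) E2)) + (1/2) *\<^sub>R (rm (rm (y) E4) E2 - ((- lm E1 (y) - lm E4 (lm E2 (y)) - rm (y) E1))) + (-1/2) *\<^sub>R (rm (rm (rm (y) E6) E3) E2 - ((- lm E5 (rm (y) E6) - lm E3 (lm E2 (rm (y) E6)) - rm (rm (y) E6) E5))) + (1/2) *\<^sub>R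 (rm (rm (y) E6) E5 - ((- lm E1 (y) - lm E6 (lm E5 (y)) - rm (y) E1)))"
    apply (rule sep_eq2) apply (simp only: lmrm_lin cliffL cliffR) by (simp add: algebra_simps)
  also have "\<dots> = 0" by (simp only: g0 g1 g2 g3 g4 g5 g6 g7 g8 scaleR_zero_right add_0_right)
  finally show ?thesis by (simp only: right_minus_eq)
qed

lemma Rf_2: "rm y E2 = (-1/2) *\<^sub>R lm E1 (lm E4 (y)) + (-1/2) *\<^sub>R lm E2 (y) + (1/2) *\<^sub>R lm E3 (lm E5 (y)) + (1/2) *\<^sub>R lm E6 (lm E7 (y))"
proof -
  have g0: "rm (rm (lm E3 (y)) E6) E1 - rm ((lm E3 (rm (y) E6) + lm E4 (y) - lm E6 (lm E3 (y)))) E1 = 0" unfolding right_minus_eq by (rule arg_cong[where f="\<lambda>z. rm (z) E1"], rule MR_6_3)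
  have g1: "rm (lm E3 (rm (y) E6)) E1 - ((lm E3 (rm (rm (y) E6) E1) + lm E7 (rm (y) E6) - lm E1 (lm E3 (rm (y) E6)))) = 0" unfolding right_minus_eq by (rule MR_1_3)
  have g2: "lm E3 (rm (rm (y) E6) E1) - lm E3 ((lm E5 (y) - lm E6 (lm E1 (y)) + rm (y) E5)) = 0" unfolding right_minus_eq by (rule arg_cong[where f="\<lambda>z. lm E3 (z)"], rule RR_1_6)
  have g3: "rm (rm (lm E3 (y)) E6) E1 - ((lm E5 (lm E3 (y)) - lm E6 (lm E1 (lm E3 (y))) + rm (lm E3 (y)) E5)) = 0" unfolding right_minus_eq by (rule RR_1_6)
  have g4: "rm (lm E3 (y)) E5 - ((lm E3 (rm (y) E5) - lm E2 (y) - lm E5 (lm E3 (y)))) = 0" unfolding right_minus_eq by (rule MR_5_3)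
  have g5: "rm (rm (rm (y) E6) E3) E1 - rm ((lm E4 (y) - lm E6 (lm E3 (y)) + rm (y) E4)) E1 = 0" unfolding right_minus_eq by (rule arg_cong[where f="\<lambda>z. rm (z) E1"], rule RR_3_6)
  have g6: "rm (rm (y) E4) E1 - ((lm E2 (y) - lm E4 (lm E1 (y)) + rm (y) E2)) = 0" unfolding right_minus_eq by (rule RR_1_4)
  have g7: "rm (rm (rm (y) E6) E3) E1 - ((- lm E7 (rm (y) E6) - lm E3 (lm E1 (rm (y) E6)) - rm (rm (y) E6) E7)) = 0" unfolding right_minus_eq by (rule RR_1_3)
  have g8: "rm (rm (y) E7) E6 - ((- lm E2 (y) - lm E7 (lm E6 (y)) - rm (y) E2)) = 0" unfolding right_minus_eq by (rule RR_6_7)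
  have "rm y E2 - ((-1/2) *\<^sub>R lm E1 (lm E4 (y)) + (-1/2) *\<^sub>R lm E2 (y) + (1/2) *\<^sub>R lm E3 (lm E5 (y)) + (1/2) *\<^sub>R lm E6 (lm E7 (y))) = (1/2) *\<^sub>R (rm (rm (lm E3 (y)) E6) E1 - (rm ((lm E3 (rm (y) E6) + lm E4 (y) - lm E6 (lm E3 (y)))) E1)) + (1/2) *\<^sub>R (rm (lm E3 (rm (y) E6)) E1 - ((lm E3 (rm (rm (y) E6) E1) + lm E7 (rm (y) E6) - lm E1 (lm E3 (rm (y) E6))))) + (1/2) *\<^sub>R (lm E3 (rm (rm (y) E6) E1) - (lm E3 ((lm E5 (y) - lm E6 (lm E1 (y)) + rm (y) E5)))) + (-1/2) *\<^sub>R (rm (rm (lm E3 (y)) E6) E1 - ((lm E5 (lm E3 (y)) - lm E6 (lm E1 (lm E3 (y))) + rm (lm E3 (y)) E5))) + (-1/2) *\<^sub>R (rm (lm E3 (y)) E5 - ((lm E3 (rm (y) E5) - lm E2 (y) - lm E5 (lm E3 (y))))) + (-1/2) *\<^sub>R (rm (rm (rm (y) E6) E3) E1 - (rm ((lm E4 (y) - lm E6 (lm E3 (y)) + rm (y) E4)) E1)) + (-1/2) *\<^sub>R (rm (rm (y) E4) E1 - ((lm E2 (y) - lm E4 (lm E1 (y)) + rm (y) E2))) + (1/2) *\<^sub>R (rm (rm (rm (y) E6) E3) E1 - ((- lm E7 (rm (y) E6) - lm E3 (lm E1 (rm (y) E6)) - rm (rm (y) E6) E7))) + (1/2) *\<^sub>R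 (rm (rm (y) E7) E6 - ((- lm E2 (y) - lm E7 (lm E6 (y)) - rm (y) E2)))"
    apply (rule sep_eq2) apply (simp only: lmrm_lin cliffL cliffR) by (simp add: algebra_simps)
  also have "\<dots> = 0" by (simp only: g0 g1 g2 g3 g4 g5 g6 g7 g8 scaleR_zero_right add_0_right)
  finally show ?thesis by (simp only: right_minus_eq)
qed

lemma Rf_3: "rm y E3 = (-1/2) *\<^sub>R lm E1 (lm E7 (y)) + (-1/2) *\<^sub>R lm E2 (lm E5 (y)) + (-1/2) *\<^sub>R lm E3 (y) + (1/2) *\<^sub>R lm E4 (lm E6 (y))"
proof -
  have g0: "rm (rm (lm E4 (y)) E5) E1 - rm ((lm E4 (rm (y) E5) - lm E7 (y) - lm E5 (lm E4 (y)))) E1 = 0" unfolding right_minus_eq by (rule arg_cong[where f="\<lambda>z. rm (z) E1"], rule MR_5_4)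
  have g1: "rm (lm E4 (rm (y) E5)) E1 - ((lm E4 (rm (rm (y) E5) E1) - lm E2 (rm (y) E5) - lm E1 (lm E4 (rm (y) E5)))) = 0" unfolding right_minus_eq by (rule MR_1_4)
  have g2: "lm E4 (rm (rm (y) E5) E1) - lm E4 ((- lm E6 (y) - lm E5 (lm E1 (y)) - rm (y) E6)) = 0" unfolding right_minus_eq by (rule arg_cong[where f="\<lambda>z. lm E4 (z)"], rule RR_1_5)
  have g3: "rm (rm (lm E4 (y)) E5) E1 - ((- lm E6 (lm E4 (y)) - lm E5 (lm E1 (lm E4 (y))) - rm (lm E4 (y)) E6)) = 0" unfolding right_minus_eq by (rule RR_1_5)
  have g4: "rm (lm E4 (y)) E6 - ((lm E4 (rm (y) E6) - lm E3 (y) - lm E6 (lm E4 (y)))) = 0" unfolding right_minus_eq by (rule MR_6_4)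
  have g5: "rm (rm (rm (y) E5) E4) E1 - rm ((- lm E7 (y) - lm E5 (lm E4 (y)) - rm (y) E7)) E1 = 0" unfolding right_minus_eq by (rule arg_cong[where f="\<lambda>z. rm (z) E1"], rule RR_4_5)
  have g6: "rm (rm (y) E7) E1 - ((lm E3 (y) - lm E7 (lm E1 (y)) + rm (y) E3)) = 0" unfolding right_minus_eq by (rule RR_1_7)
  have g7: "rm (rm (rm (y) E5) E4) E1 - ((lm E2 (rm (y) E5) - lm E4 (lm E1 (rm (y) E5)) + rm (rm (y) E5) E2)) = 0" unfolding right_minus_eq by (rule RR_1_4)
  have g8: "rm (rm (y) E5) E2 - ((lm E3 (y) - lm E5 (lm E2 (y)) + rm (y) E3)) = 0" unfolding right_minus_eq by (rule RR_2_5)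
  have "rm y E3 - ((-1/2) *\<^sub>R lm E1 (lm E7 (y)) + (-1/2) *\<^sub>R lm E2 (lm E5 (y)) + (-1/2) *\<^sub>R lm E3 (y) + (1/2) *\<^sub>R lm E4 (lm E6 (y))) = (-1/2) *\<^sub>R (rm (rm (lm E4 (y)) E5) E1 - (rm ((lm E4 (rm (y) E5) - lm E7 (y) - lm E5 (lm E4 (y)))) E1)) + (-1/2) *\<^sub>R (rm (lm E4 (rm (y) E5)) E1 - ((lm E4 (rm (rm (y) E5) E1) - lm E2 (rm (y) E5) - lm E1 (lm E4 (rm (y) E5))))) + (-1/2) *\<^sub>R (lm E4 (rm (rm (y) E5) E1) - (lm E4 ((- lm E6 (y) - lm E5 (lm E1 (y)) - rm (y) E6)))) + (1/2) *\<^sub>R (rm (rm (lm E4 (y)) E5) E1 - ((- lm E6 (lm E4 (y)) - lm E5 (lm E1 (lm E4 (y))) - rm (lm E4 (y)) E6))) + (-1/2) *\<^sub>R (rm (lm E4 (y)) E6 - ((lm E4 (rm (y) E6) - lm E3 (y) - lm E6 (lm E4 (y))))) + (1/2) *\<^sub>R (rm (rm (rm (y) E5) E4) E1 - (rm ((- lm E7 (y) - lm E5 (lm E4 (y)) - rm (y) E7)) E1)) + (-1/2) *\<^sub>R (rm (rm (y) E7) E1 - ((lm E3 (y) - lm E7 (lm E1 (y)) + rm (y) E3))) + (-1/2) *\<^sub>R (rm (rm (rm (y) E5) E4) E1 - ((lm E2 (rm (y) E5) - lm E4 (lm E1 (rm (y) E5)) + rm (rm (y) E5) E2))) + (-1/2)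 *\<^sub>R (rm (rm (y) E5) E2 - ((lm E3 (y) - lm E5 (lm E2 (y)) + rm (y) E3)))"
    apply (rule sep_eq2) apply (simp only: lmrm_lin cliffL cliffR) by (simp add: algebra_simps)
  also have "\<dots> = 0" by (simp only: g0 g1 g2 g3 g4 g5 g6 g7 g8 scaleR_zero_right add_0_right)
  finally show ?thesis by (simp only: right_minus_eq)
qed

lemma Rf_4: "rm y E4 = (1/2) *\<^sub>R lm E1 (lm E2 (y)) + (-1/2) *\<^sub>R lm E3 (lm E6 (y)) + (-1/2) *\<^sub>R lm E4 (y) + (1/2) *\<^sub>R lm E5 (lm E7 (y))"
proof -
  have g0: "rm (rm (lm E3 (y)) E5) E1 - rm ((lm E3 (rm (y) E5) - lm E2 (y) - lm E5 (lm E3 (y)))) E1 = 0" unfolding right_minus_eq by (rule arg_cong[where f="\<lambda>z. rm (z) E1"], rule MR_5_3)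
  have g1: "rm (lm E3 (rm (y) E5)) E1 - ((lm E3 (rm (rm (y) E5) E1) + lm E7 (rm (y) E5) - lm E1 (lm E3 (rm (y) E5)))) = 0" unfolding right_minus_eq by (rule MR_1_3)
  have g2: "lm E3 (rm (rm (y) E5) E1) - lm E3 ((- lm E6 (y) - lm E5 (lm E1 (y)) - rm (y) E6)) = 0" unfolding right_minus_eq by (rule arg_cong[where f="\<lambda>z. lm E3 (z)"], rule RR_1_5)
  have g3: "rm (rm (lm E3 (y)) E5) E1 - ((- lm E6 (lm E3 (y)) - lm E5 (lm E1 (lm E3 (y))) - rm (lm E3 (y)) E6)) = 0" unfolding right_minus_eq by (rule RR_1_5)
  have g4: "rm (lm E3 (y)) E6 - ((lm E3 (rm (y) E6) + lm E4 (y) - lm E6 (lm E3 (y)))) = 0" unfolding right_minus_eq by (rule MR_6_3)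
  have g5: "rm (rm (rm (y) E5) E3) E1 - rm ((- lm E2 (y) - lm E5 (lm E3 (y)) - rm (y) E2)) E1 = 0" unfolding right_minus_eq by (rule arg_cong[where f="\<lambda>z. rm (z) E1"], rule RR_3_5)
  have g6: "rm (rm (y) E2) E1 - ((- lm E4 (y) - lm E2 (lm E1 (y)) - rm (y) E4)) = 0" unfolding right_minus_eq by (rule RR_1_2)
  have g7: "rm (rm (rm (y) E5) E3) E1 - ((- lm E7 (rm (y) E5) - lm E3 (lm E1 (rm (y) E5)) - rm (rm (y) E5) E7)) = 0" unfolding right_minus_eq by (rule RR_1_3)
  have g8: "rm (rm (y) E7) E5 - ((- lm E4 (y) - lm E7 (lm E5 (y)) - rm (y) E4)) = 0" unfolding right_minus_eq by (rule RR_5_7)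
  have "rm y E4 - ((1/2) *\<^sub>R lm E1 (lm E2 (y)) + (-1/2) *\<^sub>R lm E3 (lm E6 (y)) + (-1/2) *\<^sub>R lm E4 (y) + (1/2) *\<^sub>R lm E5 (lm E7 (y))) = (1/2) *\<^sub>R (rm (rm (lm E3 (y)) E5) E1 - (rm ((lm E3 (rm (y) E5) - lm E2 (y) - lm E5 (lm E3 (y)))) E1)) + (1/2) *\<^sub>R (rm (lm E3 (rm (y) E5)) E1 - ((lm E3 (rm (rm (y) E5) E1) + lm E7 (rm (y) E5) - lm E1 (lm E3 (rm (y) E5))))) + (1/2) *\<^sub>R (lm E3 (rm (rm (y) E5) E1) - (lm E3 ((- lm E6 (y) - lm E5 (lm E1 (y)) - rm (y) E6)))) + (-1/2) *\<^sub>R (rm (rm (lm E3 (y)) E5) E1 - ((- lm E6 (lm E3 (y)) - lm E5 (lm E1 (lm E3 (y))) - rm (lm E3 (y)) E6))) + (1/2) *\<^sub>R (rm (lm E3 (y)) E6 - ((lm E3 (rm (y) E6) + lm E4 (y) - lm E6 (lm E3 (y))))) + (-1/2) *\<^sub>R (rm (rm (rm (y) E5) E3) E1 - (rm ((- lm E2 (y) - lm E5 (lm E3 (y)) - rm (y) E2)) E1)) + (1/2) *\<^sub>R (rm (rm (y) E2) E1 - ((- lm E4 (y) - lm E2 (lm E1 (y)) - rm (y) E4))) + (1/2) *\<^sub>R (rm (rm (rm (y) E5) E3) E1 - ((- lm E7 (rm (y) E5) - lm E3 (lm E1 (rm (y) E5)) - rm (rm (y) E5) E7))) + (1/2) *\<^sub>R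 (rm (rm (y) E7) E5 - ((- lm E4 (y) - lm E7 (lm E5 (y)) - rm (y) E4)))"
    apply (rule sep_eq2) apply (simp only: lmrm_lin cliffL cliffR) by (simp add: algebra_simps)
  also have "\<dots> = 0" by (simp only: g0 g1 g2 g3 g4 g5 g6 g7 g8 scaleR_zero_right add_0_right)
  finally show ?thesis by (simp only: right_minus_eq)
qed

lemma Rf_5: "rm y E5 = (-1/2) *\<^sub>R lm E1 (lm E6 (y)) + (1/2) *\<^sub>R lm E2 (lm E3 (y)) + (-1/2) *\<^sub>R lm E4 (lm E7 (y)) + (-1/2) *\<^sub>R lm E5 (y)"
proof -
  have g0: "rm (rm (lm E3 (y)) E4) E1 - rm ((lm E3 (rm (y) E4) - lm E6 (y) - lm E4 (lm E3 (y)))) E1 = 0" unfolding right_minus_eq by (rule arg_cong[where f="\<lambda>z. rm (z) E1"], rule MR_4_3)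
  have g1: "rm (lm E3 (rm (y) E4)) E1 - ((lm E3 (rm (rm (y) E4) E1) + lm E7 (rm (y) E4) - lm E1 (lm E3 (rm (y) E4)))) = 0" unfolding right_minus_eq by (rule MR_1_3)
  have g2: "lm E3 (rm (rm (y) E4) E1) - lm E3 ((lm E2 (y) - lm E4 (lm E1 (y)) + rm (y) E2)) = 0" unfolding right_minus_eq by (rule arg_cong[where f="\<lambda>z. lm E3 (z)"], rule RR_1_4)
  have g3: "rm (rm (lm E3 (y)) E4) E1 - ((lm E2 (lm E3 (y)) - lm E4 (lm E1 (lm E3 (y))) + rm (lm E3 (y)) E2)) = 0" unfolding right_minus_eq by (rule RR_1_4)
  have g4: "rm (lm E3 (y)) E2 - ((lm E3 (rm (y) E2) + lm E5 (y) - lm E2 (lm E3 (y)))) = 0" unfolding right_minus_eq by (rule MR_2_3)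
  have g5: "rm (rm (rm (y) E4) E3) E1 - rm ((- lm E6 (y) - lm E4 (lm E3 (y)) - rm (y) E6)) E1 = 0" unfolding right_minus_eq by (rule arg_cong[where f="\<lambda>z. rm (z) E1"], rule RR_3_4)
  have g6: "rm (rm (y) E6) E1 - ((lm E5 (y) - lm E6 (lm E1 (y)) + rm (y) E5)) = 0" unfolding right_minus_eq by (rule RR_1_6)
  have g7: "rm (rm (rm (y) E4) E3) E1 - ((- lm E7 (rm (y) E4) - lm E3 (lm E1 (rm (y) E4)) - rm (rm (y) E4) E7)) = 0" unfolding right_minus_eq by (rule RR_1_3)
  have g8: "rm (rm (y) E7) E4 - ((lm E5 (y) - lm E7 (lm E4 (y)) + rm (y) E5)) = 0" unfolding right_minus_eq by (rule RR_4_7)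
  have "rm y E5 - ((-1/2) *\<^sub>R lm E1 (lm E6 (y)) + (1/2) *\<^sub>R lm E2 (lm E3 (y)) + (-1/2) *\<^sub>R lm E4 (lm E7 (y)) + (-1/2) *\<^sub>R lm E5 (y)) = (-1/2) *\<^sub>R (rm (rm (lm E3 (y)) E4) E1 - (rm ((lm E3 (rm (y) E4) - lm E6 (y) - lm E4 (lm E3 (y)))) E1)) + (-1/2) *\<^sub>R (rm (lm E3 (rm (y) E4)) E1 - ((lm E3 (rm (rm (y) E4) E1) + lm E7 (rm (y) E4) - lm E1 (lm E3 (rm (y) E4))))) + (-1/2) *\<^sub>R (lm E3 (rm (rm (y) E4) E1) - (lm E3 ((lm E2 (y) - lm E4 (lm E1 (y)) + rm (y) E2)))) + (1/2) *\<^sub>R (rm (rm (lm E3 (y)) E4) E1 - ((lm E2 (lm E3 (y)) - lm E4 (lm E1 (lm E3 (y))) + rm (lm E3 (y)) E2))) + (1/2) *\<^sub>R (rm (lm E3 (y)) E2 - ((lm E3 (rm (y) E2) + lm E5 (y) - lm E2 (lm E3 (y))))) + (1/2) *\<^sub>R (rm (rm (rm (y) E4) E3) E1 - (rm ((- lm E6 (y) - lm E4 (lm E3 (y)) - rm (y) E6)) E1)) + (-1/2) *\<^sub>R (rm (rm (y) E6) E1 - ((lm E5 (y) - lm E6 (lm E1 (y)) + rm (y) E5))) + (-1/2) *\<^sub>R (rm (rm (rm (y) E4) E3) E1 - ((- lm E7 (rm (y) E4) - lm E3 (lm E1 (rm (y) E4)) - rm (rm (y) E4) E7))) + (-1/2)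 *\<^sub>R (rm (rm (y) E7) E4 - ((lm E5 (y) - lm E7 (lm E4 (y)) + rm (y) E5)))"
    apply (rule sep_eq2) apply (simp only: lmrm_lin cliffL cliffR) by (simp add: algebra_simps)
  also have "\<dots> = 0" by (simp only: g0 g1 g2 g3 g4 g5 g6 g7 g8 scaleR_zero_right add_0_right)
  finally show ?thesis by (simp only: right_minus_eq)
qed

lemma Rf_6: "rm y E6 = (1/2) *\<^sub>R lm E1 (lm E5 (y)) + (-1/2) *\<^sub>R lm E2 (lm E7 (y)) + (1/2) *\<^sub>R lm E3 (lm E4 (y)) + (-1/2) *\<^sub>R lm E6 (y)"
proof -
  have g0: "rm (rm (lm E2 (y)) E3) E1 - rm ((lm E2 (rm (y) E3) - lm E5 (y) - lm E3 (lm E2 (y)))) E1 = 0" unfolding right_minus_eq by (rule arg_cong[where f="\<lambda>z. rm (z) E1"], rule MR_3_2)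
  have g1: "rm (lm E2 (rm (y) E3)) E1 - ((lm E2 (rm (rm (y) E3) E1) + lm E4 (rm (y) E3) - lm E1 (lm E2 (rm (y) E3)))) = 0" unfolding right_minus_eq by (rule MR_1_2)
  have g2: "lm E2 (rm (rm (y) E3) E1) - lm E2 ((- lm E7 (y) - lm E3 (lm E1 (y)) - rm (y) E7)) = 0" unfolding right_minus_eq by (rule arg_cong[where f="\<lambda>z. lm E2 (z)"], rule RR_1_3)
  have g3: "rm (rm (lm E2 (y)) E3) E1 - ((- lm E7 (lm E2 (y)) - lm E3 (lm E1 (lm E2 (y))) - rm (lm E2 (y)) E7)) = 0" unfolding right_minus_eq by (rule RR_1_3)
  have g4: "rm (lm E2 (y)) E7 - ((lm E2 (rm (y) E7) + lm E6 (y) - lm E7 (lm E2 (y)))) = 0" unfolding right_minus_eq by (rule MR_7_2)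
  have g5: "rm (rm (rm (y) E3) E2) E1 - rm ((- lm E5 (y) - lm E3 (lm E2 (y)) - rm (y) E5)) E1 = 0" unfolding right_minus_eq by (rule arg_cong[where f="\<lambda>z. rm (z) E1"], rule RR_2_3)
  have g6: "rm (rm (y) E5) E1 - ((- lm E6 (y) - lm E5 (lm E1 (y)) - rm (y) E6)) = 0" unfolding right_minus_eq by (rule RR_1_5)
  have g7: "rm (rm (rm (y) E3) E2) E1 - ((- lm E4 (rm (y) E3) - lm E2 (lm E1 (rm (y) E3)) - rm (rm (y) E3) E4)) = 0" unfolding right_minus_eq by (rule RR_1_2)
  have g8: "rm (rm (y) E4) E3 - ((- lm E6 (y) - lm E4 (lm E3 (y)) - rm (y) E6)) = 0" unfolding right_minus_eq by (rule RR_3_4)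
  have "rm y E6 - ((1/2) *\<^sub>R lm E1 (lm E5 (y)) + (-1/2) *\<^sub>R lm E2 (lm E7 (y)) + (1/2) *\<^sub>R lm E3 (lm E4 (y)) + (-1/2) *\<^sub>R lm E6 (y)) = (1/2) *\<^sub>R (rm (rm (lm E2 (y)) E3) E1 - (rm ((lm E2 (rm (y) E3) - lm E5 (y) - lm E3 (lm E2 (y)))) E1)) + (1/2) *\<^sub>R (rm (lm E2 (rm (y) E3)) E1 - ((lm E2 (rm (rm (y) E3) E1) + lm E4 (rm (y) E3) - lm E1 (lm E2 (rm (y) E3))))) + (1/2) *\<^sub>R (lm E2 (rm (rm (y) E3) E1) - (lm E2 ((- lm E7 (y) - lm E3 (lm E1 (y)) - rm (y) E7)))) + (-1/2) *\<^sub>R (rm (rm (lm E2 (y)) E3) E1 - ((- lm E7 (lm E2 (y)) - lm E3 (lm E1 (lm E2 (y))) - rm (lm E2 (y)) E7))) + (1/2) *\<^sub>R (rm (lm E2 (y)) E7 - ((lm E2 (rm (y) E7) + lm E6 (y) - lm E7 (lm E2 (y))))) + (-1/2) *\<^sub>R (rm (rm (rm (y) E3) E2) E1 - (rm ((- lm E5 (y) - lm E3 (lm E2 (y)) - rm (y) E5)) E1)) + (1/2) *\<^sub>R (rm (rm (y) E5) E1 - ((- lm E6 (y) - lm E5 (lm E1 (y)) - rm (y) E6))) + (1/2) *\<^sub>R (rm (rm (rm (y) E3) E2) E1 - ((- lm E4 (rm (y) E3) - lm E2 (lm E1 (rm (y) E3)) - rm (rm (y) E3) E4))) + (1/2) *\<^sub>R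 (rm (rm (y) E4) E3 - ((- lm E6 (y) - lm E4 (lm E3 (y)) - rm (y) E6)))"
    apply (rule sep_eq2) apply (simp only: lmrm_lin cliffL cliffR) by (simp add: algebra_simps)
  also have "\<dots> = 0" by (simp only: g0 g1 g2 g3 g4 g5 g6 g7 g8 scaleR_zero_right add_0_right)
  finally show ?thesis by (simp only: right_minus_eq)
qed

lemma Rf_7: "rm y E7 = (1/2) *\<^sub>R lm E1 (lm E3 (y)) + (1/2) *\<^sub>R lm E2 (lm E6 (y)) + (1/2) *\<^sub>R lm E4 (lm E5 (y)) + (-1/2) *\<^sub>R lm E7 (y)"
proof -
  have g0: "rm (rm (lm E2 (y)) E5) E1 - rm ((lm E2 (rm (y) E5) + lm E3 (y) - lm E5 (lm E2 (y)))) E1 = 0" unfolding right_minus_eq by (rule arg_cong[where f="\<lambda>z. rm (z) E1"], rule MR_5_2)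
  have g1: "rm (lm E2 (rm (y) E5)) E1 - ((lm E2 (rm (rm (y) E5) E1) + lm E4 (rm (y) E5) - lm E1 (lm E2 (rm (y) E5)))) = 0" unfolding right_minus_eq by (rule MR_1_2)
  have g2: "lm E2 (rm (rm (y) E5) E1) - lm E2 ((- lm E6 (y) - lm E5 (lm E1 (y)) - rm (y) E6)) = 0" unfolding right_minus_eq by (rule arg_cong[where f="\<lambda>z. lm E2 (z)"], rule RR_1_5)
  have g3: "rm (rm (lm E2 (y)) E5) E1 - ((- lm E6 (lm E2 (y)) - lm E5 (lm E1 (lm E2 (y))) - rm (lm E2 (y)) E6)) = 0" unfolding right_minus_eq by (rule RR_1_5)
  have g4: "rm (lm E2 (y)) E6 - ((lm E2 (rm (y) E6) - lm E7 (y) - lm E6 (lm E2 (y)))) = 0" unfolding right_minus_eq by (rule MR_6_2)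
  have g5: "rm (rm (rm (y) E5) E2) E1 - rm ((lm E3 (y) - lm E5 (lm E2 (y)) + rm (y) E3)) E1 = 0" unfolding right_minus_eq by (rule arg_cong[where f="\<lambda>z. rm (z) E1"], rule RR_2_5)
  have g6: "rm (rm (y) E3) E1 - ((- lm E7 (y) - lm E3 (lm E1 (y)) - rm (y) E7)) = 0" unfolding right_minus_eq by (rule RR_1_3)
  have g7: "rm (rm (rm (y) E5) E2) E1 - ((- lm E4 (rm (y) E5) - lm E2 (lm E1 (rm (y) E5)) - rm (rm (y) E5) E4)) = 0" unfolding right_minus_eq by (rule RR_1_2)
  have g8: "rm (rm (y) E5) E4 - ((- lm E7 (y) - lm E5 (lm E4 (y)) - rm (y) E7)) = 0" unfolding right_minus_eq by (rule RR_4_5)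
  have "rm y E7 - ((1/2) *\<^sub>R lm E1 (lm E3 (y)) + (1/2) *\<^sub>R lm E2 (lm E6 (y)) + (1/2) *\<^sub>R lm E4 (lm E5 (y)) + (-1/2) *\<^sub>R lm E7 (y)) = (-1/2) *\<^sub>R (rm (rm (lm E2 (y)) E5) E1 - (rm ((lm E2 (rm (y) E5) + lm E3 (y) - lm E5 (lm E2 (y)))) E1)) + (-1/2) *\<^sub>R (rm (lm E2 (rm (y) E5)) E1 - ((lm E2 (rm (rm (y) E5) E1) + lm E4 (rm (y) E5) - lm E1 (lm E2 (rm (y) E5))))) + (-1/2) *\<^sub>R (lm E2 (rm (rm (y) E5) E1) - (lm E2 ((- lm E6 (y) - lm E5 (lm E1 (y)) - rm (y) E6)))) + (1/2) *\<^sub>R (rm (rm (lm E2 (y)) E5) E1 - ((- lm E6 (lm E2 (y)) - lm E5 (lm E1 (lm E2 (y))) - rm (lm E2 (y)) E6))) + (-1/2) *\<^sub>R (rm (lm E2 (y)) E6 - ((lm E2 (rm (y) E6) - lm E7 (y) - lm E6 (lm E2 (y))))) + (1/2) *\<^sub>R (rm (rm (rm (y) E5) E2) E1 - (rm ((lm E3 (y) - lm E5 (lm E2 (y)) + rm (y) E3)) E1)) + (1/2) *\<^sub>R (rm (rm (y) E3) E1 - ((- lm E7 (y) - lm E3 (lm E1 (y)) - rm (y) E7))) + (-1/2) *\<^sub>R (rm (rm (rm (y) E5) E2) E1 - ((- lm E4 (rm (y) E5) - lm E2 (lm E1 (rm (y) E5)) - rm (rm (y) E5) E4))) + (1/2)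 *\<^sub>R (rm (rm (y) E5) E4 - ((- lm E7 (y) - lm E5 (lm E4 (y)) - rm (y) E7)))"
    apply (rule sep_eq2) apply (simp only: lmrm_lin cliffL cliffR) by (simp add: algebra_simps)
  also have "\<dots> = 0" by (simp only: g0 g1 g2 g3 g4 g5 g6 g7 g8 scaleR_zero_right add_0_right)
  finally show ?thesis by (simp only: right_minus_eq)
qed

lemmas Rf = Rf_1 Rf_2 Rf_3 Rf_4 Rf_5 Rf_6 Rf_7

lemma omega: "lm E1 (lm E2 (lm E3 (lm E4 (lm E5 (lm E6 (lm E7 y)))))) = - y"
proof -
  have g0: "lm E1 (lm E5 (rm (rm (lm E3 (y)) E2) E1)) - lm E1 (lm E5 ((- lm E4 (lm E3 (y)) - lm E2 (lm E1 (lm E3 (y))) - rm (lm E3 (y)) E4))) = 0" unfolding right_minus_eq by (rule arg_cong[where f="\<lambda>z. lm E1 (lm E5 (z))"], rule RR_1_2)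
  have g1: "lm E1 (lm E3 (lm E5 (rm (rm (y) E2) E1))) - lm E1 (lm E3 (lm E5 ((- lm E4 (y) - lm E2 (lm E1 (y)) - rm (y) E4)))) = 0" unfolding right_minus_eq by (rule arg_cong[where f="\<lambda>z. lm E1 (lm E3 (lm E5 (z)))"], rule RR_1_2)
  have g2: "lm E7 (rm (rm (y) E3) E1) - lm E7 ((- lm E7 (y) - lm E3 (lm E1 (y)) - rm (y) E7)) = 0" unfolding right_minus_eq by (rule arg_cong[where f="\<lambda>z. lm E7 (z)"], rule RR_1_3)
  have g3: "lm E6 (rm (rm (lm E3 (y)) E2) E1) - lm E6 ((- lm E4 (lm E3 (y)) - lm E2 (lm E1 (lm E3 (y))) - rm (lm E3 (y)) E4)) = 0" unfolding right_minus_eq by (rule arg_cong[where f="\<lambda>z. lm E6 (z)"], rule RR_1_2)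
  have g4: "lm E3 (lm E5 (rm (rm (lm E1 (y)) E2) E1)) - lm E3 (lm E5 ((- lm E4 (lm E1 (y)) - lm E2 (lm E1 (lm E1 (y))) - rm (lm E1 (y)) E4))) = 0" unfolding right_minus_eq by (rule arg_cong[where f="\<lambda>z. lm E3 (lm E5 (z))"], rule RR_1_2)
  have g5: "lm E5 (rm (rm (lm E3 (y)) E4) E1) - lm E5 ((lm E2 (lm E3 (y)) - lm E4 (lm E1 (lm E3 (y))) + rm (lm E3 (y)) E2)) = 0" unfolding right_minus_eq by (rule arg_cong[where f="\<lambda>z. lm E5 (z)"], rule RR_1_4)
  have g6: "lm E4 (rm (rm (y) E2) E1) - lm E4 ((- lm E4 (y) - lm E2 (lm E1 (y)) - rm (y) E4)) = 0" unfolding right_minus_eq by (rule arg_cong[where f="\<lambda>z. lm E4 (z)"], rule RR_1_2)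
  have "lm E1 (lm E2 (lm E3 (lm E4 (lm E5 (lm E6 (lm E7 y)))))) - (- y) = (3/2) *\<^sub>R (lm E1 (lm E5 (rm (rm (lm E3 (y)) E2) E1)) - (lm E1 (lm E5 ((- lm E4 (lm E3 (y)) - lm E2 (lm E1 (lm E3 (y))) - rm (lm E3 (y)) E4))))) + (-3/2) *\<^sub>R (lm E1 (lm E3 (lm E5 (rm (rm (y) E2) E1))) - (lm E1 (lm E3 (lm E5 ((- lm E4 (y) - lm E2 (lm E1 (y)) - rm (y) E4)))))) + (1) *\<^sub>R (lm E7 (rm (rm (y) E3) E1) - (lm E7 ((- lm E7 (y) - lm E3 (lm E1 (y)) - rm (y) E7)))) + (1/2) *\<^sub>R (lm E6 (rm (rm (lm E3 (y)) E2) E1) - (lm E6 ((- lm E4 (lm E3 (y)) - lm E2 (lm E1 (lm E3 (y))) - rm (lm E3 (y)) E4)))) + (-1) *\<^sub>R (lm E3 (lm E5 (rm (rm (lm E1 (y)) E2) E1)) - (lm E3 (lm E5 ((- lm E4 (lm E1 (y)) - lm E2 (lm E1 (lm E1 (y))) - rm (lm E1 (y)) E4))))) + (-1) *\<^sub>R (lm E5 (rm (rm (lm E3 (y)) E4) E1) - (lm E5 ((lm E2 (lm E3 (y)) - lm E4 (lm E1 (lm E3 (y))) + rm (lm E3 (y)) E2)))) + (-1/2) *\<^sub>R (lm E4 (rm (rm (y) E2) E1) - (lm E4 ((- lm E4 (y) - lm E2 (lm E1 (y)) - rm (y) E4))))"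
    apply (rule sep_eq2) apply (simp only: lmrm_lin cliffL Rf) by (simp add: algebra_simps)
  also have "\<dots> = 0" by (simp only: g0 g1 g2 g3 g4 g5 g6 scaleR_zero_right add_0_right)
  finally show ?thesis by (simp only: right_minus_eq)
qed

lemma om4_1234: "lm E1 (lm E2 (lm E3 (lm E4 (z)))) = - lm E5 (lm E6 (lm E7 (z)))"
proof -
  have h1: "lm E1 (lm E2 (lm E3 (lm E4 (lm E1 (lm E2 (lm E3 (lm E4 (lm E5 (lm E6 (lm E7 (z))))))))))) = lm E5 (lm E6 (lm E7 (z)))" by (simp only: cliffL lm_minus minus_minus)
  have h2: "lm E1 (lm E2 (lm E3 (lm E4 (lm E1 (lm E2 (lm E3 (lm E4 (lm E5 (lm E6 (lm E7 (z))))))))))) = - lm E1 (lm E2 (lm E3 (lm E4 (z))))" by (simp only: omega lm_minus)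
  show ?thesis by (metis h1 h2 minus_minus)
qed

lemma om4_1235: "lm E1 (lm E2 (lm E3 (lm E5 (z)))) = lm E4 (lm E6 (lm E7 (z)))"
proof -
  have h1: "lm E1 (lm E2 (lm E3 (lm E5 (lm E1 (lm E2 (lm E3 (lm E4 (lm E5 (lm E6 (lm E7 (z))))))))))) = - lm E4 (lm E6 (lm E7 (z)))" by (simp only: cliffL lm_minus minus_minus)
  have h2: "lm E1 (lm E2 (lm E3 (lm E5 (lm E1 (lm E2 (lm E3 (lm E4 (lm E5 (lm E6 (lm E7 (z))))))))))) = - lm E1 (lm E2 (lm E3 (lm E5 (z))))" by (simp only: omega lm_minus)
  show ?thesis by (metis h1 h2 minus_minus)
qed

lemma om4_1236: "lm E1 (lm E2 (lm E3 (lm E6 (z)))) = - lm E4 (lm E5 (lm E7 (z)))"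
proof -
  have h1: "lm E1 (lm E2 (lm E3 (lm E6 (lm E1 (lm E2 (lm E3 (lm E4 (lm E5 (lm E6 (lm E7 (z))))))))))) = lm E4 (lm E5 (lm E7 (z)))" by (simp only: cliffL lm_minus minus_minus)
  have h2: "lm E1 (lm E2 (lm E3 (lm E6 (lm E1 (lm E2 (lm E3 (lm E4 (lm E5 (lm E6 (lm E7 (z))))))))))) = - lm E1 (lm E2 (lm E3 (lm E6 (z))))" by (simp only: omega lm_minus)
  show ?thesis by (metis h1 h2 minus_minus)
qed

lemma om4_1237: "lm E1 (lm E2 (lm E3 (lm E7 (z)))) = lm E4 (lm E5 (lm E6 (z)))"
proof -
  have h1: "lm E1 (lm E2 (lm E3 (lm E7 (lm E1 (lm E2 (lm E3 (lm E4 (lm E5 (lm E6 (lm E7 (z))))))))))) = - lm E4 (lm E5 (lm E6 (z)))" by (simp only: cliffL lm_minus minus_minus)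
  have h2: "lm E1 (lm E2 (lm E3 (lm E7 (lm E1 (lm E2 (lm E3 (lm E4 (lm E5 (lm E6 (lm E7 (z))))))))))) = - lm E1 (lm E2 (lm E3 (lm E7 (z))))" by (simp only: omega lm_minus)
  show ?thesis by (metis h1 h2 minus_minus)
qed

lemma om4_1245: "lm E1 (lm E2 (lm E4 (lm E5 (z)))) = - lm E3 (lm E6 (lm E7 (z)))"
proof -
  have h1: "lm E1 (lm E2 (lm E4 (lm E5 (lm E1 (lm E2 (lm E3 (lm E4 (lm E5 (lm E6 (lm E7 (z))))))))))) = lm E3 (lm E6 (lm E7 (z)))" by (simp only: cliffL lm_minus minus_minus)
  have h2: "lm E1 (lm E2 (lm E4 (lm E5 (lm E1 (lm E2 (lm E3 (lm E4 (lm E5 (lm E6 (lm E7 (z))))))))))) = - lm E1 (lm E2 (lm E4 (lm E5 (z))))" by (simp only: omega lm_minus)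
  show ?thesis by (metis h1 h2 minus_minus)
qed

lemma om4_1246: "lm E1 (lm E2 (lm E4 (lm E6 (z)))) = lm E3 (lm E5 (lm E7 (z)))"
proof -
  have h1: "lm E1 (lm E2 (lm E4 (lm E6 (lm E1 (lm E2 (lm E3 (lm E4 (lm E5 (lm E6 (lm E7 (z))))))))))) = - lm E3 (lm E5 (lm E7 (z)))" by (simp only: cliffL lm_minus minus_minus)
  have h2: "lm E1 (lm E2 (lm E4 (lm E6 (lm E1 (lm E2 (lm E3 (lm E4 (lm E5 (lm E6 (lm E7 (z))))))))))) = - lm E1 (lm E2 (lm E4 (lm E6 (z))))" by (simp only: omega lm_minus)
  show ?thesis by (metis h1 h2 minus_minus)
qed

lemma om4_1247: "lm E1 (lm E2 (lm E4 (lm E7 (z)))) = - lm E3 (lm E5 (lm E6 (z)))"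
proof -
  have h1: "lm E1 (lm E2 (lm E4 (lm E7 (lm E1 (lm E2 (lm E3 (lm E4 (lm E5 (lm E6 (lm E7 (z))))))))))) = lm E3 (lm E5 (lm E6 (z)))" by (simp only: cliffL lm_minus minus_minus)
  have h2: "lm E1 (lm E2 (lm E4 (lm E7 (lm E1 (lm E2 (lm E3 (lm E4 (lm E5 (lm E6 (lm E7 (z))))))))))) = - lm E1 (lm E2 (lm E4 (lm E7 (z))))" by (simp only: omega lm_minus)
  show ?thesis by (metis h1 h2 minus_minus)
qed

lemma om4_1256: "lm E1 (lm E2 (lm E5 (lm E6 (z)))) = - lm E3 (lm E4 (lm E7 (z)))"
proof -
  have h1: "lm E1 (lm E2 (lm E5 (lm E6 (lm E1 (lm E2 (lm E3 (lm E4 (lm E5 (lm E6 (lm E7 (z))))))))))) = lm E3 (lm E4 (lm E7 (z)))" by (simp only: cliffL lm_minus minus_minus)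
  have h2: "lm E1 (lm E2 (lm E5 (lm E6 (lm E1 (lm E2 (lm E3 (lm E4 (lm E5 (lm E6 (lm E7 (z))))))))))) = - lm E1 (lm E2 (lm E5 (lm E6 (z))))" by (simp only: omega lm_minus)
  show ?thesis by (metis h1 h2 minus_minus)
qed

lemma om4_1257: "lm E1 (lm E2 (lm E5 (lm E7 (z)))) = lm E3 (lm E4 (lm E6 (z)))"
proof -
  have h1: "lm E1 (lm E2 (lm E5 (lm E7 (lm E1 (lm E2 (lm E3 (lm E4 (lm E5 (lm E6 (lm E7 (z))))))))))) = - lm E3 (lm E4 (lm E6 (z)))" by (simp only: cliffL lm_minus minus_minus)
  have h2: "lm E1 (lm E2 (lm E5 (lm E7 (lm E1 (lm E2 (lm E3 (lm E4 (lm E5 (lm E6 (lm E7 (z))))))))))) = - lm E1 (lm E2 (lm E5 (lm E7 (z))))" by (simp only: omega lm_minus)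
  show ?thesis by (metis h1 h2 minus_minus)
qed

lemma om4_1267: "lm E1 (lm E2 (lm E6 (lm E7 (z)))) = - lm E3 (lm E4 (lm E5 (z)))"
proof -
  have h1: "lm E1 (lm E2 (lm E6 (lm E7 (lm E1 (lm E2 (lm E3 (lm E4 (lm E5 (lm E6 (lm E7 (z))))))))))) = lm E3 (lm E4 (lm E5 (z)))" by (simp only: cliffL lm_minus minus_minus)
  have h2: "lm E1 (lm E2 (lm E6 (lm E7 (lm E1 (lm E2 (lm E3 (lm E4 (lm E5 (lm E6 (lm E7 (z))))))))))) = - lm E1 (lm E2 (lm E6 (lm E7 (z))))" by (simp only: omega lm_minus)
  show ?thesis by (metis h1 h2 minus_minus)
qed

lemma om4_1345: "lm E1 (lm E3 (lm E4 (lm E5 (z)))) = lm E2 (lm E6 (lm E7 (z)))"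
proof -
  have h1: "lm E1 (lm E3 (lm E4 (lm E5 (lm E1 (lm E2 (lm E3 (lm E4 (lm E5 (lm E6 (lm E7 (z))))))))))) = - lm E2 (lm E6 (lm E7 (z)))" by (simp only: cliffL lm_minus minus_minus)
  have h2: "lm E1 (lm E3 (lm E4 (lm E5 (lm E1 (lm E2 (lm E3 (lm E4 (lm E5 (lm E6 (lm E7 (z))))))))))) = - lm E1 (lm E3 (lm E4 (lm E5 (z))))" by (simp only: omega lm_minus)
  show ?thesis by (metis h1 h2 minus_minus)
qed

lemma om4_1346: "lm E1 (lm E3 (lm E4 (lm E6 (z)))) = - lm E2 (lm E5 (lm E7 (z)))"
proof -
  have h1: "lm E1 (lm E3 (lm E4 (lm E6 (lm E1 (lm E2 (lm E3 (lm E4 (lm E5 (lm E6 (lm E7 (z))))))))))) = lm E2 (lm E5 (lm E7 (z)))" by (simp only: cliffL lm_minus minus_minus)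
  have h2: "lm E1 (lm E3 (lm E4 (lm E6 (lm E1 (lm E2 (lm E3 (lm E4 (lm E5 (lm E6 (lm E7 (z))))))))))) = - lm E1 (lm E3 (lm E4 (lm E6 (z))))" by (simp only: omega lm_minus)
  show ?thesis by (metis h1 h2 minus_minus)
qed

lemma om4_1347: "lm E1 (lm E3 (lm E4 (lm E7 (z)))) = lm E2 (lm E5 (lm E6 (z)))"
proof -
  have h1: "lm E1 (lm E3 (lm E4 (lm E7 (lm E1 (lm E2 (lm E3 (lm E4 (lm E5 (lm E6 (lm E7 (z))))))))))) = - lm E2 (lm E5 (lm E6 (z)))" by (simp only: cliffL lm_minus minus_minus)
  have h2: "lm E1 (lm E3 (lm E4 (lm E7 (lm E1 (lm E2 (lm E3 (lm E4 (lm E5 (lm E6 (lm E7 (z))))))))))) = - lm E1 (lm E3 (lm E4 (lm E7 (z))))" by (simp only: omega lm_minus)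
  show ?thesis by (metis h1 h2 minus_minus)
qed

lemma om4_1356: "lm E1 (lm E3 (lm E5 (lm E6 (z)))) = lm E2 (lm E4 (lm E7 (z)))"
proof -
  have h1: "lm E1 (lm E3 (lm E5 (lm E6 (lm E1 (lm E2 (lm E3 (lm E4 (lm E5 (lm E6 (lm E7 (z))))))))))) = - lm E2 (lm E4 (lm E7 (z)))" by (simp only: cliffL lm_minus minus_minus)
  have h2: "lm E1 (lm E3 (lm E5 (lm E6 (lm E1 (lm E2 (lm E3 (lm E4 (lm E5 (lm E6 (lm E7 (z))))))))))) = - lm E1 (lm E3 (lm E5 (lm E6 (z))))" by (simp only: omega lm_minus)
  show ?thesis by (metis h1 h2 minus_minus)
qed

lemma om4_1357: "lm E1 (lm E3 (lm E5 (lm E7 (z)))) = - lm E2 (lm E4 (lm E6 (z)))"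
proof -
  have h1: "lm E1 (lm E3 (lm E5 (lm E7 (lm E1 (lm E2 (lm E3 (lm E4 (lm E5 (lm E6 (lm E7 (z))))))))))) = lm E2 (lm E4 (lm E6 (z)))" by (simp only: cliffL lm_minus minus_minus)
  have h2: "lm E1 (lm E3 (lm E5 (lm E7 (lm E1 (lm E2 (lm E3 (lm E4 (lm E5 (lm E6 (lm E7 (z))))))))))) = - lm E1 (lm E3 (lm E5 (lm E7 (z))))" by (simp only: omega lm_minus)
  show ?thesis by (metis h1 h2 minus_minus)
qed

lemma om4_1367: "lm E1 (lm E3 (lm E6 (lm E7 (z)))) = lm E2 (lm E4 (lm E5 (z)))"
proof -
  have h1: "lm E1 (lm E3 (lm E6 (lm E7 (lm E1 (lm E2 (lm E3 (lm E4 (lm E5 (lm E6 (lm E7 (z))))))))))) = - lm E2 (lm E4 (lm E5 (z)))" by (simp only: cliffL lm_minus minus_minus)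
  have h2: "lm E1 (lm E3 (lm E6 (lm E7 (lm E1 (lm E2 (lm E3 (lm E4 (lm E5 (lm E6 (lm E7 (z))))))))))) = - lm E1 (lm E3 (lm E6 (lm E7 (z))))" by (simp only: omega lm_minus)
  show ?thesis by (metis h1 h2 minus_minus)
qed

lemma om4_1456: "lm E1 (lm E4 (lm E5 (lm E6 (z)))) = - lm E2 (lm E3 (lm E7 (z)))"
proof -
  have h1: "lm E1 (lm E4 (lm E5 (lm E6 (lm E1 (lm E2 (lm E3 (lm E4 (lm E5 (lm E6 (lm E7 (z))))))))))) = lm E2 (lm E3 (lm E7 (z)))" by (simp only: cliffL lm_minus minus_minus)
  have h2: "lm E1 (lm E4 (lm E5 (lm E6 (lm E1 (lm E2 (lm E3 (lm E4 (lm E5 (lm E6 (lm E7 (z))))))))))) = - lm E1 (lm E4 (lm E5 (lm E6 (z))))" by (simp only: omega lm_minus)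
  show ?thesis by (metis h1 h2 minus_minus)
qed

lemma om4_1457: "lm E1 (lm E4 (lm E5 (lm E7 (z)))) = lm E2 (lm E3 (lm E6 (z)))"
proof -
  have h1: "lm E1 (lm E4 (lm E5 (lm E7 (lm E1 (lm E2 (lm E3 (lm E4 (lm E5 (lm E6 (lm E7 (z))))))))))) = - lm E2 (lm E3 (lm E6 (z)))" by (simp only: cliffL lm_minus minus_minus)
  have h2: "lm E1 (lm E4 (lm E5 (lm E7 (lm E1 (lm E2 (lm E3 (lm E4 (lm E5 (lm E6 (lm E7 (z))))))))))) = - lm E1 (lm E4 (lm E5 (lm E7 (z))))" by (simp only: omega lm_minus)
  show ?thesis by (metis h1 h2 minus_minus)
qed

lemma om4_1467: "lm E1 (lm E4 (lm E6 (lm E7 (z)))) = - lm E2 (lm E3 (lm E5 (z)))"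
proof -
  have h1: "lm E1 (lm E4 (lm E6 (lm E7 (lm E1 (lm E2 (lm E3 (lm E4 (lm E5 (lm E6 (lm E7 (z))))))))))) = lm E2 (lm E3 (lm E5 (z)))" by (simp only: cliffL lm_minus minus_minus)
  have h2: "lm E1 (lm E4 (lm E6 (lm E7 (lm E1 (lm E2 (lm E3 (lm E4 (lm E5 (lm E6 (lm E7 (z))))))))))) = - lm E1 (lm E4 (lm E6 (lm E7 (z))))" by (simp only: omega lm_minus)
  show ?thesis by (metis h1 h2 minus_minus)
qed

lemma om4_1567: "lm E1 (lm E5 (lm E6 (lm E7 (z)))) = lm E2 (lm E3 (lm E4 (z)))"
proof -
  have h1: "lm E1 (lm E5 (lm E6 (lm E7 (lm E1 (lm E2 (lm E3 (lm E4 (lm E5 (lm E6 (lm E7 (z))))))))))) = - lm E2 (lm E3 (lm E4 (z)))" by (simp only: cliffL lm_minus minus_minus)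
  have h2: "lm E1 (lm E5 (lm E6 (lm E7 (lm E1 (lm E2 (lm E3 (lm E4 (lm E5 (lm E6 (lm E7 (z))))))))))) = - lm E1 (lm E5 (lm E6 (lm E7 (z))))" by (simp only: omega lm_minus)
  show ?thesis by (metis h1 h2 minus_minus)
qed

lemma om4_2345: "lm E2 (lm E3 (lm E4 (lm E5 (z)))) = - lm E1 (lm E6 (lm E7 (z)))"
proof -
  have h1: "lm E2 (lm E3 (lm E4 (lm E5 (lm E1 (lm E2 (lm E3 (lm E4 (lm E5 (lm E6 (lm E7 (z))))))))))) = lm E1 (lm E6 (lm E7 (z)))" by (simp only: cliffL lm_minus minus_minus)
  have h2: "lm E2 (lm E3 (lm E4 (lm E5 (lm E1 (lm E2 (lm E3 (lm E4 (lm E5 (lm E6 (lm E7 (z))))))))))) = - lm E2 (lm E3 (lm E4 (lm E5 (z))))" by (simp only: omega lm_minus)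
  show ?thesis by (metis h1 h2 minus_minus)
qed

lemma om4_2346: "lm E2 (lm E3 (lm E4 (lm E6 (z)))) = lm E1 (lm E5 (lm E7 (z)))"
proof -
  have h1: "lm E2 (lm E3 (lm E4 (lm E6 (lm E1 (lm E2 (lm E3 (lm E4 (lm E5 (lm E6 (lm E7 (z))))))))))) = - lm E1 (lm E5 (lm E7 (z)))" by (simp only: cliffL lm_minus minus_minus)
  have h2: "lm E2 (lm E3 (lm E4 (lm E6 (lm E1 (lm E2 (lm E3 (lm E4 (lm E5 (lm E6 (lm E7 (z))))))))))) = - lm E2 (lm E3 (lm E4 (lm E6 (z))))" by (simp only: omega lm_minus)
  show ?thesis by (metis h1 h2 minus_minus)
qed

lemma om4_2347: "lm E2 (lm E3 (lm E4 (lm E7 (z)))) = - lm E1 (lm E5 (lm E6 (z)))"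
proof -
  have h1: "lm E2 (lm E3 (lm E4 (lm E7 (lm E1 (lm E2 (lm E3 (lm E4 (lm E5 (lm E6 (lm E7 (z))))))))))) = lm E1 (lm E5 (lm E6 (z)))" by (simp only: cliffL lm_minus minus_minus)
  have h2: "lm E2 (lm E3 (lm E4 (lm E7 (lm E1 (lm E2 (lm E3 (lm E4 (lm E5 (lm E6 (lm E7 (z))))))))))) = - lm E2 (lm E3 (lm E4 (lm E7 (z))))" by (simp only: omega lm_minus)
  show ?thesis by (metis h1 h2 minus_minus)
qed

lemma om4_2356: "lm E2 (lm E3 (lm E5 (lm E6 (z)))) = - lm E1 (lm E4 (lm E7 (z)))"
proof -
  have h1: "lm E2 (lm E3 (lm E5 (lm E6 (lm E1 (lm E2 (lm E3 (lm E4 (lm E5 (lm E6 (lm E7 (z))))))))))) = lm E1 (lm E4 (lm E7 (z)))" by (simp only: cliffL lm_minus minus_minus)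
  have h2: "lm E2 (lm E3 (lm E5 (lm E6 (lm E1 (lm E2 (lm E3 (lm E4 (lm E5 (lm E6 (lm E7 (z))))))))))) = - lm E2 (lm E3 (lm E5 (lm E6 (z))))" by (simp only: omega lm_minus)
  show ?thesis by (metis h1 h2 minus_minus)
qed

lemma om4_2357: "lm E2 (lm E3 (lm E5 (lm E7 (z)))) = lm E1 (lm E4 (lm E6 (z)))"
proof -
  have h1: "lm E2 (lm E3 (lm E5 (lm E7 (lm E1 (lm E2 (lm E3 (lm E4 (lm E5 (lm E6 (lm E7 (z))))))))))) = - lm E1 (lm E4 (lm E6 (z)))" by (simp only: cliffL lm_minus minus_minus)
  have h2: "lm E2 (lm E3 (lm E5 (lm E7 (lm E1 (lm E2 (lm E3 (lm E4 (lm E5 (lm E6 (lm E7 (z))))))))))) = - lm E2 (lm E3 (lm E5 (lm E7 (z))))" by (simp only: omega lm_minus)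
  show ?thesis by (metis h1 h2 minus_minus)
qed

lemma om4_2367: "lm E2 (lm E3 (lm E6 (lm E7 (z)))) = - lm E1 (lm E4 (lm E5 (z)))"
proof -
  have h1: "lm E2 (lm E3 (lm E6 (lm E7 (lm E1 (lm E2 (lm E3 (lm E4 (lm E5 (lm E6 (lm E7 (z))))))))))) = lm E1 (lm E4 (lm E5 (z)))" by (simp only: cliffL lm_minus minus_minus)
  have h2: "lm E2 (lm E3 (lm E6 (lm E7 (lm E1 (lm E2 (lm E3 (lm E4 (lm E5 (lm E6 (lm E7 (z))))))))))) = - lm E2 (lm E3 (lm E6 (lm E7 (z))))" by (simp only: omega lm_minus)
  show ?thesis by (metis h1 h2 minus_minus)
qed

lemma om4_2456: "lm E2 (lm E4 (lm E5 (lm E6 (z)))) = lm E1 (lm E3 (lm E7 (z)))"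
proof -
  have h1: "lm E2 (lm E4 (lm E5 (lm E6 (lm E1 (lm E2 (lm E3 (lm E4 (lm E5 (lm E6 (lm E7 (z))))))))))) = - lm E1 (lm E3 (lm E7 (z)))" by (simp only: cliffL lm_minus minus_minus)
  have h2: "lm E2 (lm E4 (lm E5 (lm E6 (lm E1 (lm E2 (lm E3 (lm E4 (lm E5 (lm E6 (lm E7 (z))))))))))) = - lm E2 (lm E4 (lm E5 (lm E6 (z))))" by (simp only: omega lm_minus)
  show ?thesis by (metis h1 h2 minus_minus)
qed

lemma om4_2457: "lm E2 (lm E4 (lm E5 (lm E7 (z)))) = - lm E1 (lm E3 (lm E6 (z)))"
proof -
  have h1: "lm E2 (lm E4 (lm E5 (lm E7 (lm E1 (lm E2 (lm E3 (lm E4 (lm E5 (lm E6 (lm E7 (z))))))))))) = lm E1 (lm E3 (lm E6 (z)))" by (simp only: cliffL lm_minus minus_minus)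
  have h2: "lm E2 (lm E4 (lm E5 (lm E7 (lm E1 (lm E2 (lm E3 (lm E4 (lm E5 (lm E6 (lm E7 (z))))))))))) = - lm E2 (lm E4 (lm E5 (lm E7 (z))))" by (simp only: omega lm_minus)
  show ?thesis by (metis h1 h2 minus_minus)
qed

lemma om4_2467: "lm E2 (lm E4 (lm E6 (lm E7 (z)))) = lm E1 (lm E3 (lm E5 (z)))"
proof -
  have h1: "lm E2 (lm E4 (lm E6 (lm E7 (lm E1 (lm E2 (lm E3 (lm E4 (lm E5 (lm E6 (lm E7 (z))))))))))) = - lm E1 (lm E3 (lm E5 (z)))" by (simp only: cliffL lm_minus minus_minus)
  have h2: "lm E2 (lm E4 (lm E6 (lm E7 (lm E1 (lm E2 (lm E3 (lm E4 (lm E5 (lm E6 (lm E7 (z))))))))))) = - lm E2 (lm E4 (lm E6 (lm E7 (z))))" by (simp only: omega lm_minus)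
  show ?thesis by (metis h1 h2 minus_minus)
qed

lemma om4_2567: "lm E2 (lm E5 (lm E6 (lm E7 (z)))) = - lm E1 (lm E3 (lm E4 (z)))"
proof -
  have h1: "lm E2 (lm E5 (lm E6 (lm E7 (lm E1 (lm E2 (lm E3 (lm E4 (lm E5 (lm E6 (lm E7 (z))))))))))) = lm E1 (lm E3 (lm E4 (z)))" by (simp only: cliffL lm_minus minus_minus)
  have h2: "lm E2 (lm E5 (lm E6 (lm E7 (lm E1 (lm E2 (lm E3 (lm E4 (lm E5 (lm E6 (lm E7 (z))))))))))) = - lm E2 (lm E5 (lm E6 (lm E7 (z))))" by (simp only: omega lm_minus)
  show ?thesis by (metis h1 h2 minus_minus)
qed

lemma om4_3456: "lm E3 (lm E4 (lm E5 (lm E6 (z)))) = - lm E1 (lm E2 (lm E7 (z)))"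
proof -
  have h1: "lm E3 (lm E4 (lm E5 (lm E6 (lm E1 (lm E2 (lm E3 (lm E4 (lm E5 (lm E6 (lm E7 (z))))))))))) = lm E1 (lm E2 (lm E7 (z)))" by (simp only: cliffL lm_minus minus_minus)
  have h2: "lm E3 (lm E4 (lm E5 (lm E6 (lm E1 (lm E2 (lm E3 (lm E4 (lm E5 (lm E6 (lm E7 (z))))))))))) = - lm E3 (lm E4 (lm E5 (lm E6 (z))))" by (simp only: omega lm_minus)
  show ?thesis by (metis h1 h2 minus_minus)
qed

lemma om4_3457: "lm E3 (lm E4 (lm E5 (lm E7 (z)))) = lm E1 (lm E2 (lm E6 (z)))"
proof -
  have h1: "lm E3 (lm E4 (lm E5 (lm E7 (lm E1 (lm E2 (lm E3 (lm E4 (lm E5 (lm E6 (lm E7 (z))))))))))) = - lm E1 (lm E2 (lm E6 (z)))" by (simp only: cliffL lm_minus minus_minus)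
  have h2: "lm E3 (lm E4 (lm E5 (lm E7 (lm E1 (lm E2 (lm E3 (lm E4 (lm E5 (lm E6 (lm E7 (z))))))))))) = - lm E3 (lm E4 (lm E5 (lm E7 (z))))" by (simp only: omega lm_minus)
  show ?thesis by (metis h1 h2 minus_minus)
qed

lemma om4_3467: "lm E3 (lm E4 (lm E6 (lm E7 (z)))) = - lm E1 (lm E2 (lm E5 (z)))"
proof -
  have h1: "lm E3 (lm E4 (lm E6 (lm E7 (lm E1 (lm E2 (lm E3 (lm E4 (lm E5 (lm E6 (lm E7 (z))))))))))) = lm E1 (lm E2 (lm E5 (z)))" by (simp only: cliffL lm_minus minus_minus)
  have h2: "lm E3 (lm E4 (lm E6 (lm E7 (lm E1 (lm E2 (lm E3 (lm E4 (lm E5 (lm E6 (lm E7 (z))))))))))) = - lm E3 (lm E4 (lm E6 (lm E7 (z))))" by (simp only: omega lm_minus)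
  show ?thesis by (metis h1 h2 minus_minus)
qed

lemma om4_3567: "lm E3 (lm E5 (lm E6 (lm E7 (z)))) = lm E1 (lm E2 (lm E4 (z)))"
proof -
  have h1: "lm E3 (lm E5 (lm E6 (lm E7 (lm E1 (lm E2 (lm E3 (lm E4 (lm E5 (lm E6 (lm E7 (z))))))))))) = - lm E1 (lm E2 (lm E4 (z)))" by (simp only: cliffL lm_minus minus_minus)
  have h2: "lm E3 (lm E5 (lm E6 (lm E7 (lm E1 (lm E2 (lm E3 (lm E4 (lm E5 (lm E6 (lm E7 (z))))))))))) = - lm E3 (lm E5 (lm E6 (lm E7 (z))))" by (simp only: omega lm_minus)
  show ?thesis by (metis h1 h2 minus_minus)
qed

lemma om4_4567: "lm E4 (lm E5 (lm E6 (lm E7 (z)))) = - lm E1 (lm E2 (lm E3 (z)))"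
proof -
  have h1: "lm E4 (lm E5 (lm E6 (lm E7 (lm E1 (lm E2 (lm E3 (lm E4 (lm E5 (lm E6 (lm E7 (z))))))))))) = lm E1 (lm E2 (lm E3 (z)))" by (simp only: cliffL lm_minus minus_minus)
  have h2: "lm E4 (lm E5 (lm E6 (lm E7 (lm E1 (lm E2 (lm E3 (lm E4 (lm E5 (lm E6 (lm E7 (z))))))))))) = - lm E4 (lm E5 (lm E6 (lm E7 (z))))" by (simp only: omega lm_minus)
  show ?thesis by (metis h1 h2 minus_minus)
qed

lemmas om4 = om4_1234 om4_1235 om4_1236 om4_1237 om4_1245 om4_1246 om4_1247 om4_1256 om4_1257 om4_1267 om4_1345 om4_1346 om4_1347 om4_1356 om4_1357 om4_1367 om4_1456 om4_1457 om4_1467 om4_1567 om4_2345 om4_2346 om4_2347 om4_2356 om4_2357 om4_2367 om4_2456 om4_2457 om4_2467 om4_2567 om4_3456 om4_3457 om4_3467 om4_3567 om4_4567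

definition Pr :: "'v \<Rightarrow> 'v" where
  "Pr y = (1/8) *\<^sub>R (y - lm E1 (lm E2 (lm E4 y)) - lm E1 (lm E3 (lm E7 y)) - lm E1 (lm E5 (lm E6 y))
     - lm E2 (lm E3 (lm E5 y)) - lm E2 (lm E6 (lm E7 y)) - lm E3 (lm E4 (lm E6 y)) - lm E4 (lm E5 (lm E7 y)))"

lemma G1_1: "lm E1 (Pr y) = rm (Pr y) E1"
  unfolding Pr_def by (rule sep_eq2, simp only: lmrm_lin cliffL Rf om4 Etab lmp_minus, (simp add: algebra_simps)?)

lemma G1_2: "lm E2 (Pr y) = rm (Pr y) E2"
  unfolding Pr_def by (rule sep_eq2, simp only: lmrm_lin cliffL Rf om4 Etab lmp_minus, (simp add: algebra_simps)?)

lemma G1_3: "lm E3 (Pr y) = rm (Pr y) E3"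
  unfolding Pr_def by (rule sep_eq2, simp only: lmrm_lin cliffL Rf om4 Etab lmp_minus, (simp add: algebra_simps)?)

lemma G1_4: "lm E4 (Pr y) = rm (Pr y) E4"
  unfolding Pr_def by (rule sep_eq2, simp only: lmrm_lin cliffL Rf om4 Etab lmp_minus, (simp add: algebra_simps)?)

lemma G1_5: "lm E5 (Pr y) = rm (Pr y) E5"
  unfolding Pr_def by (rule sep_eq2, simp only: lmrm_lin cliffL Rf om4 Etab lmp_minus, (simp add: algebra_simps)?)

lemma G1_6: "lm E6 (Pr y) = rm (Pr y) E6"
  unfolding Pr_def by (rule sep_eq2, simp only: lmrm_lin cliffL Rf om4 Etab lmp_minus, (simp add: algebra_simps)?)

lemma G1_7: "lm E7 (Pr y) = rm (Pr y) E7"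
  unfolding Pr_def by (rule sep_eq2, simp only: lmrm_lin cliffL Rf om4 Etab lmp_minus, (simp add: algebra_simps)?)

lemma G2_1_1: "lm (E1 \<cdot>\<^sub>O E1) (Pr y) = lm E1 (lm E1 (Pr y))"
  unfolding Pr_def by (rule sep_eq2, simp only: lmrm_lin cliffL Rf om4 Etab lmp_minus, (simp add: algebra_simps)?)

lemma G2_1_2: "lm (E1 \<cdot>\<^sub>O E2) (Pr y) = lm E1 (lm E2 (Pr y))"
  unfolding Pr_def by (rule sep_eq2, simp only: lmrm_lin cliffL Rf om4 Etab lmp_minus, (simp add: algebra_simps)?)

lemma G2_1_3: "lm (E1 \<cdot>\<^sub>O E3) (Pr y) = lm E1 (lm E3 (Pr y))"
  unfolding Pr_def by (rule sep_eq2, simp only: lmrm_lin cliffL Rf om4 Etab lmp_minus, (simp add: algebra_simps)?)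

lemma G2_1_4: "lm (E1 \<cdot>\<^sub>O E4) (Pr y) = lm E1 (lm E4 (Pr y))"
  unfolding Pr_def by (rule sep_eq2, simp only: lmrm_lin cliffL Rf om4 Etab lmp_minus, (simp add: algebra_simps)?)

lemma G2_1_5: "lm (E1 \<cdot>\<^sub>O E5) (Pr y) = lm E1 (lm E5 (Pr y))"
  unfolding Pr_def by (rule sep_eq2, simp only: lmrm_lin cliffL Rf om4 Etab lmp_minus, (simp add: algebra_simps)?)

lemma G2_1_6: "lm (E1 \<cdot>\<^sub>O E6) (Pr y) = lm E1 (lm E6 (Pr y))"
  unfolding Pr_def by (rule sep_eq2, simp only: lmrm_lin cliffL Rf om4 Etab lmp_minus, (simp add: algebra_simps)?)

lemma G2_1_7: "lm (E1 \<cdot>\<^sub>O E7) (Pr y) = lm E1 (lm E7 (Pr y))"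
  unfolding Pr_def by (rule sep_eq2, simp only: lmrm_lin cliffL Rf om4 Etab lmp_minus, (simp add: algebra_simps)?)

lemma G2_2_1: "lm (E2 \<cdot>\<^sub>O E1) (Pr y) = lm E2 (lm E1 (Pr y))"
  unfolding Pr_def by (rule sep_eq2, simp only: lmrm_lin cliffL Rf om4 Etab lmp_minus, (simp add: algebra_simps)?)

lemma G2_2_2: "lm (E2 \<cdot>\<^sub>O E2) (Pr y) = lm E2 (lm E2 (Pr y))"
  unfolding Pr_def by (rule sep_eq2, simp only: lmrm_lin cliffL Rf om4 Etab lmp_minus, (simp add: algebra_simps)?)

lemma G2_2_3: "lm (E2 \<cdot>\<^sub>O E3) (Pr y) = lm E2 (lm E3 (Pr y))"
  unfolding Pr_def by (rule sep_eq2, simp only: lmrm_lin cliffL Rf om4 Etab lmp_minus, (simp add: algebra_simps)?)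

lemma G2_2_4: "lm (E2 \<cdot>\<^sub>O E4) (Pr y) = lm E2 (lm E4 (Pr y))"
  unfolding Pr_def by (rule sep_eq2, simp only: lmrm_lin cliffL Rf om4 Etab lmp_minus, (simp add: algebra_simps)?)

lemma G2_2_5: "lm (E2 \<cdot>\<^sub>O E5) (Pr y) = lm E2 (lm E5 (Pr y))"
  unfolding Pr_def by (rule sep_eq2, simp only: lmrm_lin cliffL Rf om4 Etab lmp_minus, (simp add: algebra_simps)?)

lemma G2_2_6: "lm (E2 \<cdot>\<^sub>O E6) (Pr y) = lm E2 (lm E6 (Pr y))"
  unfolding Pr_def by (rule sep_eq2, simp only: lmrm_lin cliffL Rf om4 Etab lmp_minus, (simp add: algebra_simps)?)

lemma G2_2_7: "lm (E2 \<cdot>\<^sub>O E7) (Pr y) = lm E2 (lm E7 (Pr y))"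
  unfolding Pr_def by (rule sep_eq2, simp only: lmrm_lin cliffL Rf om4 Etab lmp_minus, (simp add: algebra_simps)?)

lemma G2_3_1: "lm (E3 \<cdot>\<^sub>O E1) (Pr y) = lm E3 (lm E1 (Pr y))"
  unfolding Pr_def by (rule sep_eq2, simp only: lmrm_lin cliffL Rf om4 Etab lmp_minus, (simp add: algebra_simps)?)

lemma G2_3_2: "lm (E3 \<cdot>\<^sub>O E2) (Pr y) = lm E3 (lm E2 (Pr y))"
  unfolding Pr_def by (rule sep_eq2, simp only: lmrm_lin cliffL Rf om4 Etab lmp_minus, (simp add: algebra_simps)?)

lemma G2_3_3: "lm (E3 \<cdot>\<^sub>O E3) (Pr y) = lm E3 (lm E3 (Pr y))"
  unfolding Pr_def by (rule sep_eq2, simp only: lmrm_lin cliffL Rf om4 Etab lmp_minus, (simp add: algebra_simps)?)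

lemma G2_3_4: "lm (E3 \<cdot>\<^sub>O E4) (Pr y) = lm E3 (lm E4 (Pr y))"
  unfolding Pr_def by (rule sep_eq2, simp only: lmrm_lin cliffL Rf om4 Etab lmp_minus, (simp add: algebra_simps)?)

lemma G2_3_5: "lm (E3 \<cdot>\<^sub>O E5) (Pr y) = lm E3 (lm E5 (Pr y))"
  unfolding Pr_def by (rule sep_eq2, simp only: lmrm_lin cliffL Rf om4 Etab lmp_minus, (simp add: algebra_simps)?)

lemma G2_3_6: "lm (E3 \<cdot>\<^sub>O E6) (Pr y) = lm E3 (lm E6 (Pr y))"
  unfolding Pr_def by (rule sep_eq2, simp only: lmrm_lin cliffL Rf om4 Etab lmp_minus, (simp add: algebra_simps)?)

lemma G2_3_7: "lm (E3 \<cdot>\<^sub>O E7) (Pr y) = lm E3 (lm E7 (Pr y))"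
  unfolding Pr_def by (rule sep_eq2, simp only: lmrm_lin cliffL Rf om4 Etab lmp_minus, (simp add: algebra_simps)?)

lemma G2_4_1: "lm (E4 \<cdot>\<^sub>O E1) (Pr y) = lm E4 (lm E1 (Pr y))"
  unfolding Pr_def by (rule sep_eq2, simp only: lmrm_lin cliffL Rf om4 Etab lmp_minus, (simp add: algebra_simps)?)

lemma G2_4_2: "lm (E4 \<cdot>\<^sub>O E2) (Pr y) = lm E4 (lm E2 (Pr y))"
  unfolding Pr_def by (rule sep_eq2, simp only: lmrm_lin cliffL Rf om4 Etab lmp_minus, (simp add: algebra_simps)?)

lemma G2_4_3: "lm (E4 \<cdot>\<^sub>O E3) (Pr y) = lm E4 (lm E3 (Pr y))"
  unfolding Pr_def by (rule sep_eq2, simp only: lmrm_lin cliffL Rf om4 Etab lmp_minus, (simp add: algebra_simps)?)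

lemma G2_4_4: "lm (E4 \<cdot>\<^sub>O E4) (Pr y) = lm E4 (lm E4 (Pr y))"
  unfolding Pr_def by (rule sep_eq2, simp only: lmrm_lin cliffL Rf om4 Etab lmp_minus, (simp add: algebra_simps)?)

lemma G2_4_5: "lm (E4 \<cdot>\<^sub>O E5) (Pr y) = lm E4 (lm E5 (Pr y))"
  unfolding Pr_def by (rule sep_eq2, simp only: lmrm_lin cliffL Rf om4 Etab lmp_minus, (simp add: algebra_simps)?)

lemma G2_4_6: "lm (E4 \<cdot>\<^sub>O E6) (Pr y) = lm E4 (lm E6 (Pr y))"
  unfolding Pr_def by (rule sep_eq2, simp only: lmrm_lin cliffL Rf om4 Etab lmp_minus, (simp add: algebra_simps)?)

lemma G2_4_7: "lm (E4 \<cdot>\<^sub>O E7) (Pr y) = lm E4 (lm E7 (Pr y))"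
  unfolding Pr_def by (rule sep_eq2, simp only: lmrm_lin cliffL Rf om4 Etab lmp_minus, (simp add: algebra_simps)?)

lemma G2_5_1: "lm (E5 \<cdot>\<^sub>O E1) (Pr y) = lm E5 (lm E1 (Pr y))"
  unfolding Pr_def by (rule sep_eq2, simp only: lmrm_lin cliffL Rf om4 Etab lmp_minus, (simp add: algebra_simps)?)

lemma G2_5_2: "lm (E5 \<cdot>\<^sub>O E2) (Pr y) = lm E5 (lm E2 (Pr y))"
  unfolding Pr_def by (rule sep_eq2, simp only: lmrm_lin cliffL Rf om4 Etab lmp_minus, (simp add: algebra_simps)?)

lemma G2_5_3: "lm (E5 \<cdot>\<^sub>O E3) (Pr y) = lm E5 (lm E3 (Pr y))"
  unfolding Pr_def by (rule sep_eq2, simp only: lmrm_lin cliffL Rf om4 Etab lmp_minus, (simp add: algebra_simps)?)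

lemma G2_5_4: "lm (E5 \<cdot>\<^sub>O E4) (Pr y) = lm E5 (lm E4 (Pr y))"
  unfolding Pr_def by (rule sep_eq2, simp only: lmrm_lin cliffL Rf om4 Etab lmp_minus, (simp add: algebra_simps)?)

lemma G2_5_5: "lm (E5 \<cdot>\<^sub>O E5) (Pr y) = lm E5 (lm E5 (Pr y))"
  unfolding Pr_def by (rule sep_eq2, simp only: lmrm_lin cliffL Rf om4 Etab lmp_minus, (simp add: algebra_simps)?)

lemma G2_5_6: "lm (E5 \<cdot>\<^sub>O E6) (Pr y) = lm E5 (lm E6 (Pr y))"
  unfolding Pr_def by (rule sep_eq2, simp only: lmrm_lin cliffL Rf om4 Etab lmp_minus, (simp add: algebra_simps)?)

lemma G2_5_7: "lm (E5 \<cdot>\<^sub>O E7) (Pr y) = lm E5 (lm E7 (Pr y))"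
  unfolding Pr_def by (rule sep_eq2, simp only: lmrm_lin cliffL Rf om4 Etab lmp_minus, (simp add: algebra_simps)?)

lemma G2_6_1: "lm (E6 \<cdot>\<^sub>O E1) (Pr y) = lm E6 (lm E1 (Pr y))"
  unfolding Pr_def by (rule sep_eq2, simp only: lmrm_lin cliffL Rf om4 Etab lmp_minus, (simp add: algebra_simps)?)

lemma G2_6_2: "lm (E6 \<cdot>\<^sub>O E2) (Pr y) = lm E6 (lm E2 (Pr y))"
  unfolding Pr_def by (rule sep_eq2, simp only: lmrm_lin cliffL Rf om4 Etab lmp_minus, (simp add: algebra_simps)?)

lemma G2_6_3: "lm (E6 \<cdot>\<^sub>O E3) (Pr y) = lm E6 (lm E3 (Pr y))"
  unfolding Pr_def by (rule sep_eq2, simp only: lmrm_lin cliffL Rf om4 Etab lmp_minus, (simp add: algebra_simps)?)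

lemma G2_6_4: "lm (E6 \<cdot>\<^sub>O E4) (Pr y) = lm E6 (lm E4 (Pr y))"
  unfolding Pr_def by (rule sep_eq2, simp only: lmrm_lin cliffL Rf om4 Etab lmp_minus, (simp add: algebra_simps)?)

lemma G2_6_5: "lm (E6 \<cdot>\<^sub>O E5) (Pr y) = lm E6 (lm E5 (Pr y))"
  unfolding Pr_def by (rule sep_eq2, simp only: lmrm_lin cliffL Rf om4 Etab lmp_minus, (simp add: algebra_simps)?)

lemma G2_6_6: "lm (E6 \<cdot>\<^sub>O E6) (Pr y) = lm E6 (lm E6 (Pr y))"
  unfolding Pr_def by (rule sep_eq2, simp only: lmrm_lin cliffL Rf om4 Etab lmp_minus, (simp add: algebra_simps)?)

lemma G2_6_7: "lm (E6 \<cdot>\<^sub>O E7) (Pr y) = lm E6 (lm E7 (Pr y))"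
  unfolding Pr_def by (rule sep_eq2, simp only: lmrm_lin cliffL Rf om4 Etab lmp_minus, (simp add: algebra_simps)?)

lemma G2_7_1: "lm (E7 \<cdot>\<^sub>O E1) (Pr y) = lm E7 (lm E1 (Pr y))"
  unfolding Pr_def by (rule sep_eq2, simp only: lmrm_lin cliffL Rf om4 Etab lmp_minus, (simp add: algebra_simps)?)

lemma G2_7_2: "lm (E7 \<cdot>\<^sub>O E2) (Pr y) = lm E7 (lm E2 (Pr y))"
  unfolding Pr_def by (rule sep_eq2, simp only: lmrm_lin cliffL Rf om4 Etab lmp_minus, (simp add: algebra_simps)?)

lemma G2_7_3: "lm (E7 \<cdot>\<^sub>O E3) (Pr y) = lm E7 (lm E3 (Pr y))"
  unfolding Pr_def by (rule sep_eq2, simp only: lmrm_lin cliffL Rf om4 Etab lmp_minus, (simp add: algebra_simps)?)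

lemma G2_7_4: "lm (E7 \<cdot>\<^sub>O E4) (Pr y) = lm E7 (lm E4 (Pr y))"
  unfolding Pr_def by (rule sep_eq2, simp only: lmrm_lin cliffL Rf om4 Etab lmp_minus, (simp add: algebra_simps)?)

lemma G2_7_5: "lm (E7 \<cdot>\<^sub>O E5) (Pr y) = lm E7 (lm E5 (Pr y))"
  unfolding Pr_def by (rule sep_eq2, simp only: lmrm_lin cliffL Rf om4 Etab lmp_minus, (simp add: algebra_simps)?)

lemma G2_7_6: "lm (E7 \<cdot>\<^sub>O E6) (Pr y) = lm E7 (lm E6 (Pr y))"
  unfolding Pr_def by (rule sep_eq2, simp only: lmrm_lin cliffL Rf om4 Etab lmp_minus, (simp add: algebra_simps)?)

lemma G2_7_7: "lm (E7 \<cdot>\<^sub>O E7) (Pr y) = lm E7 (lm E7 (Pr y))"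
  unfolding Pr_def by (rule sep_eq2, simp only: lmrm_lin cliffL Rf om4 Etab lmp_minus, (simp add: algebra_simps)?)

lemma G3: "y = rm (Pr y) E0 + rm (- Pr (rm y E1)) E1 + rm (- Pr (rm y E2)) E2 + rm (- Pr (rm y E3)) E3 + rm (- Pr (rm y E4)) E4 + rm (- Pr (rm y E5)) E5 + rm (- Pr (rm y E6)) E6 + rm (- Pr (rm y E7)) E7"
  unfolding Pr_def by (rule sep_eq2, simp only: lmrm_lin lm_scale lm_diff cliffL Rf om4 Etab lmp_minus, (simp add: algebra_simps)?)

end

context obim begin
lemmas G2s = G2_1_1 G2_1_2 G2_1_3 G2_1_4 G2_1_5 G2_1_6 G2_1_7 G2_2_1 G2_2_2 G2_2_3 G2_2_4 G2_2_5 G2_2_6 G2_2_7 G2_3_1 G2_3_2 G2_3_3 G2_3_4 G2_3_5 G2_3_6 G2_3_7 G2_4_1 G2_4_2 G2_4_3 G2_4_4 G2_4_5 G2_4_6 G2_4_7 G2_5_1 G2_5_2 G2_5_3 G2_5_4 G2_5_5 G2_5_6 G2_5_7 G2_6_1 G2_6_2 G2_6_3 G2_6_4 G2_6_5 G2_6_6 G2_6_7 G2_7_1 G2_7_2 G2_7_3 G2_7_4 G2_7_5 G2_7_6 G2_7_7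

lemma all_oe: assumes "P E0" "P E1" "P E2" "P E3" "P E4" "P E5" "P E6" "P E7" "i < 8"
  shows "P (oe i)"
  using lt8[OF assms(9)] assms(1-8) by (auto simp: oeE)

lemma lm_expand: "lm p x = (\<Sum>i<8. p $ of_nat i *\<^sub>R lm (oe i) x)"
proof -
  have "lm p x = lm (\<Sum>i<8. p $ of_nat i *\<^sub>R oe i) x" using oct_expand[of p] by simp
  also have "\<dots> = (\<Sum>i<8. p $ of_nat i *\<^sub>R lm (oe i) x)" by (simp add: lmp_sum lmp_scale)
  finally show ?thesis .
qed

lemma rm_expand: "rm x p = (\<Sum>i<8. p $ of_nat i *\<^sub>R rm x (oe i))"
proof -
  have "rm x p = rm x (\<Sum>i<8. p $ of_nat i *\<^sub>R oe i)" using oct_expand[of p] by simp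
  also have "\<dots> = (\<Sum>i<8. p $ of_nat i *\<^sub>R rm x (oe i))" by (simp add: rmp_sum rmp_scale)
  finally show ?thesis .
qed

lemma omult_expand2: "p \<cdot>\<^sub>O q = (\<Sum>i<8. \<Sum>j<8. (p $ of_nat i * q $ of_nat j) *\<^sub>R (oe i \<cdot>\<^sub>O oe j))"
  by (rule omult_expand)

lemma lm_assoc_from_basis:
  assumes h: "\<And>i j. i < 8 \<Longrightarrow> j < 8 \<Longrightarrow> lm (oe i \<cdot>\<^sub>O oe j) x = lm (oe i) (lm (oe j) x)"
  shows "lm (p \<cdot>\<^sub>O q) x = lm p (lm q x)"
proof -
  have "lm (p \<cdot>\<^sub>O q) x = (\<Sum>i<8. \<Sum>j<8. (p $ of_nat i * q $ of_nat j) *\<^sub>R lm (oe i \<cdot>\<^sub>O oe j) x)"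
    by (simp add: omult_expand2[of p q] lmp_sum lmp_scale)
  also have "\<dots> = (\<Sum>i<8. \<Sum>j<8. (p $ of_nat i * q $ of_nat j) *\<^sub>R lm (oe i) (lm (oe j) x))"
    by (intro sum.cong refl) (simp add: h)
  also have "\<dots> = (\<Sum>i<8. p $ of_nat i *\<^sub>R lm (oe i) (\<Sum>j<8. q $ of_nat j *\<^sub>R lm (oe j) x))"
    by (simp add: lm_sum lm_scale scaleR_sum_right)
  also have "\<dots> = (\<Sum>i<8. p $ of_nat i *\<^sub>R lm (oe i) (lm q x))"
    by (simp only: lm_expand[of q x, symmetric])
  also have "\<dots> = lm p (lm q x)"
    by (simp only: lm_expand[of p "lm q x", symmetric])
  finally show ?thesis .
qed

lemma Pr_comm: "lm p (Pr y) = rm (Pr y) p"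
proof -
  have h: "i < 8 \<Longrightarrow> lm (oe i) (Pr y) = rm (Pr y) (oe i)" for i
    by (rule all_oe[where P="\<lambda>e. lm e (Pr y) = rm (Pr y) e"]) (simp_all add: lm_one rm_one G1_1 G1_2 G1_3 G1_4 G1_5 G1_6 G1_7)
  show ?thesis unfolding lm_expand[of p] rm_expand[of _ p]
    by (intro sum.cong refl) (simp add: h)
qed

lemma Pr_assoc: "lm (p \<cdot>\<^sub>O q) (Pr y) = lm p (lm q (Pr y))"
proof (rule lm_assoc_from_basis)
  fix i j :: nat assume i: "i < 8" and j: "j < 8"
  show "lm (oe i \<cdot>\<^sub>O oe j) (Pr y) = lm (oe i) (lm (oe j) (Pr y))"
    using lt8[OF i] lt8[OF j] by (elim disjE) (simp_all only: oeE G2s lm_one Et_0_0 Et_0_1 Et_0_2 Et_0_3 Et_0_4 Et_0_5 Et_0_6 Et_0_7 Et_1_0 Et_2_0 Et_3_0 Et_4_0 Et_5_0 Et_6_0 Et_7_0)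
qed


lemma ReM_I: "(\<And>p. lm p m = rm m p) \<Longrightarrow> (\<And>p q. lm (p \<cdot>\<^sub>O q) m = lm p (lm q m)) \<Longrightarrow> m \<in> ReM lm rm"
  by (simp add: ReM_def assocL_def)

lemma Pr_ReM: "Pr y \<in> ReM lm rm"
  by (rule ReM_I[OF Pr_comm Pr_assoc])

lemma re_rm: "m \<in> ReM lm rm \<Longrightarrow> rm m p = lm p m"
  unfolding ReM_def by simp

lemma re_assocL: assumes "m \<in> ReM lm rm" shows "lm (p \<cdot>\<^sub>O q) m = lm p (lm q m)"
proof -
  have "assocL lm p q m = 0" using assms unfolding ReM_def by blast
  then show ?thesis unfolding assocL_def by simp
qed

lemma re_lm_rm: "m \<in> ReM lm rm \<Longrightarrow> lm p (rm m q) = rm m (p \<cdot>\<^sub>O q)"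
  by (simp add: re_rm re_assocL)

lemma re_rm_rm: assumes "m \<in> ReM lm rm" shows "rm (rm m p) q = rm m (p \<cdot>\<^sub>O q)"
proof -
  have "assocR rm m p q = assocL lm p q m" using ax[where p=p and q=q and x=m] by simp
  also have "\<dots> = 0" using assms by (simp add: ReM_def)
  finally show ?thesis unfolding assocR_def by simp
qed

lemma ReM_0: "0 \<in> ReM lm rm"
  by (rule ReM_I) (simp_all add: lm_0 rm_0)
lemma ReM_add: "a \<in> ReM lm rm \<Longrightarrow> b \<in> ReM lm rm \<Longrightarrow> a + b \<in> ReM lm rm"
  by (rule ReM_I) (simp_all add: lm_add rm_add re_rm re_assocL)
lemma ReM_neg: "a \<in> ReM lm rm \<Longrightarrow> - a \<in> ReM lm rm"
  by (rule ReM_I) (simp_all add: lm_minus rm_minus re_rm re_assocL)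
lemma ReM_scale: "a \<in> ReM lm rm \<Longrightarrow> c *\<^sub>R a \<in> ReM lm rm"
  by (rule ReM_I) (simp_all add: lm_scale rm_scale re_rm re_assocL)

lemma Pr_add: "Pr (a + b) = Pr a + Pr b"
  unfolding Pr_def by (simp add: lm_add algebra_simps)
lemma Pr_scale: "Pr (c *\<^sub>R a) = c *\<^sub>R Pr a"
  unfolding Pr_def by (simp add: lm_scale algebra_simps)
lemma Pr_linear: "linear Pr"
  by (rule linearI) (simp_all add: Pr_add Pr_scale)
lemma Pr_diff: "Pr (a - b) = Pr a - Pr b" using linear_diff[OF Pr_linear] .
lemma Pr_minus: "Pr (- a) = - Pr a" using linear_neg[OF Pr_linear] .
lemma Pr_sum: "Pr (sum f A) = (\<Sum>i\<in>A. Pr (f i))" using linear_sum[OF Pr_linear] .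

lemma PO: "(1/8) *\<^sub>R (r - E1 \<cdot>\<^sub>O (E2 \<cdot>\<^sub>O (E4 \<cdot>\<^sub>O r)) - E1 \<cdot>\<^sub>O (E3 \<cdot>\<^sub>O (E7 \<cdot>\<^sub>O r)) - E1 \<cdot>\<^sub>O (E5 \<cdot>\<^sub>O (E6 \<cdot>\<^sub>O r))
     - E2 \<cdot>\<^sub>O (E3 \<cdot>\<^sub>O (E5 \<cdot>\<^sub>O r)) - E2 \<cdot>\<^sub>O (E6 \<cdot>\<^sub>O (E7 \<cdot>\<^sub>O r)) - E3 \<cdot>\<^sub>O (E4 \<cdot>\<^sub>O (E6 \<cdot>\<^sub>O r)) - E4 \<cdot>\<^sub>O (E5 \<cdot>\<^sub>O (E7 \<cdot>\<^sub>O r))) = r $ 0 *\<^sub>R E0"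
  by (rule vec8_eqI) (auto simp: omult_c Edefs oe_nth')

lemma Pr_rm: assumes m: "m \<in> ReM lm rm" shows "Pr (rm m r) = (r $ 0) *\<^sub>R m"
proof -
  have "Pr (rm m r) = rm m ((1/8) *\<^sub>R (r - E1 \<cdot>\<^sub>O (E2 \<cdot>\<^sub>O (E4 \<cdot>\<^sub>O r)) - E1 \<cdot>\<^sub>O (E3 \<cdot>\<^sub>O (E7 \<cdot>\<^sub>O r)) - E1 \<cdot>\<^sub>O (E5 \<cdot>\<^sub>O (E6 \<cdot>\<^sub>O r))
     - E2 \<cdot>\<^sub>O (E3 \<cdot>\<^sub>O (E5 \<cdot>\<^sub>O r)) - E2 \<cdot>\<^sub>O (E6 \<cdot>\<^sub>O (E7 \<cdot>\<^sub>O r)) - E3 \<cdot>\<^sub>O (E4 \<cdot>\<^sub>O (E6 \<cdot>\<^sub>O r)) - E4 \<cdot>\<^sub>O (E5 \<cdot>\<^sub>O (E7 \<cdot>\<^sub>O r))))"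
    by (simp add: Pr_def re_lm_rm[OF m] rmp_diff rmp_scale)
  also have "\<dots> = rm m (r $ 0 *\<^sub>R E0)" by (simp only: PO)
  also have "\<dots> = (r $ 0) *\<^sub>R m" by (simp add: rmp_scale rm_one)
  finally show ?thesis .
qed

definition Qc :: "'v \<Rightarrow> nat \<Rightarrow> 'v" where
  "Qc x i = (if i = 0 then Pr x else if i < 8 then - Pr (rm x (oe i)) else 0)"

lemma Qc_ReM: "Qc x i \<in> ReM lm rm"
  by (simp add: Qc_def Pr_ReM ReM_neg ReM_0)

lemma decomp: "x = (\<Sum>i<8. rm (Qc x i) (oe i))"
proof -
  have "(\<Sum>i<8. rm (Qc x i) (oe i)) = rm (Pr x) E0 + rm (- Pr (rm x E1)) E1 + rm (- Pr (rm x E2)) E2 + rm (- Pr (rm x E3)) E3 + rm (- Pr (rm x E4)) E4 + rm (- Pr (rm x E5)) E5 + rm (- Pr (rm x E6)) E6 + rm (- Pr (rm x E7)) E7"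
    by (simp add: sum8e Qc_def oeE add.assoc)
  with G3[of x] show ?thesis by simp
qed

lemma E_c0: "E0 $ 0 = 1" "E1 $ 0 = 0" "E2 $ 0 = 0" "E3 $ 0 = 0" "E4 $ 0 = 0" "E5 $ 0 = 0" "E6 $ 0 = 0" "E7 $ 0 = 0"
  by (simp_all add: Edefs oe_nth')

lemma oe_c0: "i < 8 \<Longrightarrow> oe i $ 0 = (if i = 0 then 1 else 0)"
  using oe_nth[of i 0] by simp

lemma oe_prod_c0: assumes i: "i < 8" and j: "j < 8" and j0: "0 < j"
  shows "(oe i \<cdot>\<^sub>O oe j) $ 0 = (if i = j then -1 else 0)"
  using lt8[OF i] lt8[OF j] j0 by (elim disjE) (simp_all add: oeE Etab E_c0)

lemma coeff: assumes c: "\<And>i. i < 8 \<Longrightarrow> c i \<in> ReM lm rm" and j: "j < 8"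
  shows "Qc (\<Sum>i<8. rm (c i) (oe i)) j = c j"
proof (cases "j = 0")
  case True
  have "Qc (\<Sum>i<8. rm (c i) (oe i)) j = (\<Sum>i<8. Pr (rm (c i) (oe i)))"
    using True by (simp add: Qc_def Pr_sum)
  also have "\<dots> = (\<Sum>i<8. (if i = 0 then c i else 0))"
    by (intro sum.cong refl) (simp add: Pr_rm c oe_c0)
  also have "\<dots> = c j" using True by simp
  finally show ?thesis .
next
  case False
  have "Qc (\<Sum>i<8. rm (c i) (oe i)) j = - (\<Sum>i<8. Pr (rm (rm (c i) (oe i)) (oe j)))"
    using False j by (simp add: Qc_def Pr_sum rm_sum)
  also have "\<dots> = - (\<Sum>i<8. (if i = j then - c i else 0))"
    using False j by (intro arg_cong[where f=uminus] sum.cong refl) (simp add: Pr_rm c re_rm_rm oe_prod_c0)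
  also have "\<dots> = c j" using j by simp
  finally show ?thesis .
qed

lemma rcomp_eq: "rcomp lm rm x = Qc x"
  unfolding rcomp_def
proof (rule the_equality)
  show "(\<forall>i<8. Qc x i \<in> ReM lm rm) \<and> (\<forall>i\<ge>8. Qc x i = 0) \<and> x = (\<Sum>i<8. rm (Qc x i) (oe i))"
    using Qc_ReM decomp[of x] by (simp add: Qc_def)
next
  fix c assume h: "(\<forall>i<8. c i \<in> ReM lm rm) \<and> (\<forall>i\<ge>8. c i = 0) \<and> x = (\<Sum>i<8. rm (c i) (oe i))"
  show "c = Qc x"
  proof
    fix i show "c i = Qc x i"
    proof (cases "i < 8")
      case True
      then show ?thesis using coeff[of c i] h by simp
    next
      case False
      then show ?thesis using h by (simp add: Qc_def)
    qed
  qed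
qed

lemma RePart_eq: "RePart lm rm x = Pr x"
  by (simp add: RePart_def rcomp_eq Qc_def)

lemma real_crit: assumes h: "\<And>p q. rm (rm y p) q = rm y (p \<cdot>\<^sub>O q)" shows "y \<in> ReM lm rm"
proof -
  have a: "lm (p \<cdot>\<^sub>O q) y = lm p (lm q y)" for p q
  proof -
    have "lm (p \<cdot>\<^sub>O q) y - lm p (lm q y) + rm y (p \<cdot>\<^sub>O q) = rm y (p \<cdot>\<^sub>O q)"
      using RR_gen[of y p q] h[of p q] by simp
    then show ?thesis by simp
  qed
  have b1: "rm y E1 = lm E1 y"
    by (rule sep_eq2) (simp add: Rf_1 a[symmetric] Etab lmp_minus algebra_simps)
  have b2: "rm y E2 = lm E2 y"
    by (rule sep_eq2) (simp add: Rf_2 a[symmetric] Etab lmp_minus algebra_simps)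
  have b3: "rm y E3 = lm E3 y"
    by (rule sep_eq2) (simp add: Rf_3 a[symmetric] Etab lmp_minus algebra_simps)
  have b4: "rm y E4 = lm E4 y"
    by (rule sep_eq2) (simp add: Rf_4 a[symmetric] Etab lmp_minus algebra_simps)
  have b5: "rm y E5 = lm E5 y"
    by (rule sep_eq2) (simp add: Rf_5 a[symmetric] Etab lmp_minus algebra_simps)
  have b6: "rm y E6 = lm E6 y"
    by (rule sep_eq2) (simp add: Rf_6 a[symmetric] Etab lmp_minus algebra_simps)
  have b7: "rm y E7 = lm E7 y"
    by (rule sep_eq2) (simp add: Rf_7 a[symmetric] Etab lmp_minus algebra_simps)
  have c: "lm p y = rm y p" for p
  proof -
    have hh: "i < 8 \<Longrightarrow> lm (oe i) y = rm y (oe i)" for i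
      by (rule all_oe[where P="\<lambda>e. lm e y = rm y e"]) (simp_all add: lm_one rm_one b1 b2 b3 b4 b5 b6 b7)
    show ?thesis unfolding lm_expand[of p] rm_expand[of _ p]
      by (intro sum.cong refl) (simp add: hh)
  qed
  show ?thesis by (rule ReM_I[OF c a])
qed

end


locale bobim = obim lm rm for lm :: "octo \<Rightarrow> 'v::real_normed_vector \<Rightarrow> 'v" and rm +
  assumes nrm: "\<And>p x. norm (lm p x) = norm p * norm x"
begin

lemma bl_lm: "bounded_linear (lm p)"
  by (rule bounded_linear_intro[where K="norm p"]) (simp_all add: lm_add lm_scale nrm mult.commute)

lemma BO_rm: "A \<in> B_O rm \<Longrightarrow> A (rm x p) = rm (A x) p"
  by (simp add: B_O_def)

lemma BO_lin: "A \<in> B_O rm \<Longrightarrow> linear A"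
  by (simp add: B_O_def bounded_linear.linear)

lemma BO_ReM: assumes A: "A \<in> B_O rm" and m: "m \<in> ReM lm rm" shows "A m \<in> ReM lm rm"
proof (rule real_crit)
  fix p q
  have "rm (rm (A m) p) q = A (rm (rm m p) q)" by (simp add: BO_rm[OF A])
  also have "\<dots> = A (rm m (p \<cdot>\<^sub>O q))" by (simp add: re_rm_rm[OF m])
  also have "\<dots> = rm (A m) (p \<cdot>\<^sub>O q)" by (simp add: BO_rm[OF A])
  finally show "rm (rm (A m) p) q = rm (A m) (p \<cdot>\<^sub>O q)" .
qed

lemma BO_lmJ: assumes A: "A \<in> B_O rm" shows "A (lm J x) = lm J (A x)"
proof -
  have lA: "linear A" using BO_lin[OF A] .
  have "A (lm J x) = A (lm J (\<Sum>i<8. rm (Qc x i) (oe i)))" by (simp only: decomp[symmetric])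
  also have "\<dots> = (\<Sum>i<8. rm (A (Qc x i)) (J \<cdot>\<^sub>O oe i))"
    by (simp add: lm_sum linear_sum[OF lA] re_lm_rm Qc_ReM BO_rm[OF A])
  also have "\<dots> = lm J (\<Sum>i<8. A (rm (Qc x i) (oe i)))"
    by (simp add: lm_sum re_lm_rm Qc_ReM BO_rm[OF A] BO_ReM[OF A])
  also have "\<dots> = lm J (A (\<Sum>i<8. rm (Qc x i) (oe i)))"
    by (simp add: linear_sum[OF lA])
  also have "\<dots> = lm J (A x)" by (simp only: decomp[symmetric])
  finally show ?thesis .
qed

lemma J_sq: assumes "J \<cdot>\<^sub>O J = - oe 0" shows "lm J (lm J x) = - x"
  using LL_sq[of J x] assms by (simp add: lmp_minus oeE lm_one)

lemma BO_id: "(\<lambda>x. x) \<in> B_O rm" by (simp add: B_O_def)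
lemma BO_zero: "(\<lambda>x. 0) \<in> B_O rm" by (simp add: B_O_def rm_0)
lemma BO_comp: "A \<in> B_O rm \<Longrightarrow> B \<in> B_O rm \<Longrightarrow> (\<lambda>x. A (B x)) \<in> B_O rm"
  by (simp add: B_O_def bounded_linear_compose)
lemma BO_add: "A \<in> B_O rm \<Longrightarrow> B \<in> B_O rm \<Longrightarrow> (\<lambda>x. A x + B x) \<in> B_O rm"
  by (simp add: B_O_def bounded_linear_add rm_add)
lemma BO_diff: "A \<in> B_O rm \<Longrightarrow> B \<in> B_O rm \<Longrightarrow> (\<lambda>x. A x - B x) \<in> B_O rm"
  by (simp add: B_O_def bounded_linear_sub rm_diff)

definition inK :: "octo \<Rightarrow> ('v \<Rightarrow> 'v) \<Rightarrow> bool" where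
  "inK J F \<longleftrightarrow> (\<exists>F0 F1. F0 \<in> B_O rm \<and> F1 \<in> B_O rm \<and> F = (\<lambda>x. F0 x + lm J (F1 x)))"

lemma inK_id: "inK J (\<lambda>x. x)"
  unfolding inK_def by (rule exI[of _ "\<lambda>x. x"], rule exI[of _ "\<lambda>x. 0"]) (simp add: BO_id BO_zero lm_0)

lemma inK_comp: assumes JJ: "J \<cdot>\<^sub>O J = - oe 0" and T: "inK J T" and S: "inK J S"
  shows "inK J (T \<circ> S)"
proof -
  obtain T0 T1 where T0: "T0 \<in> B_O rm" and T1: "T1 \<in> B_O rm" and Te: "T = (\<lambda>x. T0 x + lm J (T1 x))"
    using T unfolding inK_def by blast
  obtain S0 S1 where S0: "S0 \<in> B_O rm" and S1: "S1 \<in> B_O rm" and Se: "S = (\<lambda>x. S0 x + lm J (S1 x))"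
    using S unfolding inK_def by blast
  have lT0: "linear T0" and lT1: "linear T1" using BO_lin T0 T1 by auto
  have "T \<circ> S = (\<lambda>x. (T0 (S0 x) - T1 (S1 x)) + lm J (T0 (S1 x) + T1 (S0 x)))"
  proof
    fix x
    have "(T \<circ> S) x = T0 (S0 x) + T0 (lm J (S1 x)) + lm J (T1 (S0 x)) + lm J (T1 (lm J (S1 x)))"
      by (simp add: Te Se linear_add[OF lT0] linear_add[OF lT1] lm_add add.assoc)
    also have "\<dots> = T0 (S0 x) + lm J (T0 (S1 x)) + lm J (T1 (S0 x)) + lm J (lm J (T1 (S1 x)))"
      by (simp add: BO_lmJ[OF T0] BO_lmJ[OF T1])
    also have "\<dots> = (T0 (S0 x) - T1 (S1 x)) + lm J (T0 (S1 x) + T1 (S0 x))"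
      by (simp add: J_sq[OF JJ] lm_add algebra_simps)
    finally show "(T \<circ> S) x = (T0 (S0 x) - T1 (S1 x)) + lm J (T0 (S1 x) + T1 (S0 x))" .
  qed
  moreover have "(\<lambda>x. T0 (S0 x) - T1 (S1 x)) \<in> B_O rm"
    by (rule BO_diff[OF BO_comp[OF T0 S0] BO_comp[OF T1 S1]])
  moreover have "(\<lambda>x. T0 (S1 x) + T1 (S0 x)) \<in> B_O rm"
    by (rule BO_add[OF BO_comp[OF T0 S1] BO_comp[OF T1 S0]])
  ultimately show ?thesis unfolding inK_def
    by (intro exI[of _ "\<lambda>x. T0 (S0 x) - T1 (S1 x)"] exI[of _ "\<lambda>x. T0 (S1 x) + T1 (S0 x)"] conjI)
qed

lemma inK_pow: assumes JJ: "J \<cdot>\<^sub>O J = - oe 0" and T: "inK J T" shows "inK J (T ^^ n)"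
proof (induction n)
  case 0
  then show ?case using inK_id by (simp add: id_def)
next
  case (Suc n)
  then show ?case using inK_comp[OF JJ T Suc.IH] by (simp only: funpow.simps(2))
qed

lemma inK_lin: assumes "inK J F" shows "linear F"
proof -
  obtain F0 F1 where F0: "F0 \<in> B_O rm" and F1: "F1 \<in> B_O rm" and Fe: "F = (\<lambda>x. F0 x + lm J (F1 x))"
    using assms unfolding inK_def by blast
  have "bounded_linear F" unfolding Fe
    by (intro bounded_linear_add bounded_linear_compose[OF bl_lm]) (use F0 F1 in \<open>simp_all add: B_O_def\<close>)
  then show ?thesis by (rule bounded_linear.linear)
qed

lemma inK_bl: assumes "inK J F" shows "bounded_linear F"
proof -
  obtain F0 F1 where F0: "F0 \<in> B_O rm" and F1: "F1 \<in> B_O rm" and Fe: "F = (\<lambda>x. F0 x + lm J (F1 x))"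
    using assms unfolding inK_def by blast
  show ?thesis unfolding Fe
    by (intro bounded_linear_add bounded_linear_compose[OF bl_lm]) (use F0 F1 in \<open>simp_all add: B_O_def\<close>)
qed

lemma inK_rm: assumes F: "inK J F" and m: "m \<in> ReM lm rm" shows "F (rm m r) = rm (F m) r"
proof -
  obtain F0 F1 where F0: "F0 \<in> B_O rm" and F1: "F1 \<in> B_O rm" and Fe: "F = (\<lambda>x. F0 x + lm J (F1 x))"
    using F unfolding inK_def by blast
  have m1: "F1 m \<in> ReM lm rm" using BO_ReM[OF F1 m] .
  have "F (rm m r) = rm (F0 m) r + rm (F1 m) (J \<cdot>\<^sub>O r)"
    by (simp add: Fe BO_rm[OF F0] BO_rm[OF F1] re_lm_rm[OF m1])
  also have "\<dots> = rm (F m) r"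
    by (simp add: Fe rm_add re_rm[OF m1, symmetric] re_rm_rm[OF m1])
  finally show ?thesis .
qed

lemma inK_ext: assumes F: "inK J F" shows "oext lm rm F = F"
proof
  fix x
  have lF: "linear F" using inK_lin[OF F] .
  have "oext lm rm F x = (\<Sum>i<8. rm (F (Qc x i)) (oe i))"
    by (simp add: oext_def rcomp_eq)
  also have "\<dots> = (\<Sum>i<8. F (rm (Qc x i) (oe i)))"
    by (simp add: inK_rm[OF F] Qc_ReM)
  also have "\<dots> = F (\<Sum>i<8. rm (Qc x i) (oe i))"
    by (simp add: linear_sum[OF lF])
  also have "\<dots> = F x" by (simp only: decomp[symmetric])
  finally show "oext lm rm F x = F x" .
qed

lemma Pr_assocM0_gen: assumes c: "\<And>i. i < 8 \<Longrightarrow> c i \<in> ReM lm rm"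
  shows "Pr (rm (lm J (\<Sum>i<8. rm (c i) (oe i))) p - lm J (rm (\<Sum>i<8. rm (c i) (oe i)) p)) = 0"
proof -
  have "Pr (rm (lm J (\<Sum>i<8. rm (c i) (oe i))) p - lm J (rm (\<Sum>i<8. rm (c i) (oe i)) p))
      = (\<Sum>i<8. Pr (rm (c i) ((J \<cdot>\<^sub>O oe i) \<cdot>\<^sub>O p)) - Pr (rm (c i) (J \<cdot>\<^sub>O (oe i \<cdot>\<^sub>O p))))"
    by (simp add: lm_sum rm_sum Pr_sum Pr_diff sum_subtractf re_lm_rm re_rm_rm c)
  also have "\<dots> = 0"
    by (intro sum.neutral ballI) (simp add: Pr_rm c re_assoc)
  finally show ?thesis .
qed

lemma inK_BRO: assumes F: "inK J F" shows "F \<in> B_RO lm rm"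
proof -
  obtain F0 F1 where F0: "F0 \<in> B_O rm" and F1: "F1 \<in> B_O rm" and Fe: "F = (\<lambda>x. F0 x + lm J (F1 x))"
    using F unfolding inK_def by blast
  have "RePart lm rm (Bp rm p F x) = 0" for p x
  proof -
    let ?z = "F1 x"
    have "Bp rm p F x = rm (lm J ?z) p - lm J (rm ?z p)"
      by (simp add: Bp_def Fe rm_add BO_rm[OF F0] BO_rm[OF F1])
    then have "RePart lm rm (Bp rm p F x) = Pr (rm (lm J ?z) p - lm J (rm ?z p))"
      by (simp add: RePart_eq)
    also have "\<dots> = Pr (rm (lm J (\<Sum>i<8. rm (Qc ?z i) (oe i))) p - lm J (rm (\<Sum>i<8. rm (Qc ?z i) (oe i)) p))"
      by (simp only: decomp[symmetric])
    also have "\<dots> = 0" by (rule Pr_assocM0_gen) (rule Qc_ReM)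
    finally show ?thesis .
  qed
  then show ?thesis using inK_bl[OF F] by (simp add: B_RO_def)
qed

end

theorem mainTheorem16:
  fixes lm :: "octo \<Rightarrow> 'v::banach \<Rightarrow> 'v" and rm :: "'v \<Rightarrow> octo \<Rightarrow> 'v"
    and J :: octo and T0 T1 S0 S1 T S :: "'v \<Rightarrow> 'v"
  assumes "Banach_O_bimodule lm rm"
    and "J \<in> oct_sphere"
    and "T0 \<in> B_O rm" and "T1 \<in> B_O rm" and "S0 \<in> B_O rm" and "S1 \<in> B_O rm"
    and "T = (\<lambda>x. T0 x + odot lm rm J T1 x)"
    and "S = (\<lambda>x. S0 x + odot lm rm J S1 x)"
  shows "T \<circ> S = ocirc lm rm T S \<and> power_associative lm rm T \<and>
         (\<forall>n. T ^^ n = opow lm rm T n)"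
proof -
  interpret bobim lm rm
    using assms(1) unfolding Banach_O_bimodule_def by unfold_locales blast+
  have JJ: "J \<cdot>\<^sub>O J = - oe 0" using assms(2) by (simp add: oct_sphere_def)
  have Tk: "inK J T"
  proof -
    have "T = (\<lambda>x. T0 x + lm J (T1 x))"
      using assms(7) by (simp add: odot_def Bp_def BO_rm[OF assms(4)])
    then show ?thesis unfolding inK_def using assms(3,4) by blast
  qed
  have Sk: "inK J S"
  proof -
    have "S = (\<lambda>x. S0 x + lm J (S1 x))"
      using assms(8) by (simp add: odot_def Bp_def BO_rm[OF assms(6)])
    then show ?thesis unfolding inK_def using assms(5,6) by blast
  qed
  have 1: "T \<circ> S = ocirc lm rm T S"
    unfolding ocirc_def using inK_ext[OF inK_comp[OF JJ Tk Sk]] by simp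
  have 2: "power_associative lm rm T"
    unfolding power_associative_def using inK_BRO[OF inK_pow[OF JJ Tk]] by blast
  have 3: "\<forall>n. T ^^ n = opow lm rm T n"
    unfolding opow_def using inK_ext[OF inK_pow[OF JJ Tk]] by simp
  show ?thesis using 1 2 3 by blast
qed


end
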